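(* (i) Let $\mathcal L(z_1,z_2)=\hat{\mathcal L}(z_1,z_2)z_1^{Z_1}z_2^{Z_2}$ be the fundamental solution of the formal 2KZ equation normalized at the origin. Then $$\mathcal L=\hat{\mathcal L}^{(1)}_{1\otimes2}\hat{\mathcal L}^{(2)}_{1\otimes2}z_1^{Z_1}z_2^{Z_2}=\mathcal L^{(1)}_{1\otimes2}\mathcal L^{(2)}_{1\otimes2}=\hat{\mathcal L}^{(2)}_{2\otimes1}\hat{\mathcal L}^{(1)}_{2\otimes1}z_1^{Z_1}z_2^{Z_2}=\mathcal L^{(2)}_{2\otimes1}\mathcal L^{(1)}_{2\otimes1}.$$ (ii) Conversely, let $\{i_1,i_2\}=\{1,2\}$ and suppose $\mathcal L(z_1,z_2)=G^{(i_1)}G^{(i_2)}$, where for $k=1,2$, $G^{(i_k)}=\hat G^{(i_k)}z_{i_k}^{Z_{i_k}}$ is an analytic function with values in the completion of $\mathcal U(\mathfrak X^{(i_k)}_{i_1\otimes i_2})$, normalized at $z_{i_k}=0$ (i.e. $\hat G^{(i_k)}$ is holomorphic near $z_{i_k}=0$ and equals $\mathbf I$ there), and $G^{(i_2)}$ depends on $z_{i_2}$ only. Then $G^{(i_k)}=\mathcal L^{(i_k)}_{i_1\otimes i_2}$ for $k=1,2$.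
   Context: $\mathfrak X$ is the complex Lie algebra generated by $Z_1,Z_{11},Z_2,Z_{22},Z_{12}$ subject only to $[Z_1,Z_2]=[Z_{11},Z_2]=[Z_1,Z_{22}]=0$ and $[Z_{11},Z_{22}]=-[Z_{11},Z_{12}]=[Z_{22},Z_{12}]=-[Z_1-Z_2,Z_{12}]$. $\mathcal U(\mathfrak X)=\bigoplus_s\mathcal U_s(\mathfrak X)$ is graded by word length, $\widetilde{\mathcal U}(\mathfrak X)$ is its completion, $\mathbf I$ the unit. $\mathfrak X^{(1)}_{1\otimes2},\mathfrak X^{(2)}_{1\otimes2},\mathfrak X^{(2)}_{2\otimes1},\mathfrak X^{(1)}_{2\otimes1}$ are the Lie subalgebras generated by $\{Z_1,Z_{11},Z_{12}\}$, $\{Z_2,Z_{22}\}$, $\{Z_2,Z_{22},Z_{12}\}$, $\{Z_1,Z_{11}\}$. Forms on $\mathbf P^1\times\mathbf P^1$: $\zeta_i=dz_i/z_i$, $\zeta_{ii}=dz_i/(1-z_i)$ ($i=1,2$), $\zeta_{12}=d(z_1z_2)/(1-z_1z_2)$, $\zeta^{(1)}_{12}=z_2dz_1/(1-z_1z_2)$, $\zeta^{(2)}_{12}=z_1dz_2/(1-z_1z_2)$. The formal 2KZ equation is $dG=\Omega G$, $\Omega=\zeta_1Z_1+\zeta_{11}Z_{11}+\zeta_2Z_2+\zeta_{22}Z_{22}+\zeta_{12}Z_{12}$. Its fundamental solution normalized at the origin is the (unique) solution $\mathcal L=\hat{\mathcal L}z_1^{Z_1}z_2^{Z_2}$ with $\hat{\mathcal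 L}=\sum_s\hat{\mathcal L}_s$, $\hat{\mathcal L}_s$ $\mathcal U_s(\mathfrak X)$-valued, holomorphic near $(0,0)$, $\hat{\mathcal L}_0=\mathbf I$, $\hat{\mathcal L}_s(0,0)=0$ for $s>0$. Consider the four equations ($d_{z_i}$ = exterior derivative in $z_i$ only, other variable a parameter): $d_{z_1}G=(\zeta_1Z_1+\zeta_{11}Z_{11}+\zeta^{(1)}_{12}Z_{12})G$, $d_{z_2}G=(\zeta_2Z_2+\zeta_{22}Z_{22})G$, $d_{z_2}G=(\zeta_2Z_2+\zeta_{22}Z_{22}+\zeta^{(2)}_{12}Z_{12})G$, $d_{z_1}G=(\zeta_1Z_1+\zeta_{11}Z_{11})G$. Their fundamental solutions normalized at the origin are denoted $\mathcal L^{(1)}_{1\otimes2}$ (function of $z_1,z_2$), $\mathcal L^{(2)}_{1\otimes2}$ (function of $z_2$), $\mathcal L^{(2)}_{2\otimes1}$ (function of $z_1,z_2$), $\mathcal L^{(1)}_{2\otimes1}$ (function of $z_1$): in each case $\mathcal L^{(i_k)}_{i_1\otimes i_2}=\hat{\mathcal L}^{(i_k)}_{i_1\otimes i_2}z_{i_k}^{Z_{i_k}}$ with $\hat{\mathcal L}^{(i_k)}_{i_1\otimes i_2}=\sum_s\hat{\mathcal L}^{(i_k)}_{i_1\otimes i_2,s}$, homogeneous parts of degree $s$, holomorphic near $z_{i_k}=0$, with $\hat{\mathcal L}^{(i_k)}_{i_1\otimes i_2,s}|_{z_{i_k}=0}=0$ for $s>0$ and $=\mathbf I$ for $s=0$.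 *)

theory Defs
  imports "HOL-Analysis.Analysis"
begin

text \<open>U(X) is the free associative algebra on these letters modulo
the two-sided ideal generated by the defining Lie relations (written as commutators).
An element of the completion is represented by a formal noncommutative power series,
i.e. a function from words to complex coefficients; two series represent the same
element of the completed U(X) iff every homogeneous component of their difference
lies in the ideal (the ideal is generated by homogeneous elements of degree 2).\<close>

datatype gen = Z1 | Z11 | Z2 | Z22 | Z12

type_synonym ser = "gen list \<Rightarrow> complex"

definition smul :: "ser \<Rightarrow> ser \<Rightarrow> ser" (infixl "\<odot>" 70) where
  "a \<odot> b = (\<lambda>w. \<Sum>k\<le>length w. a (take k w) * b (drop k w))"

definition sadd :: "ser \<Rightarrow> ser \<Rightarrow> ser" where
  "sadd a b = (\<lambda>w. a w + b w)"

definition ssub :: "ser \<Rightarrow> ser \<Rightarrow> ser" where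
  "ssub a b = (\<lambda>w. a w - b w)"

definition sscal :: "complex \<Rightarrow> ser \<Rightarrow> ser" where
  "sscal c a = (\<lambda>w. c * a w)"

definition wd :: "gen list \<Rightarrow> ser" where
  "wd u = (\<lambda>w. if w = u then 1 else 0)"

definition one :: ser where
  "one = wd []"

definition lt :: "gen \<Rightarrow> ser" where
  "lt g = wd [g]"

definition comm :: "ser \<Rightarrow> ser \<Rightarrow> ser" where
  "comm a b = ssub (a \<odot> b) (b \<odot> a)"

text \<open>Defining relations:
 [Z1,Z2]=[Z11,Z2]=[Z1,Z22]=0 and
 [Z11,Z22] = -[Z11,Z12] = [Z22,Z12] = -[Z1-Z2,Z12].\<close>
definition rels :: "ser list" where
  "rels =
    [ comm (lt Z1) (lt Z2),
      comm (lt Z11) (lt Z2),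
      comm (lt Z1) (lt Z22),
      sadd (comm (lt Z11) (lt Z22)) (comm (lt Z11) (lt Z12)),
      ssub (comm (lt Z11) (lt Z22)) (comm (lt Z22) (lt Z12)),
      sadd (comm (lt Z11) (lt Z22)) (comm (ssub (lt Z1) (lt Z2)) (lt Z12)) ]"

inductive idl :: "ser \<Rightarrow> bool" where
  idl_zero: "idl (\<lambda>_. 0)"
| idl_gen: "r \<in> set rels \<Longrightarrow> idl (wd u \<odot> r \<odot> wd v)"
| idl_add: "idl a \<Longrightarrow> idl b \<Longrightarrow> idl (sadd a b)"
| idl_scal: "idl a \<Longrightarrow> idl (sscal c a)"

definition hom :: "nat \<Rightarrow> ser \<Rightarrow> ser" where
  "hom s a = (\<lambda>w. if length w = s then a w else 0)"

definition ueq :: "ser \<Rightarrow> ser \<Rightarrow> bool" where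
  "ueq a b \<longleftrightarrow> (\<forall>s. idl (hom s (ssub a b)))"

text \<open>Membership in the completion of U(h), h the Lie subalgebra generated by the
letters in A (the image of U(h) in U(X) is the associative subalgebra generated by A).\<close>
definition in_sub :: "gen set \<Rightarrow> ser \<Rightarrow> bool" where
  "in_sub A a \<longleftrightarrow> (\<exists>b. (\<forall>w. b w \<noteq> 0 \<longrightarrow> set w \<subseteq> A) \<and> ueq a b)"

text \<open>z^Z = exp(Z log z), principal branch of the logarithm.\<close>
definition zpow :: "gen \<Rightarrow> complex \<Rightarrow> ser" where
  "zpow g z = (\<lambda>w. if w = replicate (length w) g then Ln z ^ length w / fact (length w) else 0)"

text \<open>Slit disc around 0 (where the branch of z^Z is defined).\<close>
definition slit :: "real \<Rightarrow> complex set" where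
  "slit r = ball 0 r - {z. Im z = 0 \<and> Re z \<le> 0}"

definition sderiv :: "(complex \<Rightarrow> ser) \<Rightarrow> complex \<Rightarrow> ser" where
  "sderiv F z = (\<lambda>w. deriv (\<lambda>t. F t w) z)"

text \<open>Connection forms (dz1- and dz2-components of Omega, and the partial ones).\<close>
definition Om1 :: "complex \<Rightarrow> complex \<Rightarrow> ser" where
  "Om1 z1 z2 = sadd (sadd (sscal (1 / z1) (lt Z1)) (sscal (1 / (1 - z1)) (lt Z11)))
                    (sscal (z2 / (1 - z1 * z2)) (lt Z12))"

definition Om2 :: "complex \<Rightarrow> complex \<Rightarrow> ser" where
  "Om2 z1 z2 = sadd (sadd (sscal (1 / z2) (lt Z2)) (sscal (1 / (1 - z2)) (lt Z22)))
                    (sscal (z1 / (1 - z1 * z2)) (lt Z12))"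

definition Om1s :: "complex \<Rightarrow> ser" where
  "Om1s z1 = sadd (sscal (1 / z1) (lt Z1)) (sscal (1 / (1 - z1)) (lt Z11))"

definition Om2s :: "complex \<Rightarrow> ser" where
  "Om2s z2 = sadd (sscal (1 / z2) (lt Z2)) (sscal (1 / (1 - z2)) (lt Z22))"

text \<open>Fundamental solution of the formal 2KZ equation normalized at the origin, given by
its holomorphic part H (so L z1 z2 = H z1 z2 z1^Z1 z2^Z2).  The coefficients of H
(hence all homogeneous parts) are holomorphic near (0,0) (separately holomorphic in each
variable on a polydisc, i.e. holomorphic by Hartogs), H_0 = I, H_s(0,0) = 0 for s > 0,
and dL = Omega L, i.e. both partial equations, on the slit polydisc.\<close>
definition Lof :: "(complex \<Rightarrow> complex \<Rightarrow> ser) \<Rightarrow> complex \<Rightarrow> complex \<Rightarrow> ser" where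
  "Lof H z1 z2 = H z1 z2 \<odot> zpow Z1 z1 \<odot> zpow Z2 z2"

definition fsol2KZ :: "(complex \<Rightarrow> complex \<Rightarrow> ser) \<Rightarrow> bool" where
  "fsol2KZ H \<longleftrightarrow> (\<exists>r>0.
     (\<forall>w. \<forall>z2\<in>ball 0 r. (\<lambda>z1. H z1 z2 w) holomorphic_on ball 0 r) \<and>
     (\<forall>w. \<forall>z1\<in>ball 0 r. (\<lambda>z2. H z1 z2 w) holomorphic_on ball 0 r) \<and>
     (\<forall>z1\<in>ball 0 r. \<forall>z2\<in>ball 0 r. H z1 z2 [] = 1) \<and>
     ueq (H 0 0) one \<and>
     (\<forall>z1\<in>slit r. \<forall>z2\<in>slit r.
        ueq (sderiv (\<lambda>t. Lof H t z2) z1) (Om1 z1 z2 \<odot> Lof H z1 z2) \<and>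
        ueq (sderiv (\<lambda>t. Lof H z1 t) z2) (Om2 z1 z2 \<odot> Lof H z1 z2)))"

text \<open>Fundamental solution, normalized at z = 0, of the equation d_z G = A(z,p) G in
the single active variable z (p a parameter), with G = H(z,p) z^(Z_g).\<close>
definition fsol1 :: "gen \<Rightarrow> (complex \<Rightarrow> complex \<Rightarrow> ser) \<Rightarrow> (complex \<Rightarrow> complex \<Rightarrow> ser) \<Rightarrow> bool" where
  "fsol1 g A H \<longleftrightarrow> (\<exists>r>0. \<forall>p\<in>ball 0 r.
     (\<forall>w. (\<lambda>z. H z p w) holomorphic_on ball 0 r) \<and>
     (\<forall>z\<in>ball 0 r. H z p [] = 1) \<and>
     ueq (H 0 p) one \<and>
     (\<forall>z\<in>slit r. ueq (sderiv (\<lambda>t. H t p \<odot> zpow g t) z) (A z p \<odot> (H z p \<odot> zpow g z))))"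

end

theory Submission
  imports Defs "HOL-Complex_Analysis.Complex_Analysis"
begin

definition zer :: ser where "zer = (\<lambda>_. 0)"
definition shift :: "gen \<Rightarrow> ser \<Rightarrow> ser" where "shift x a = (\<lambda>u. a (x # u))"

lemma smul_Nil[simp]: "(a \<odot> b) [] = a [] * b []"
  by (simp add: smul_def)

lemma smul_Cons: "(a \<odot> b) (x # w) = a [] * b (x # w) + (shift x a \<odot> b) w"
  unfolding smul_def shift_def
  by (simp add: sum.atMost_Suc_shift del: sum.atMost_Suc)

lemma sadd_apply: "sadd a b w = a w + b w" by (simp add: sadd_def)
lemma ssub_apply: "ssub a b w = a w - b w" by (simp add: ssub_def)
lemma sscal_apply: "sscal c a w = c * a w" by (simp add: sscal_def)
lemma zer_apply: "zer w = 0" by (simp add: zer_def)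

lemmas sapp = sadd_apply ssub_apply sscal_apply zer_apply

lemma smul_sadd_left: "sadd a b \<odot> c = sadd (a \<odot> c) (b \<odot> c)"
  by (rule ext) (simp add: smul_def sadd_def algebra_simps sum.distrib sapp)
lemma smul_sadd_right: "c \<odot> sadd a b = sadd (c \<odot> a) (c \<odot> b)"
  by (rule ext) (simp add: smul_def sadd_def algebra_simps sum.distrib sapp)
lemma smul_ssub_left: "ssub a b \<odot> c = ssub (a \<odot> c) (b \<odot> c)"
  by (rule ext) (simp add: smul_def ssub_def algebra_simps sum_subtractf sapp)
lemma smul_ssub_right: "c \<odot> ssub a b = ssub (c \<odot> a) (c \<odot> b)"
  by (rule ext) (simp add: smul_def ssub_def algebra_simps sum_subtractf sapp)
lemma smul_sscal_left: "sscal k a \<odot> c = sscal k (a \<odot> c)"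
  by (rule ext) (simp add: smul_def sscal_def sum_distrib_left algebra_simps sapp)
lemma smul_sscal_right: "c \<odot> sscal k a = sscal k (c \<odot> a)"
  by (rule ext) (simp add: smul_def sscal_def sum_distrib_left algebra_simps sapp)
lemma smul_zer_left[simp]: "zer \<odot> c = zer"
  by (rule ext) (simp add: smul_def zer_def sapp)
lemma smul_zer_right[simp]: "c \<odot> zer = zer"
  by (rule ext) (simp add: smul_def zer_def sapp)

lemma shift_sadd: "shift x (sadd a b) = sadd (shift x a) (shift x b)"
  by (simp add: shift_def sadd_def sapp)
lemma shift_smul: "shift x (a \<odot> b) = sadd (sscal (a []) (shift x b)) (shift x a \<odot> b)"
  by (rule ext) (simp add: shift_def smul_Cons sapp)

lemma smul_assoc_pt: "((a \<odot> b) \<odot> c) w = (a \<odot> (b \<odot> c)) w"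
proof (induction w arbitrary: a)
  case Nil then show ?case by simp
next
  case (Cons x w)
  have "((a \<odot> b) \<odot> c) (x # w) = a [] * b [] * c (x # w) + (shift x (a \<odot> b) \<odot> c) w"
    by (simp add: smul_Cons sapp)
  also have "\<dots> = a [] * b [] * c (x # w) + a [] * (shift x b \<odot> c) w + ((shift x a \<odot> b) \<odot> c) w"
    by (simp add: shift_smul smul_sadd_left smul_sscal_left sapp)
  also have "\<dots> = a [] * b [] * c (x # w) + a [] * (shift x b \<odot> c) w + (shift x a \<odot> (b \<odot> c)) w"
    using Cons by simp
  also have "\<dots> = (a \<odot> (b \<odot> c)) (x # w)"
    by (simp add: smul_Cons algebra_simps sapp)
  finally show ?case .
qed

lemma smul_assoc: "(a \<odot> b) \<odot> c = a \<odot> (b \<odot> c)"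
  by (rule ext) (rule smul_assoc_pt)

lemma shift_wd: "shift x (wd u) = (case u of [] \<Rightarrow> zer | y # u' \<Rightarrow> if x = y then wd u' else zer)"
  by (rule ext) (auto simp: shift_def wd_def zer_def split: list.splits)

lemma wd_simps[simp]: "wd [] [] = 1" "wd (y # u) [] = 0" "wd [] (x # w) = 0"
  by (simp_all add: wd_def)

lemma one_smul[simp]: "one \<odot> a = a"
proof (rule ext)
  fix w show "(one \<odot> a) w = a w"
    by (cases w) (simp_all add: one_def smul_Cons shift_wd sapp)
qed

lemma smul_one[simp]: "a \<odot> one = a"
proof (rule ext)
  fix w show "(a \<odot> one) w = a w"
  proof (induction w arbitrary: a)
    case Nil then show ?case by (simp add: one_def wd_def sapp)
  next
    case (Cons x w) then show ?case by (simp add: smul_Cons one_def shift_def sapp)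
  qed
qed

lemma wd_smul_apply: "(wd u \<odot> b) w = (if take (length u) w = u then b (drop (length u) w) else 0)"
proof (induction u arbitrary: w)
  case Nil then show ?case using one_smul[of b] by (simp add: one_def sapp)
next
  case (Cons y u)
  then show ?case
    by (cases w) (auto simp: smul_Cons shift_wd sapp)
qed

lemma wd_smul_wd: "wd u \<odot> wd v = wd (u @ v)"
proof (rule ext)
  fix w show "(wd u \<odot> wd v) w = wd (u @ v) w"
    unfolding wd_smul_apply by (auto simp add: wd_def append_eq_conv_conj) (metis append_take_drop_id)
qed

definition supp :: "nat \<Rightarrow> ser \<Rightarrow> bool" where
  "supp m a \<longleftrightarrow> (\<forall>w. a w \<noteq> 0 \<longrightarrow> length w = m)"

lemma smul_nonzero:
  assumes "(a \<odot> b) w \<noteq> 0"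
  shows "\<exists>k\<le>length w. a (take k w) \<noteq> 0 \<and> b (drop k w) \<noteq> 0"
proof (rule ccontr)
  assume "\<not> ?thesis"
  then have "\<forall>k\<in>{..length w}. a (take k w) * b (drop k w) = 0" by auto
  then have "(a \<odot> b) w = 0" unfolding smul_def by (intro sum.neutral) auto
  with assms show False by simp
qed

lemma supp_smul: "supp m a \<Longrightarrow> supp n b \<Longrightarrow> supp (m + n) (a \<odot> b)"
  unfolding supp_def
proof (intro allI impI)
  fix w assume a: "\<forall>w. a w \<noteq> 0 \<longrightarrow> length w = m" and b: "\<forall>w. b w \<noteq> 0 \<longrightarrow> length w = n"
    and nz: "(a \<odot> b) w \<noteq> 0"
  obtain k where k: "k \<le> length w" "a (take k w) \<noteq> 0" "b (drop k w) \<noteq> 0"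
    using smul_nonzero[OF nz] by blast
  then show "length w = m + n" using a b by fastforce
qed

lemma supp_wd: "supp (length u) (wd u)"
  by (simp add: supp_def wd_def sapp)

lemma supp_lt: "supp 1 (lt g)"
  using supp_wd[of "[g]"] by (simp add: lt_def sapp)

lemma supp_sadd: "supp m a \<Longrightarrow> supp m b \<Longrightarrow> supp m (sadd a b)"
  unfolding supp_def by (metis add.right_neutral sadd_apply)
lemma supp_ssub: "supp m a \<Longrightarrow> supp m b \<Longrightarrow> supp m (ssub a b)"
  unfolding supp_def by (metis diff_self ssub_apply)
lemma supp_sscal: "supp m a \<Longrightarrow> supp m (sscal c a)"
  unfolding supp_def by (simp add: sapp)
lemma supp_zer: "supp m zer" by (simp add: supp_def sapp)

lemma supp_ltlt: "supp 2 (lt g \<odot> lt h)"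
  using supp_smul[OF supp_lt supp_lt, of g h] by (simp add: numeral_2_eq_2 sapp)

lemma supp_comm: "supp 2 (comm (lt g) (lt h))"
  unfolding comm_def by (intro supp_ssub supp_ltlt)

lemma supp_rels: "r \<in> set rels \<Longrightarrow> supp 2 r"
  unfolding rels_def
  by (auto intro!: supp_sadd supp_ssub supp_comm supp_ltlt simp: comm_def smul_ssub_left smul_ssub_right)

lemma supp_gen: "r \<in> set rels \<Longrightarrow> supp (length u + 2 + length v) (wd u \<odot> r \<odot> wd v)"
  by (intro supp_smul supp_wd supp_rels)

lemma hom_supp_eq: "supp s a \<Longrightarrow> hom s a = a"
  by (rule ext) (auto simp: hom_def supp_def sapp)
lemma hom_supp_neq: "supp m a \<Longrightarrow> m \<noteq> s \<Longrightarrow> hom s a = zer"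
  by (rule ext) (auto simp: hom_def supp_def sapp)

lemma supp_hom: "supp s (hom s a)" by (simp add: supp_def hom_def sapp)

lemma hom_sadd: "hom s (sadd a b) = sadd (hom s a) (hom s b)"
  by (rule ext) (simp add: hom_def sapp)
lemma hom_ssub: "hom s (ssub a b) = ssub (hom s a) (hom s b)"
  by (rule ext) (simp add: hom_def sapp)
lemma hom_sscal: "hom s (sscal c a) = sscal c (hom s a)"
  by (rule ext) (simp add: hom_def sapp)
lemma hom_zer[simp]: "hom s zer = zer"
  by (rule ext) (simp add: hom_def sapp)
lemma zer_eq: "(\<lambda>_. 0) = zer" by (simp add: zer_def sapp)

section \<open>The ideal\<close>

lemma idl_zer: "idl zer" using idl_zero by (simp add: zer_eq sapp)

lemma idl_hom: "idl a \<Longrightarrow> idl (hom s a)"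
proof (induction rule: idl.induct)
  case idl_zero then show ?case using idl_zer by (simp add: zer_eq sapp)
next
  case (idl_gen r u v)
  show ?case
  proof (cases "s = length u + 2 + length v")
    case True then show ?thesis using supp_gen[OF idl_gen] hom_supp_eq idl.idl_gen[OF idl_gen] by metis
  next
    case False then show ?thesis using supp_gen[OF idl_gen, of u v] hom_supp_neq idl_zer by metis
  qed
next
  case (idl_add a b) then show ?case by (simp add: hom_sadd idl.idl_add)
next
  case (idl_scal a c) then show ?case by (simp add: hom_sscal idl.idl_scal)
qed

lemma idl_Nil: "idl a \<Longrightarrow> a [] = 0"
proof (induction rule: idl.induct)
  case (idl_gen r u v)
  have "(wd u \<odot> r \<odot> wd v) [] = wd u [] * r [] * wd v []" by simp
  moreover have "r [] = 0" using supp_rels[OF idl_gen] by (auto simp: supp_def sapp)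
  ultimately show ?case by simp
qed (auto simp: sapp)

lemma idl_ssub: "idl a \<Longrightarrow> idl b \<Longrightarrow> idl (ssub a b)"
proof -
  assume "idl a" "idl b"
  then have "idl (sadd a (sscal (-1) b))" by (intro idl_add idl_scal)
  moreover have "sadd a (sscal (-1) b) = ssub a b" by (rule ext) (simp add: sapp)
  ultimately show ?thesis by simp
qed

lemma idl_sum: "finite I \<Longrightarrow> (\<forall>i\<in>I. idl (f i)) \<Longrightarrow> idl (\<lambda>w. \<Sum>i\<in>I. f i w)"
proof (induction rule: finite_induct)
  case empty then show ?case by (simp add: idl_zero sapp)
next
  case (insert x F)
  then have "idl (sadd (f x) (\<lambda>w. \<Sum>i\<in>F. f i w))" by (intro idl_add) auto
  moreover have "sadd (f x) (\<lambda>w. \<Sum>i\<in>F. f i w) = (\<lambda>w. \<Sum>i\<in>insert x F. f i w)"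
    using insert by (simp add: sadd_def sapp)
  ultimately show ?case by simp
qed

lemma idl_smul_wd_right: "idl x \<Longrightarrow> idl (x \<odot> wd v)"
proof (induction rule: idl.induct)
  case idl_zero then show ?case by (simp add: zer_eq idl_zer sapp)
next
  case (idl_gen r u v')
  have "wd u \<odot> r \<odot> wd v' \<odot> wd v = wd u \<odot> r \<odot> wd (v' @ v)"
    by (simp add: smul_assoc wd_smul_wd sapp)
  then show ?case using idl.idl_gen[OF idl_gen] by simp
next
  case (idl_add a b) then show ?case by (simp add: smul_sadd_left idl.idl_add)
next
  case (idl_scal a c) then show ?case by (simp add: smul_sscal_left idl.idl_scal)
qed

lemma idl_smul_wd_left: "idl x \<Longrightarrow> idl (wd u \<odot> x)"
proof (induction rule: idl.induct)
  case idl_zero then show ?case by (simp add: zer_eq idl_zer sapp)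
next
  case (idl_gen r u' v)
  have "wd u \<odot> (wd u' \<odot> r \<odot> wd v) = wd (u @ u') \<odot> r \<odot> wd v"
    by (simp add: smul_assoc wd_smul_wd[symmetric] sapp)
  then show ?case using idl.idl_gen[OF idl_gen] by simp
next
  case (idl_add a b) then show ?case by (simp add: smul_sadd_right idl.idl_add)
next
  case (idl_scal a c) then show ?case by (simp add: smul_sscal_right idl.idl_scal)
qed

lemma gen_UNIV: "(UNIV :: gen set) = {Z1, Z11, Z2, Z22, Z12}"
  by (auto intro: gen.exhaust)

lemma finite_gen: "finite (UNIV :: gen set)"
  by (simp add: gen_UNIV sapp)

definition W :: "nat \<Rightarrow> gen list set" where "W n = {w. length w = n}"

lemma finite_W: "finite (W n)"
proof -
  have "W n = {xs. set xs \<subseteq> UNIV \<and> length xs = n}" by (auto simp: W_def sapp)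
  then show ?thesis using finite_lists_length_eq[OF finite_gen] by simp
qed

lemma hom_decomp: "hom j b = (\<lambda>w. \<Sum>v\<in>W j. b v * wd v w)"
proof (rule ext)
  fix w
  have "(\<Sum>v\<in>W j. b v * wd v w) = (\<Sum>v\<in>W j. if v = w then b w else 0)"
    by (rule sum.cong) (auto simp: wd_def sapp)
  also have "\<dots> = (if w \<in> W j then b w else 0)"
    using finite_W by (simp add: sum.delta' sapp)
  finally show "hom j b w = (\<Sum>v\<in>W j. b v * wd v w)" by (simp add: hom_def W_def sapp)
qed

lemma smul_sum_right: "finite I \<Longrightarrow> x \<odot> (\<lambda>w. \<Sum>i\<in>I. f i w) = (\<lambda>w. \<Sum>i\<in>I. (x \<odot> f i) w)"
  by (rule ext) (simp add: smul_def sum_distrib_left sum.swap[of _ I] sapp)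
lemma smul_sum_left: "finite I \<Longrightarrow> (\<lambda>w. \<Sum>i\<in>I. f i w) \<odot> x = (\<lambda>w. \<Sum>i\<in>I. (f i \<odot> x) w)"
  by (rule ext) (simp add: smul_def sum_distrib_right sum.swap[of _ I] sapp)

lemma sscal_as: "(\<lambda>w. c * a w) = sscal c a" by (simp add: sscal_def sapp)

lemma idl_smul_hom_right: "idl x \<Longrightarrow> idl (x \<odot> hom j b)"
proof -
  assume x: "idl x"
  have "x \<odot> hom j b = (\<lambda>w. \<Sum>v\<in>W j. (x \<odot> sscal (b v) (wd v)) w)"
    unfolding hom_decomp by (subst smul_sum_right[OF finite_W]) (simp add: sscal_def sapp)
  moreover have "idl (\<lambda>w. \<Sum>v\<in>W j. (x \<odot> sscal (b v) (wd v)) w)"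
    using x by (intro idl_sum finite_W ballI) (simp add: smul_sscal_right idl_scal idl_smul_wd_right)
  ultimately show ?thesis by simp
qed

lemma idl_smul_hom_left: "idl x \<Longrightarrow> idl (hom j b \<odot> x)"
proof -
  assume x: "idl x"
  have "hom j b \<odot> x = (\<lambda>w. \<Sum>v\<in>W j. (sscal (b v) (wd v) \<odot> x) w)"
    unfolding hom_decomp by (subst smul_sum_left[OF finite_W]) (simp add: sscal_def sapp)
  moreover have "idl (\<lambda>w. \<Sum>v\<in>W j. (sscal (b v) (wd v) \<odot> x) w)"
    using x by (intro idl_sum finite_W ballI) (simp add: smul_sscal_left idl_scal idl_smul_wd_left)
  ultimately show ?thesis by simp
qed

lemma hom_hom_smul: "(hom i a \<odot> hom j b) w = (if length w = i + j then a (take i w) * b (drop i w) else 0)"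
proof -
  have "(hom i a \<odot> hom j b) w = (\<Sum>k\<le>length w. if k = i then (if length w = i + j then a (take i w) * b (drop i w) else 0) else 0)"
    unfolding smul_def by (rule sum.cong) (auto simp: hom_def sapp)
  also have "\<dots> = (if length w = i + j then a (take i w) * b (drop i w) else 0)"
    by (simp add: sum.delta sapp)
  finally show ?thesis .
qed

lemma hom_smul: "hom s (a \<odot> b) = (\<lambda>w. \<Sum>i\<le>s. (hom i a \<odot> hom (s - i) b) w)"
proof (rule ext)
  fix w
  show "hom s (a \<odot> b) w = (\<Sum>i\<le>s. (hom i a \<odot> hom (s - i) b) w)"
  proof (cases "length w = s")
    case True
    then show ?thesis unfolding hom_hom_smul by (simp add: hom_def smul_def sapp)
  next
    case False
    then show ?thesis unfolding hom_hom_smul by (simp add: hom_def sapp)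
  qed
qed

lemma idl_hom_smul_left: "(\<forall>i. idl (hom i a)) \<Longrightarrow> idl (hom s (a \<odot> b))"
  unfolding hom_smul by (intro idl_sum ballI) (auto intro: idl_smul_hom_right)
lemma idl_hom_smul_right: "(\<forall>i. idl (hom i b)) \<Longrightarrow> idl (hom s (a \<odot> b))"
  unfolding hom_smul by (intro idl_sum ballI) (auto intro: idl_smul_hom_left)

lemma ueq_refl[simp]: "ueq a a"
  by (simp add: ueq_def zer_eq[symmetric] ssub_def hom_def idl_zero sapp)

lemma ueq_sym: "ueq a b \<Longrightarrow> ueq b a"
proof -
  assume "ueq a b"
  then have "idl (hom s (sscal (-1) (ssub a b)))" for s by (simp add: ueq_def hom_sscal idl_scal)
  moreover have "sscal (-1) (ssub a b) = ssub b a" by (rule ext) (simp add: sapp)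
  ultimately show ?thesis by (simp add: ueq_def sapp)
qed

lemma ueq_trans: "ueq a b \<Longrightarrow> ueq b c \<Longrightarrow> ueq a c"
proof -
  assume "ueq a b" "ueq b c"
  then have "idl (hom s (sadd (ssub a b) (ssub b c)))" for s by (simp add: ueq_def hom_sadd idl_add)
  moreover have "sadd (ssub a b) (ssub b c) = ssub a c" by (rule ext) (simp add: sapp)
  ultimately show ?thesis by (simp add: ueq_def sapp)
qed

lemma ueq_sadd: "ueq a a' \<Longrightarrow> ueq b b' \<Longrightarrow> ueq (sadd a b) (sadd a' b')"
proof -
  assume "ueq a a'" "ueq b b'"
  then have "idl (hom s (sadd (ssub a a') (ssub b b')))" for s by (simp add: ueq_def hom_sadd idl_add)
  moreover have "sadd (ssub a a') (ssub b b') = ssub (sadd a b) (sadd a' b')" by (rule ext) (simp add: sapp)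
  ultimately show ?thesis by (simp add: ueq_def sapp)
qed

lemma ueq_ssub: "ueq a a' \<Longrightarrow> ueq b b' \<Longrightarrow> ueq (ssub a b) (ssub a' b')"
proof -
  assume "ueq a a'" "ueq b b'"
  then have "idl (hom s (ssub (ssub a a') (ssub b b')))" for s by (simp add: ueq_def hom_ssub idl_ssub)
  moreover have "ssub (ssub a a') (ssub b b') = ssub (ssub a b) (ssub a' b')" by (rule ext) (simp add: sapp)
  ultimately show ?thesis by (simp add: ueq_def sapp)
qed

lemma ueq_sscal: "ueq a a' \<Longrightarrow> ueq (sscal c a) (sscal c a')"
proof -
  assume "ueq a a'"
  then have "idl (hom s (sscal c (ssub a a')))" for s by (simp add: ueq_def hom_sscal idl_scal)
  moreover have "sscal c (ssub a a') = ssub (sscal c a) (sscal c a')" by (rule ext) (simp add: sapp algebra_simps)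
  ultimately show ?thesis by (simp add: ueq_def sapp)
qed

lemma ueq_smul_left: "ueq a a' \<Longrightarrow> ueq (a \<odot> b) (a' \<odot> b)"
  unfolding ueq_def smul_ssub_left[symmetric] by (intro allI idl_hom_smul_left) simp

lemma ueq_smul_right: "ueq b b' \<Longrightarrow> ueq (a \<odot> b) (a \<odot> b')"
  unfolding ueq_def smul_ssub_right[symmetric] by (intro allI idl_hom_smul_right) simp

lemma ueq_smul: "ueq a a' \<Longrightarrow> ueq b b' \<Longrightarrow> ueq (a \<odot> b) (a' \<odot> b')"
  by (meson ueq_smul_left ueq_smul_right ueq_trans)

lemma ueq_Nil: "ueq a b \<Longrightarrow> a [] = b []"
proof -
  assume "ueq a b"
  then have "idl (hom 0 (ssub a b))" by (simp add: ueq_def sapp)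
  then have "hom 0 (ssub a b) [] = 0" by (rule idl_Nil)
  then show ?thesis by (simp add: hom_def sapp)
qed

lemma ueq_eq_trans[trans]: "ueq a b \<Longrightarrow> b = c \<Longrightarrow> ueq a c" by simp
lemma eq_ueq_trans[trans]: "a = b \<Longrightarrow> ueq b c \<Longrightarrow> ueq a c" by simp
lemma ueq_ueq_trans[trans]: "ueq a b \<Longrightarrow> ueq b c \<Longrightarrow> ueq a c" by (rule ueq_trans)


definition app :: "nat \<Rightarrow> ser \<Rightarrow> ser \<Rightarrow> complex" where
  "app n c x = (\<Sum>w\<in>W n. c w * x w)"

definition lin :: "ser set \<Rightarrow> ser set" where
  "lin G = {x. \<exists>f. x = (\<lambda>w. \<Sum>g\<in>G. f g * g w)}"

lemma app_lin: "finite G \<Longrightarrow> app n c (\<lambda>w. \<Sum>g\<in>G. f g * g w) = (\<Sum>g\<in>G. f g * app n c g)"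
  unfolding app_def by (simp add: sum_distrib_left sum.swap[of _ G] mult_ac)

lemma app_sadd: "app n c (sadd a b) = app n c a + app n c b"
  by (simp add: app_def sapp algebra_simps sum.distrib)
lemma app_ssub: "app n c (ssub a b) = app n c a - app n c b"
  by (simp add: app_def sapp algebra_simps sum_subtractf)
lemma app_sscal: "app n c (sscal k a) = k * app n c a"
  by (simp add: app_def sapp algebra_simps sum_distrib_left)
lemma app_zer[simp]: "app n c zer = 0"
  by (simp add: app_def sapp)
lemma app_hom: "app n c (hom n x) = app n c x"
  by (simp add: app_def hom_def W_def)

lemma app_comb: "app n (\<lambda>w. c w - k * d w) x = app n c x - k * app n d x"
  unfolding app_def by (simp add: algebra_simps sum_subtractf sum_distrib_left)

lemma mem_lin: "finite G \<Longrightarrow> g \<in> G \<Longrightarrow> g \<in> lin G"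
proof -
  assume G: "finite G" "g \<in> G"
  have "(\<lambda>w. \<Sum>h\<in>G. (if h = g then 1 else 0) * h w) = g"
  proof (rule ext)
    fix w
    have "(\<Sum>h\<in>G. (if h = g then 1 else 0) * h w) = (\<Sum>h\<in>G. if h = g then g w else 0)"
      by (rule sum.cong) auto
    also have "\<dots> = g w" using G by (simp add: sum.delta')
    finally show "(\<Sum>h\<in>G. (if h = g then 1 else 0) * h w) = g w" .
  qed
  then show ?thesis unfolding lin_def
    by (intro CollectI exI[of _ "\<lambda>h. if h = g then 1 else 0"]) (rule sym)
qed

lemma lin_insert:
  assumes "finite G" "v \<notin> G"
  shows "x \<in> lin (insert v G) \<longleftrightarrow> (\<exists>a y. y \<in> lin G \<and> x = sadd (sscal a v) y)"
proof
  assume "x \<in> lin (insert v G)"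
  then obtain f where f: "x = (\<lambda>w. \<Sum>g\<in>insert v G. f g * g w)" by (auto simp: lin_def)
  then have "x = sadd (sscal (f v) v) (\<lambda>w. \<Sum>g\<in>G. f g * g w)"
    using assms by (auto simp: sapp)
  then show "\<exists>a y. y \<in> lin G \<and> x = sadd (sscal a v) y" by (auto simp: lin_def)
next
  assume "\<exists>a y. y \<in> lin G \<and> x = sadd (sscal a v) y"
  then obtain a f where x: "x = sadd (sscal a v) (\<lambda>w. \<Sum>g\<in>G. f g * g w)" by (auto simp: lin_def)
  define f' where "f' = f(v := a)"
  have "(\<lambda>w. \<Sum>g\<in>insert v G. f' g * g w) = x"
  proof (rule ext)
    fix w
    have "(\<Sum>g\<in>G. f' g * g w) = (\<Sum>g\<in>G. f g * g w)"
      using assms by (intro sum.cong) (auto simp: f'_def)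
    then show "(\<Sum>g\<in>insert v G. f' g * g w) = x w" using assms by (simp add: x sapp f'_def)
  qed
  then show "x \<in> lin (insert v G)" unfolding lin_def by (metis (mono_tags, lifting) mem_Collect_eq)
qed

lemma supp_app_zero:
  assumes "supp n x" "\<forall>w0\<in>W n. x w0 = 0" shows "x = zer"
  using assms by (intro ext) (auto simp: supp_def W_def sapp)

lemma kernel_char:
  assumes "finite G" "\<forall>g\<in>G. supp n g"
  shows "\<exists>\<Phi>. finite \<Phi> \<and> (\<forall>x. supp n x \<longrightarrow> (x \<in> lin G \<longleftrightarrow> (\<forall>c\<in>\<Phi>. app n c x = 0)))"
  using assms
proof (induction rule: finite_induct)
  case empty
  define \<Phi> where "\<Phi> = (\<lambda>w0. (\<lambda>w. if w = w0 then (1::complex) else 0)) ` W n"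
  have app_d: "app n (\<lambda>w. if w = w0 then 1 else 0) x = x w0" if "w0 \<in> W n" for w0 x
  proof -
    have "app n (\<lambda>w. if w = w0 then 1 else 0) x = (\<Sum>w\<in>W n. if w = w0 then x w0 else 0)"
      unfolding app_def by (rule sum.cong) auto
    also have "\<dots> = x w0" using that finite_W by (simp add: sum.delta)
    finally show ?thesis .
  qed
  have "finite \<Phi>" using finite_W by (simp add: \<Phi>_def)
  moreover have "x \<in> lin {} \<longleftrightarrow> (\<forall>c\<in>\<Phi>. app n c x = 0)" if "supp n x" for x
  proof
    assume "x \<in> lin {}" then have "x = zer" by (auto simp: lin_def zer_def)
    then show "\<forall>c\<in>\<Phi>. app n c x = 0" by simp
  next
    assume "\<forall>c\<in>\<Phi>. app n c x = 0"
    then have "\<forall>w0\<in>W n. x w0 = 0" using app_d by (auto simp: \<Phi>_def)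
    then have "x = zer" using supp_app_zero that by blast
    then show "x \<in> lin {}" by (auto simp: lin_def zer_def)
  qed
  ultimately show ?case by blast
next
  case (insert v G)
  then obtain \<Phi> where \<Phi>: "finite \<Phi>" "\<forall>x. supp n x \<longrightarrow> (x \<in> lin G \<longleftrightarrow> (\<forall>c\<in>\<Phi>. app n c x = 0))"
    by auto
  have sv: "supp n v" using insert by auto
  have LI: "x \<in> lin (insert v G) \<longleftrightarrow> (\<exists>a y. y \<in> lin G \<and> x = sadd (sscal a v) y)" for x
    using lin_insert[OF insert(1) insert(2)] .
  have appG: "app n c y = 0" if yG: "y \<in> lin G" and cP: "c \<in> \<Phi>" for y c
  proof -
    obtain f where y: "y = (\<lambda>w. \<Sum>g\<in>G. f g * g w)" using yG unfolding lin_def by blast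
    have "\<forall>g\<in>G. app n c g = 0" using \<Phi> insert mem_lin cP by blast
    then show ?thesis by (simp add: y app_lin[OF insert(1)])
  qed
  show ?case
  proof (cases "\<forall>c\<in>\<Phi>. app n c v = 0")
    case True
    have "x \<in> lin (insert v G) \<longleftrightarrow> (\<forall>c\<in>\<Phi>. app n c x = 0)" if "supp n x" for x
    proof
      assume "x \<in> lin (insert v G)"
      then obtain a y where "y \<in> lin G" "x = sadd (sscal a v) y" using LI[of x] by blast
      then show "\<forall>c\<in>\<Phi>. app n c x = 0" using True appG by (simp add: app_sadd app_sscal)
    next
      assume "\<forall>c\<in>\<Phi>. app n c x = 0"
      then have "x \<in> lin G" using \<Phi> that by blast
      moreover have "x = sadd (sscal 0 v) x" by (rule ext) (simp add: sapp)
      ultimately show "x \<in> lin (insert v G)" using LI[of x] by blast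
    qed
    then show ?thesis using \<Phi> by blast
  next
    case False
    then obtain c0 where c0: "c0 \<in> \<Phi>" "app n c0 v \<noteq> 0" by blast
    define tr where "tr c = (\<lambda>w. c w - (app n c v / app n c0 v) * c0 w)" for c
    have app_tr: "app n (tr c) x = app n c x - (app n c v / app n c0 v) * app n c0 x" for c x
      unfolding tr_def by (rule app_comb)
    have "x \<in> lin (insert v G) \<longleftrightarrow> (\<forall>c\<in>tr ` \<Phi>. app n c x = 0)" if sx: "supp n x" for x
    proof
      assume "x \<in> lin (insert v G)"
      then obtain a y where y: "y \<in> lin G" "x = sadd (sscal a v) y" using LI[of x] by blast
      show "\<forall>c\<in>tr ` \<Phi>. app n c x = 0"
      proof
        fix c assume "c \<in> tr ` \<Phi>"
        then obtain c' where c': "c' \<in> \<Phi>" "c = tr c'" by blast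
        have "app n c x = a * app n c v + app n c y" using y by (simp add: app_sadd app_sscal)
        also have "app n c v = 0" using c0 by (simp add: c' app_tr)
        also have "app n c y = 0" using y c' c0 appG by (simp add: app_tr)
        finally show "app n c x = 0" by simp
      qed
    next
      assume A: "\<forall>c\<in>tr ` \<Phi>. app n c x = 0"
      define k where "k = app n c0 x / app n c0 v"
      define y where "y = ssub x (sscal k v)"
      have sy: "supp n y" unfolding y_def by (intro supp_ssub supp_sscal sx sv)
      have "app n c y = 0" if "c \<in> \<Phi>" for c
      proof -
        have "app n (tr c) x = 0" using A that by blast
        then have "app n c x = (app n c v / app n c0 v) * app n c0 x" by (simp add: app_tr)
        then show ?thesis using c0 by (simp add: y_def app_ssub app_sscal k_def field_simps)
      qed
      then have "y \<in> lin G" using \<Phi> sy by blast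
      moreover have "x = sadd (sscal k v) y" by (rule ext) (simp add: y_def sapp)
      ultimately show "x \<in> lin (insert v G)" using LI[of x] by blast
    qed
    moreover have "finite (tr ` \<Phi>)" using \<Phi> by simp
    ultimately show ?thesis by blast
  qed
qed

definition gens :: "nat \<Rightarrow> ser set" where
  "gens n = {wd u \<odot> r \<odot> wd v | u r v. r \<in> set rels \<and> length u + 2 + length v = n}"

lemma finite_gens: "finite (gens n)"
proof -
  have "gens n \<subseteq> (\<lambda>(u, r, v). wd u \<odot> r \<odot> wd v) ` ({u. length u \<le> n} \<times> set rels \<times> {v. length v \<le> n})"
  proof
    fix x assume "x \<in> gens n"
    then obtain u r v where "x = wd u \<odot> r \<odot> wd v" "r \<in> set rels" "length u + 2 + length v = n"
      unfolding gens_def by blast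
    then show "x \<in> (\<lambda>(u, r, v). wd u \<odot> r \<odot> wd v) ` ({u. length u \<le> n} \<times> set rels \<times> {v. length v \<le> n})"
      by (intro image_eqI[where x="(u, r, v)"]) auto
  qed
  moreover have F: "finite {u::gen list. length u \<le> n}"
    using finite_lists_length_le[OF finite_gen, of n] by simp
  moreover have "finite ({u::gen list. length u \<le> n} \<times> set rels \<times> {v::gen list. length v \<le> n})"
    using F by (intro finite_cartesian_product F finite_set)
  ultimately show ?thesis using finite_subset finite_imageI by blast
qed

lemma gens_supp: "g \<in> gens n \<Longrightarrow> supp n g"
proof -
  assume "g \<in> gens n"
  then obtain u r v where "g = wd u \<odot> r \<odot> wd v" "r \<in> set rels" "length u + 2 + length v = n"
    unfolding gens_def by blast
  then show ?thesis using supp_gen[of r u v] by simp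
qed

lemma gens_idl: "g \<in> gens n \<Longrightarrow> idl g"
  by (auto simp: gens_def intro: idl_gen)

lemma lin_zer: "zer \<in> lin G"
  unfolding lin_def by (rule CollectI, rule exI[of _ "\<lambda>_. 0"]) (simp add: zer_def)

lemma lin_add: "x \<in> lin G \<Longrightarrow> y \<in> lin G \<Longrightarrow> sadd x y \<in> lin G"
proof -
  assume "x \<in> lin G" "y \<in> lin G"
  then obtain f f' where "x = (\<lambda>w. \<Sum>g\<in>G. f g * g w)" "y = (\<lambda>w. \<Sum>g\<in>G. f' g * g w)"
    by (auto simp: lin_def)
  then have e: "sadd x y = (\<lambda>w. \<Sum>g\<in>G. (f g + f' g) * g w)"
    by (auto simp: sapp algebra_simps sum.distrib)
  show ?thesis unfolding lin_def using e by (intro CollectI exI[of _ "\<lambda>g. f g + f' g"]) simp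
qed

lemma lin_scal: "x \<in> lin G \<Longrightarrow> sscal c x \<in> lin G"
proof -
  assume "x \<in> lin G"
  then obtain f where "x = (\<lambda>w. \<Sum>g\<in>G. f g * g w)" by (auto simp: lin_def)
  then have e: "sscal c x = (\<lambda>w. \<Sum>g\<in>G. (c * f g) * g w)"
    by (auto simp: sapp algebra_simps sum_distrib_left)
  show ?thesis unfolding lin_def using e by (intro CollectI exI[of _ "\<lambda>g. c * f g"]) simp
qed

lemma idl_hom_lin: "idl x \<Longrightarrow> hom n x \<in> lin (gens n)"
proof (induction rule: idl.induct)
  case idl_zero then show ?case by (simp add: zer_eq lin_zer)
next
  case (idl_gen r u v)
  show ?case
  proof (cases "n = length u + 2 + length v")
    case True
    then have "wd u \<odot> r \<odot> wd v \<in> gens n" using idl_gen by (auto simp: gens_def)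
    then show ?thesis using hom_supp_eq[OF gens_supp] mem_lin[OF finite_gens] by metis
  next
    case False then show ?thesis using supp_gen[OF idl_gen, of u v] hom_supp_neq lin_zer by metis
  qed
next
  case (idl_add a b) then show ?case by (simp add: hom_sadd lin_add)
next
  case (idl_scal a c) then show ?case by (simp add: hom_sscal lin_scal)
qed

lemma lin_idl: "x \<in> lin (gens n) \<Longrightarrow> idl x"
proof -
  assume "x \<in> lin (gens n)"
  then obtain f where x: "x = (\<lambda>w. \<Sum>g\<in>gens n. f g * g w)" by (auto simp: lin_def)
  have "idl (\<lambda>w. \<Sum>g\<in>gens n. sscal (f g) g w)"
    by (intro idl_sum finite_gens ballI idl_scal gens_idl)
  then show ?thesis by (simp add: x sapp)
qed

lemma ann_ex: "\<exists>\<Phi>. finite \<Phi> \<and> (\<forall>x. idl (hom n x) \<longleftrightarrow> (\<forall>c\<in>\<Phi>. app n c x = 0))"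
proof -
  have gs: "\<forall>g\<in>gens n. supp n g" using gens_supp by blast
  obtain \<Phi> where \<Phi>: "finite \<Phi>" "\<forall>x. supp n x \<longrightarrow> (x \<in> lin (gens n) \<longleftrightarrow> (\<forall>c\<in>\<Phi>. app n c x = 0))"
    using kernel_char[OF finite_gens gs] by (elim exE conjE) blast
  have "idl (hom n x) \<longleftrightarrow> (\<forall>c\<in>\<Phi>. app n c x = 0)" for x
  proof -
    have "idl (hom n x) \<longleftrightarrow> hom n x \<in> lin (gens n)"
      using idl_hom_lin[of "hom n x" n] lin_idl hom_supp_eq[OF supp_hom] by metis
    also have "\<dots> \<longleftrightarrow> (\<forall>c\<in>\<Phi>. app n c (hom n x) = 0)" using \<Phi> supp_hom by blast
    finally show ?thesis by (simp add: app_hom)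
  qed
  then show ?thesis using \<Phi> by blast
qed

definition ann :: "nat \<Rightarrow> ser set" where
  "ann n = (SOME \<Phi>. finite \<Phi> \<and> (\<forall>x. idl (hom n x) \<longleftrightarrow> (\<forall>c\<in>\<Phi>. app n c x = 0)))"

lemma ann: "idl (hom n x) \<longleftrightarrow> (\<forall>c\<in>ann n. app n c x = 0)"
  using someI_ex[OF ann_ex[of n]] unfolding ann_def by blast

definition annih :: "nat \<Rightarrow> ser \<Rightarrow> bool" where
  "annih n c \<longleftrightarrow> (\<forall>x. idl x \<longrightarrow> app n c x = 0)"

lemma ann_annih: "c \<in> ann n \<Longrightarrow> annih n c"
  unfolding annih_def using ann idl_hom by blast

lemma annih_ueq: "annih n c \<Longrightarrow> ueq a b \<Longrightarrow> app n c a = app n c b"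
proof -
  assume c: "annih n c" and "ueq a b"
  then have "idl (hom n (ssub a b))" by (simp add: ueq_def)
  then have "app n c (hom n (ssub a b)) = 0" using c by (simp add: annih_def)
  then show ?thesis by (simp add: app_hom app_ssub)
qed

lemma ueq_by_ann: "(\<And>n c. c \<in> ann n \<Longrightarrow> app n c a = app n c b) \<Longrightarrow> ueq a b"
  unfolding ueq_def using ann by (simp add: app_ssub)

lemma idl_hom_by_ann: "(\<And>c. c \<in> ann n \<Longrightarrow> app n c x = 0) \<Longrightarrow> idl (hom n x)"
  using ann by blast


lemma lt_smul_apply: "(lt g \<odot> x) w = (if w \<noteq> [] \<and> hd w = g then x (tl w) else 0)"
  unfolding lt_def wd_smul_apply by (cases w) (auto simp: take_Suc)

lemma smul_lt_apply: "(x \<odot> lt g) w = (if w \<noteq> [] \<and> last w = g then x (butlast w) else 0)"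
proof -
  have "(x \<odot> lt g) w = (\<Sum>k\<le>length w. if k = length w - 1 then
           (if w \<noteq> [] \<and> last w = g then x (butlast w) else 0) else 0)"
    unfolding smul_def
  proof (rule sum.cong[OF refl])
    fix k assume k: "k \<in> {..length w}"
    show "x (take k w) * lt g (drop k w) = (if k = length w - 1 then
           (if w \<noteq> [] \<and> last w = g then x (butlast w) else 0) else 0)"
    proof (cases "drop k w = [g]")
      case True
      have L: "length w - k = 1" using arg_cong[OF True, of length] by simp
      then have "k = length w - 1" "w \<noteq> []" by auto
      moreover have "last w = g" using True by (metis append_take_drop_id last_snoc)
      moreover have "take k w = butlast w" using \<open>k = length w - 1\<close> by (simp add: butlast_conv_take)
      ultimately show ?thesis using True by (simp add: lt_def wd_def)
    next
      case False
      have "\<not> (k = length w - 1 \<and> w \<noteq> [] \<and> last w = g)"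
      proof
        assume A: "k = length w - 1 \<and> w \<noteq> [] \<and> last w = g"
        then obtain u where u: "w = u @ [g]" by (metis append_butlast_last_id)
        then have "drop k w = [g]" using A by simp
        then show False using False by simp
      qed
      then show ?thesis using False by (auto simp: lt_def wd_def)
    qed
  qed
  also have "\<dots> = (if w \<noteq> [] \<and> last w = g then x (butlast w) else 0)"
    by (simp add: sum.delta)
  finally show ?thesis .
qed

lemma W_Suc_Cons: "w \<in> W (Suc m) \<and> w \<noteq> [] \<and> hd w = g \<longleftrightarrow> w \<in> Cons g ` W m"
  by (cases w) (auto simp: W_def)

lemma W_Suc_snoc: "w \<in> W (Suc m) \<and> w \<noteq> [] \<and> last w = g \<longleftrightarrow> w \<in> (\<lambda>u. u @ [g]) ` W m"
proof
  assume A: "w \<in> W (Suc m) \<and> w \<noteq> [] \<and> last w = g"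
  then obtain u where "w = u @ [g]" by (metis append_butlast_last_id)
  then show "w \<in> (\<lambda>u. u @ [g]) ` W m" using A by (auto simp: W_def)
qed (auto simp: W_def)

lemma W0: "W 0 = {[]}" by (auto simp: W_def)

lemma app_lt_left: "app (Suc m) c (lt g \<odot> x) = app m (\<lambda>u. c (g # u)) x"
proof -
  have "app (Suc m) c (lt g \<odot> x) = (\<Sum>w\<in>W (Suc m). if w \<in> Cons g ` W m then c w * x (tl w) else 0)"
    unfolding app_def by (rule sum.cong[OF refl]) (use W_Suc_Cons in \<open>auto simp: lt_smul_apply\<close>)
  also have "\<dots> = (\<Sum>w\<in>Cons g ` W m. c w * x (tl w))"
  proof -
    have sub: "Cons g ` W m \<subseteq> W (Suc m)" by (auto simp: W_def)
    show ?thesis by (simp only: sum.inter_restrict[OF finite_W, symmetric] Int_absorb1[OF sub])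
  qed
  also have "\<dots> = app m (\<lambda>u. c (g # u)) x"
    by (subst sum.reindex) (auto simp: app_def)
  finally show ?thesis .
qed

lemma app_lt_right: "app (Suc m) c (x \<odot> lt g) = app m (\<lambda>u. c (u @ [g])) x"
proof -
  have "app (Suc m) c (x \<odot> lt g) = (\<Sum>w\<in>W (Suc m). if w \<in> (\<lambda>u. u @ [g]) ` W m then c w * x (butlast w) else 0)"
    unfolding app_def by (rule sum.cong[OF refl]) (use W_Suc_snoc in \<open>auto simp: smul_lt_apply\<close>)
  also have "\<dots> = (\<Sum>w\<in>(\<lambda>u. u @ [g]) ` W m. c w * x (butlast w))"
  proof -
    have sub: "(\<lambda>u. u @ [g]) ` W m \<subseteq> W (Suc m)" by (auto simp: W_def)
    show ?thesis by (simp only: sum.inter_restrict[OF finite_W, symmetric] Int_absorb1[OF sub])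
  qed
  also have "\<dots> = app m (\<lambda>u. c (u @ [g])) x"
    by (subst sum.reindex) (auto simp: app_def inj_on_def)
  finally show ?thesis .
qed

lemma lt_Nil[simp]: "lt g [] = 0" by (simp add: lt_def)

lemma app0_lt_left: "app 0 c (lt g \<odot> x) = 0"
  by (simp add: app_def W0 lt_smul_apply)
lemma app0_lt_right: "app 0 c (x \<odot> lt g) = 0"
  by (simp add: app_def W0 smul_lt_apply)

lemma idl_lt_left: "idl x \<Longrightarrow> idl (lt g \<odot> x)"
  unfolding lt_def by (rule idl_smul_wd_left)
lemma idl_lt_right: "idl x \<Longrightarrow> idl (x \<odot> lt g)"
  unfolding lt_def by (rule idl_smul_wd_right)

definition cs :: "bool \<Rightarrow> gen \<Rightarrow> ser \<Rightarrow> ser" where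
  "cs b g c = (if b then (\<lambda>u. c (g # u)) else (\<lambda>u. c (u @ [g])))"

definition lmul :: "bool \<Rightarrow> gen \<Rightarrow> ser \<Rightarrow> ser" where
  "lmul b g X = (if b then lt g \<odot> X else X \<odot> lt g)"

lemma app_lmul: "app (Suc m) c (lmul b g X) = app m (cs b g c) X"
  by (simp add: lmul_def cs_def app_lt_left app_lt_right)
lemma app0_lmul: "app 0 c (lmul b g X) = 0"
  by (simp add: lmul_def app0_lt_left app0_lt_right)
lemma idl_lmul: "idl X \<Longrightarrow> idl (lmul b g X)"
  by (simp add: lmul_def idl_lt_left idl_lt_right)

lemma annih_cs: "annih (Suc m) c \<Longrightarrow> annih m (cs b g c)"
  unfolding annih_def using app_lmul idl_lmul by metis

section \<open>Linear operators of the ODEs\<close>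

type_synonym term_list = "((complex \<Rightarrow> complex \<Rightarrow> complex) \<times> bool \<times> gen) list"

definition op :: "term_list \<Rightarrow> complex \<Rightarrow> complex \<Rightarrow> ser \<Rightarrow> ser" where
  "op T z1 z2 X = (\<lambda>w. \<Sum>(q, b, g)\<leftarrow>T. q z1 z2 * lmul b g X w)"

lemma op_Nil: "op [] z1 z2 X = zer"
  by (simp add: op_def zer_def)
lemma op_Cons: "op ((q, b, g) # T) z1 z2 X = sadd (sscal (q z1 z2) (lmul b g X)) (op T z1 z2 X)"
  by (rule ext) (simp add: op_def sapp)

lemma lmul_ssub: "lmul b g (ssub X Y) = ssub (lmul b g X) (lmul b g Y)"
  by (simp add: lmul_def smul_ssub_left smul_ssub_right)

lemma op_ssub: "op T z1 z2 (ssub X Y) = ssub (op T z1 z2 X) (op T z1 z2 Y)"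
proof (induction T)
  case Nil then show ?case by (simp add: op_Nil) (rule ext, simp add: sapp)
next
  case (Cons t T)
  obtain q b g where t: "t = (q, b, g)" by (cases t) auto
  show ?case unfolding t op_Cons Cons lmul_ssub by (rule ext) (simp add: sapp algebra_simps)
qed

lemma app_op_Suc: "app (Suc m) c (op T z1 z2 X) = (\<Sum>(q, b, g)\<leftarrow>T. q z1 z2 * app m (cs b g c) X)"
proof (induction T)
  case Nil then show ?case by (simp add: op_Nil)
next
  case (Cons t T)
  obtain q b g where t: "t = (q, b, g)" by (cases t) auto
  show ?case unfolding t op_Cons by (simp add: app_sadd app_sscal app_lmul Cons)
qed

lemma app_op_0: "app 0 c (op T z1 z2 X) = 0"
proof (induction T)
  case Nil then show ?case by (simp add: op_Nil)
next
  case (Cons t T)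
  obtain q b g where t: "t = (q, b, g)" by (cases t) auto
  show ?case unfolding t op_Cons by (simp add: app_sadd app_sscal app0_lmul Cons)
qed

lemma op_lower:
  assumes "annih n c" "\<And>m. n = Suc m \<Longrightarrow> idl (hom m X)"
  shows "app n c (op T z1 z2 X) = 0"
proof (cases n)
  case 0 then show ?thesis by (simp add: app_op_0)
next
  case (Suc m)
  have "app m (cs b g c) X = 0" for b g
  proof -
    have "annih m (cs b g c)" using assms(1) Suc annih_cs by simp
    then have "app m (cs b g c) (hom m X) = 0" using assms(2)[OF Suc] by (simp add: annih_def)
    then show ?thesis by (simp add: app_hom)
  qed
  moreover have "(\<Sum>(q, b, g)\<leftarrow>T. (0::complex)) = 0" by (induction T) auto
  ultimately show ?thesis using Suc by (simp add: app_op_Suc case_prod_beta)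
qed


definition sdiff :: "(complex \<Rightarrow> ser) \<Rightarrow> complex \<Rightarrow> ser \<Rightarrow> bool" where
  "sdiff F z F' \<longleftrightarrow> (\<forall>w. ((\<lambda>t. F t w) has_field_derivative F' w) (at z))"

lemma sdiff_sderiv: "sdiff F z F' \<Longrightarrow> sderiv F z = F'"
  unfolding sdiff_def sderiv_def by (auto intro!: ext DERIV_imp_deriv)

lemma sdiff_smul:
  assumes "sdiff F z F'" "sdiff G z G'"
  shows "sdiff (\<lambda>t. F t \<odot> G t) z (sadd (F' \<odot> G z) (F z \<odot> G'))"
  unfolding sdiff_def
proof
  fix w
  have "((\<lambda>t. \<Sum>k\<le>length w. F t (take k w) * G t (drop k w)) has_field_derivative
        (\<Sum>k\<le>length w. F' (take k w) * G z (drop k w) + F z (take k w) * G' (drop k w))) (at z)"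
    using assms unfolding sdiff_def
    by (intro DERIV_sum) (auto intro!: derivative_eq_intros simp: algebra_simps)
  then show "((\<lambda>t. (F t \<odot> G t) w) has_field_derivative sadd (F' \<odot> G z) (F z \<odot> G') w) (at z)"
    by (simp add: smul_def sapp sum.distrib)
qed

lemma sdiff_const: "sdiff (\<lambda>t. C) z zer"
  by (simp add: sdiff_def sapp)

lemma sdiff_sadd: "sdiff F z F' \<Longrightarrow> sdiff G z G' \<Longrightarrow> sdiff (\<lambda>t. sadd (F t) (G t)) z (sadd F' G')"
  by (auto simp: sdiff_def sapp intro!: derivative_eq_intros)

lemma sdiff_ssub: "sdiff F z F' \<Longrightarrow> sdiff G z G' \<Longrightarrow> sdiff (\<lambda>t. ssub (F t) (G t)) z (ssub F' G')"
  by (auto simp: sdiff_def sapp intro!: derivative_eq_intros)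

lemma sdiff_sscal: "sdiff F z F' \<Longrightarrow> sdiff (\<lambda>t. sscal k (F t)) z (sscal k F')"
  by (auto simp: sdiff_def sapp intro!: derivative_eq_intros)

lemma holo_sdiff:
  assumes "\<forall>w. (\<lambda>t. F t w) holomorphic_on S" "open S" "z \<in> S"
  shows "sdiff F z (sderiv F z)"
  unfolding sdiff_def sderiv_def using assms by (auto intro: holomorphic_derivI)

lemma app_sdiff: "sdiff F z F' \<Longrightarrow> ((\<lambda>t. app n c (F t)) has_field_derivative app n c F') (at z)"
  unfolding sdiff_def app_def by (auto intro!: derivative_eq_intros DERIV_sum)

section \<open>Exponentials of letters\<close>

definition zp :: "gen \<Rightarrow> complex \<Rightarrow> ser" where
  "zp g a = (\<lambda>w. if w = replicate (length w) g then a ^ length w / fact (length w) else 0)"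

lemma zpow_zp: "zpow g z = zp g (Ln z)"
  by (simp add: zpow_def zp_def)

lemma rep_iff: "(u = replicate (length u) g) \<longleftrightarrow> (\<forall>y\<in>set u. y = g)"
  by (metis in_set_replicate replicate_length_same)

lemma zp_mul: "zp g a \<odot> zp g b = zp g (a + b)"
proof (rule ext)
  fix w
  show "(zp g a \<odot> zp g b) w = zp g (a + b) w"
  proof (cases "w = replicate (length w) g")
    case True
    define n where "n = length w"
    have "(zp g a \<odot> zp g b) w = (\<Sum>k\<le>n. a ^ k / fact k * (b ^ (n - k) / fact (n - k)))"
      unfolding smul_def n_def[symmetric]
    proof (rule sum.cong[OF refl])
      fix k assume "k \<in> {..n}"
      then have k: "k \<le> n" by simp
      have t: "take k w = replicate k g" using True k n_def by (metis take_replicate min.absorb1)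
      have d: "drop k w = replicate (n - k) g" using True n_def by (metis drop_replicate)
      show "zp g a (take k w) * zp g b (drop k w) = a ^ k / fact k * (b ^ (n - k) / fact (n - k))"
        by (simp add: t d zp_def)
    qed
    also have "\<dots> = (\<Sum>k\<le>n. of_nat (n choose k) * a ^ k * b ^ (n - k)) / fact n"
      by (simp add: sum_divide_distrib binomial_fact field_simps)
    also have "\<dots> = (a + b) ^ n / fact n"
      by (simp add: binomial_ring)
    finally show ?thesis using True by (simp add: zp_def n_def)
  next
    case False
    have "(zp g a \<odot> zp g b) w = (\<Sum>k\<le>length w. 0)"
      unfolding smul_def
    proof (rule sum.cong[OF refl])
      fix k
      have "\<not> ((take k w = replicate (length (take k w)) g) \<and> (drop k w = replicate (length (drop k w)) g))"
      proof
        assume A: "(take k w = replicate (length (take k w)) g) \<and> (drop k w = replicate (length (drop k w)) g)"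
        moreover have "set w = set (take k w) \<union> set (drop k w)"
          by (metis append_take_drop_id set_append)
        ultimately have "\<forall>y\<in>set w. y = g" unfolding rep_iff by auto
        then show False using False rep_iff[of w g] by simp
      qed
      then show "zp g a (take k w) * zp g b (drop k w) = 0" by (auto simp: zp_def)
    qed
    then show ?thesis using False by (simp add: zp_def)
  qed
qed

lemma zp_0: "zp g 0 = one"
  by (rule ext) (auto simp: zp_def one_def wd_def)

lemma zpow_inv: "zpow g z \<odot> zp g (- Ln z) = one" "zp g (- Ln z) \<odot> zpow g z = one"
  by (simp_all add: zpow_zp zp_mul zp_0)

lemma lt_zp_apply: "(lt g \<odot> zp g a) w = (if w \<noteq> [] \<and> w = replicate (length w) g then a ^ (length w - 1) / fact (length w - 1) else 0)"
proof (cases w)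
  case Nil then show ?thesis by (simp add: lt_smul_apply)
next
  case (Cons y u)
  then show ?thesis by (auto simp: lt_smul_apply zp_def)
qed

lemma zpow_sdiff:
  assumes "z \<notin> \<real>\<^sub>\<le>\<^sub>0"
  shows "sdiff (zpow g) z (sscal (1 / z) (lt g \<odot> zpow g z))"
  unfolding sdiff_def
proof
  fix w
  show "((\<lambda>t. zpow g t w) has_field_derivative sscal (1 / z) (lt g \<odot> zpow g z) w) (at z)"
  proof (cases "w = replicate (length w) g")
    case True
    show ?thesis
    proof (cases "length w")
      case 0
      then have "w = []" by simp
      then show ?thesis by (simp add: zpow_def sapp lt_smul_apply)
    next
      case (Suc m)
      have "((\<lambda>t. Ln t ^ Suc m / fact (Suc m)) has_field_derivative
              (of_nat (Suc m) * (inverse z * Ln z ^ (Suc m - Suc 0)) / fact (Suc m))) (at z)"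
        by (intro DERIV_cdivide DERIV_power has_field_derivative_Ln assms)
      moreover have "of_nat (Suc m) * (inverse z * Ln z ^ (Suc m - Suc 0)) / fact (Suc m) = 1 / z * (Ln z ^ m / fact m)"
      proof -
        have z0: "z \<noteq> 0" using assms by auto
        have m0: "(of_nat (Suc m) :: complex) \<noteq> 0" by (simp only: of_nat_eq_0_iff)
        have "of_nat (Suc m) * (inverse z * Ln z ^ (Suc m - Suc 0)) / fact (Suc m)
              = of_nat (Suc m) * (inverse z * Ln z ^ m) / (of_nat (Suc m) * fact m)"
          by (simp only: fact_Suc diff_Suc_Suc diff_zero)
        also have "\<dots> = (inverse z * Ln z ^ m) / fact m" using m0 by (rule mult_divide_mult_cancel_left)
        also have "\<dots> = 1 / z * (Ln z ^ m / fact m)" by (simp add: divide_inverse mult.assoc)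
        finally show ?thesis .
      qed
      moreover have "sscal (1 / z) (lt g \<odot> zpow g z) w = 1 / z * (Ln z ^ m / fact m)"
        using True Suc by (simp add: sapp lt_zp_apply zpow_zp)
      moreover have "(\<lambda>t. zpow g t w) = (\<lambda>t. Ln t ^ Suc m / fact (Suc m))"
        using True Suc by (auto simp: zpow_def)
      ultimately show ?thesis by simp
    qed
  next
    case False
    then have "sscal (1 / z) (lt g \<odot> zpow g z) w = 0"
      by (simp add: sapp lt_zp_apply zpow_zp)
    moreover have "(\<lambda>t. zpow g t w) = (\<lambda>t. 0)" using False by (auto simp: zpow_def)
    ultimately show ?thesis by simp
  qed
qed


section \<open>Commutation modulo the ideal\<close>

definition commutes :: "ser \<Rightarrow> ser \<Rightarrow> bool" where
  "commutes a b \<longleftrightarrow> ueq (a \<odot> b) (b \<odot> a)"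

lemma commutes_sym: "commutes a b \<Longrightarrow> commutes b a"
  by (simp add: commutes_def ueq_sym)

lemma commutes_mul: "commutes a x \<Longrightarrow> commutes a y \<Longrightarrow> commutes a (x \<odot> y)"
proof -
  assume ax: "commutes a x" and ay: "commutes a y"
  have "a \<odot> (x \<odot> y) = (a \<odot> x) \<odot> y" by (simp add: smul_assoc)
  also have "ueq \<dots> ((x \<odot> a) \<odot> y)" using ax by (simp add: commutes_def ueq_smul_left)
  also have "(x \<odot> a) \<odot> y = x \<odot> (a \<odot> y)" by (simp add: smul_assoc)
  also have "ueq \<dots> (x \<odot> (y \<odot> a))" using ay by (simp add: commutes_def ueq_smul_right)
  also have "x \<odot> (y \<odot> a) = (x \<odot> y) \<odot> a" by (simp add: smul_assoc)
  finally show ?thesis by (simp add: commutes_def)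
qed

lemma commutes_one: "commutes a one" by (simp add: commutes_def)

lemma commutes_rep: "commutes a (lt g) \<Longrightarrow> commutes a (wd (replicate n g))"
proof (induction n)
  case 0 then show ?case using commutes_one by (simp add: one_def)
next
  case (Suc n)
  have "wd (replicate (Suc n) g) = lt g \<odot> wd (replicate n g)"
    by (simp add: lt_def wd_smul_wd)
  then show ?case using Suc commutes_mul by simp
qed

lemma smul_decomp_right:
  assumes V: "\<And>n. supp n (V n)" and P: "\<And>w. P w = (\<Sum>n\<le>length w. d n * V n w)"
  shows "(a \<odot> P) w = (\<Sum>n\<le>length w. d n * (a \<odot> V n) w)"
proof -
  have "(a \<odot> P) w = (\<Sum>k\<le>length w. \<Sum>n\<le>length w. a (take k w) * (d n * V n (drop k w)))"
    unfolding smul_def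
  proof (rule sum.cong[OF refl])
    fix k assume k: "k \<in> {..length w}"
    have "P (drop k w) = (\<Sum>n\<le>length w. d n * V n (drop k w))"
    proof -
      have "P (drop k w) = (\<Sum>n\<le>length (drop k w). d n * V n (drop k w))" by (rule P)
      also have "\<dots> = (\<Sum>n\<le>length w. d n * V n (drop k w))"
      proof (rule sum.mono_neutral_left)
        show "\<forall>i\<in>{..length w} - {..length (drop k w)}. d i * V i (drop k w) = 0"
        proof
          fix i assume "i \<in> {..length w} - {..length (drop k w)}"
          then have "length (drop k w) \<noteq> i" by auto
          then have "V i (drop k w) = 0" using V[of i] unfolding supp_def by blast
          then show "d i * V i (drop k w) = 0" by simp
        qed
      qed auto
      finally show ?thesis .
    qed
    then show "a (take k w) * P (drop k w) = (\<Sum>n\<le>length w. a (take k w) * (d n * V n (drop k w)))"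
      by (simp add: sum_distrib_left)
  qed
  also have "\<dots> = (\<Sum>n\<le>length w. d n * (a \<odot> V n) w)"
    by (subst sum.swap) (simp add: smul_def sum_distrib_left mult_ac)
  finally show ?thesis .
qed

lemma smul_decomp_left:
  assumes V: "\<And>n. supp n (V n)" and P: "\<And>w. P w = (\<Sum>n\<le>length w. d n * V n w)"
  shows "(P \<odot> a) w = (\<Sum>n\<le>length w. d n * (V n \<odot> a) w)"
proof -
  have "(P \<odot> a) w = (\<Sum>k\<le>length w. \<Sum>n\<le>length w. (d n * V n (take k w)) * a (drop k w))"
    unfolding smul_def
  proof (rule sum.cong[OF refl])
    fix k assume k: "k \<in> {..length w}"
    have "P (take k w) = (\<Sum>n\<le>length w. d n * V n (take k w))"
    proof -
      have "P (take k w) = (\<Sum>n\<le>length (take k w). d n * V n (take k w))" by (rule P)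
      also have "\<dots> = (\<Sum>n\<le>length w. d n * V n (take k w))"
      proof (rule sum.mono_neutral_left)
        show "\<forall>i\<in>{..length w} - {..length (take k w)}. d i * V i (take k w) = 0"
        proof
          fix i assume "i \<in> {..length w} - {..length (take k w)}"
          then have "length (take k w) \<noteq> i" by auto
          then have "V i (take k w) = 0" using V[of i] unfolding supp_def by blast
          then show "d i * V i (take k w) = 0" by simp
        qed
      qed auto
      finally show ?thesis .
    qed
    then show "P (take k w) * a (drop k w) = (\<Sum>n\<le>length w. (d n * V n (take k w)) * a (drop k w))"
      by (simp add: sum_distrib_right)
  qed
  also have "\<dots> = (\<Sum>n\<le>length w. d n * (V n \<odot> a) w)"
    by (subst sum.swap) (simp add: smul_def sum_distrib_left mult_ac)
  finally show ?thesis .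
qed

lemma zp_decomp: "zp g c w = (\<Sum>n\<le>length w. (c ^ n / fact n) * wd (replicate n g) w)"
proof -
  have "(\<Sum>n\<le>length w. (c ^ n / fact n) * wd (replicate n g) w)
      = (\<Sum>n\<le>length w. if n = length w then (if w = replicate (length w) g then c ^ length w / fact (length w) else 0) else 0)"
    by (rule sum.cong[OF refl]) (auto simp: wd_def)
  also have "\<dots> = zp g c w" by (simp add: zp_def)
  finally show ?thesis by simp
qed

lemma commutes_zp:
  assumes "commutes a (lt g)"
  shows "commutes a (zp g c)"
proof -
  define V where "V n = wd (replicate n g)" for n
  define d where "d n = (c ^ n / fact n :: complex)" for n
  have V: "supp n (V n)" for n using supp_wd[of "replicate n g"] by (simp add: V_def)
  have P: "zp g c w = (\<Sum>n\<le>length w. d n * V n w)" for w by (simp add: zp_decomp V_def d_def)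
  have cV: "ueq (a \<odot> V n) (V n \<odot> a)" for n using commutes_rep[OF assms] by (simp add: commutes_def V_def)
  show ?thesis unfolding commutes_def ueq_def
  proof
    fix s
    have "hom s (ssub (a \<odot> zp g c) (zp g c \<odot> a)) = (\<lambda>w. \<Sum>n\<le>s. sscal (d n) (hom s (ssub (a \<odot> V n) (V n \<odot> a))) w)"
    proof (rule ext)
      fix w
      show "hom s (ssub (a \<odot> zp g c) (zp g c \<odot> a)) w = (\<Sum>n\<le>s. sscal (d n) (hom s (ssub (a \<odot> V n) (V n \<odot> a))) w)"
        by (simp add: hom_def sapp smul_decomp_right[OF V P] smul_decomp_left[OF V P] sum_subtractf algebra_simps)
    qed
    moreover have "idl (\<lambda>w. \<Sum>n\<le>s. sscal (d n) (hom s (ssub (a \<odot> V n) (V n \<odot> a))) w)"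
      using cV by (intro idl_sum ballI idl_scal) (auto simp: ueq_def)
    ultimately show "idl (hom s (ssub (a \<odot> zp g c) (zp g c \<odot> a)))" by simp
  qed
qed

lemma commutes_zpow: "commutes a (lt g) \<Longrightarrow> commutes a (zpow g z)"
  by (simp add: zpow_zp commutes_zp)

lemma rel_idl: "r \<in> set rels \<Longrightarrow> idl r"
  using idl_gen[of r "[]" "[]"] by (simp add: one_def[symmetric])

lemma rel_commutes: "comm (lt g) (lt h) \<in> set rels \<Longrightarrow> commutes (lt g) (lt h)"
  unfolding commutes_def ueq_def comm_def using rel_idl idl_hom comm_def by metis

lemma comm_Z1_Z2: "commutes (lt Z1) (lt Z2)" by (rule rel_commutes) (simp add: rels_def)
lemma comm_Z11_Z2: "commutes (lt Z11) (lt Z2)" by (rule rel_commutes) (simp add: rels_def)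
lemma comm_Z1_Z22: "commutes (lt Z1) (lt Z22)" by (rule rel_commutes) (simp add: rels_def)

declare sum.cong[fundef_cong]

function sinv :: "ser \<Rightarrow> gen list \<Rightarrow> complex" where
  "sinv a [] = 1 / a []"
| "sinv a (x # w) = - (\<Sum>k\<in>{..length w}. a (x # take k w) * sinv a (drop k w)) / a []"
  by pat_completeness auto
termination by (relation "Wellfounded.measure (\<lambda>(a, w). length w)") auto

lemma sinv_right: "a [] \<noteq> 0 \<Longrightarrow> a \<odot> sinv a = one"
proof (rule ext)
  fix w assume a0: "a [] \<noteq> 0"
  show "(a \<odot> sinv a) w = one w"
  proof (cases w)
    case Nil then show ?thesis using a0 by (simp add: one_def)
  next
    case (Cons x u)
    have "(shift x a \<odot> sinv a) u = (\<Sum>k\<in>{..length u}. a (x # take k u) * sinv a (drop k u))"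
      by (simp add: smul_def shift_def)
    then show ?thesis using a0 Cons by (simp add: smul_Cons one_def)
  qed
qed

lemma sinv_left: "a [] \<noteq> 0 \<Longrightarrow> sinv a \<odot> a = one"
proof -
  assume a0: "a [] \<noteq> 0"
  have b0: "sinv a [] \<noteq> 0" using a0 by simp
  have "a = a \<odot> (sinv a \<odot> sinv (sinv a))" using sinv_right[of "sinv a", OF b0] by simp
  also have "\<dots> = sinv (sinv a)" by (simp add: smul_assoc[symmetric] sinv_right[of a, OF a0])
  finally have "sinv a \<odot> a = sinv a \<odot> sinv (sinv a)" by simp
  then show ?thesis using sinv_right[of "sinv a", OF b0] by simp
qed

lemma ueq_cancel_right: "Q \<odot> Q' = one \<Longrightarrow> ueq (x \<odot> Q) (y \<odot> Q) \<Longrightarrow> ueq x y"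
proof -
  assume q: "Q \<odot> Q' = one" and e: "ueq (x \<odot> Q) (y \<odot> Q)"
  have "ueq (x \<odot> Q \<odot> Q') (y \<odot> Q \<odot> Q')" using e by (rule ueq_smul_left)
  then show ?thesis by (simp add: smul_assoc q)
qed

lemma ueq_cancel_left: "Q' \<odot> Q = one \<Longrightarrow> ueq (Q \<odot> x) (Q \<odot> y) \<Longrightarrow> ueq x y"
proof -
  assume q: "Q' \<odot> Q = one" and e: "ueq (Q \<odot> x) (Q \<odot> y)"
  have "ueq (Q' \<odot> (Q \<odot> x)) (Q' \<odot> (Q \<odot> y))" using e by (rule ueq_smul_right)
  then show ?thesis by (simp add: smul_assoc[symmetric] q)
qed

lemma smul_Nil_nz: "a [] \<noteq> 0 \<Longrightarrow> b [] \<noteq> 0 \<Longrightarrow> (a \<odot> b) [] \<noteq> 0" by simp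

lemma zpow_Nil: "zpow g z [] = 1" by (simp add: zpow_def)


section \<open>Geometry of the slit disc\<close>

lemma slit_open: "open (slit r)"
proof -
  have "closed {z::complex. Im z = 0 \<and> Re z \<le> 0}"
    by (intro closed_Collect_conj closed_Collect_eq closed_Collect_le continuous_intros)
  then show ?thesis unfolding slit_def by (intro open_Diff open_ball)
qed

lemma slit_ball: "slit r \<subseteq> ball 0 r" by (auto simp: slit_def)

lemma slit_nonpos: "z \<in> slit r \<Longrightarrow> z \<notin> \<real>\<^sub>\<le>\<^sub>0"
  by (auto simp: slit_def complex_nonpos_Reals_iff)

lemma slit_ne0: "z \<in> slit r \<Longrightarrow> z \<noteq> 0"
  by (auto simp: slit_def)

lemma slit_mono: "r \<le> r' \<Longrightarrow> slit r \<subseteq> slit r'"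
  by (auto simp: slit_def)

lemma real_in_slit: "0 < t \<Longrightarrow> t < r \<Longrightarrow> complex_of_real t \<in> slit r"
  by (auto simp: slit_def)

lemma segment_in_slit:
  assumes a: "0 < a" "a < r" and z: "z \<in> slit r"
  shows "closed_segment (complex_of_real a) z \<subseteq> slit r"
proof
  fix x assume x: "x \<in> closed_segment (complex_of_real a) z"
  then obtain u where u: "0 \<le> u" "u \<le> 1" "x = (1 - u) *\<^sub>R complex_of_real a + u *\<^sub>R z"
    by (auto simp: closed_segment_def)
  have "x \<in> ball 0 r"
  proof -
    have "complex_of_real a \<in> ball 0 r" using a by auto
    moreover have "z \<in> ball 0 r" using z by (auto simp: slit_def)
    ultimately show ?thesis using x convex_ball[of "0::complex" r] closed_segment_subset by blast
  qed
  moreover have "\<not> (Im x = 0 \<and> Re x \<le> 0)"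
  proof
    assume A: "Im x = 0 \<and> Re x \<le> 0"
    have ImX: "Im x = u * Im z" and ReX: "Re x = (1 - u) * a + u * Re z" using u by simp_all
    show False
    proof (cases "u = 0")
      case True then show False using A ReX a by simp
    next
      case False
      then have "Im z = 0" using A ImX by simp
      then have "Re z > 0" using z by (auto simp: slit_def)
      moreover have "(1 - u) * a \<ge> 0" using u a by simp
      ultimately have "Re x > 0" using ReX u False by (smt (verit) mult_pos_pos)
      then show False using A by simp
    qed
  qed
  ultimately show "x \<in> slit r" by (simp add: slit_def)
qed

lemma slit_connected: "0 < r \<Longrightarrow> connected (slit r)"
proof -
  assume r: "0 < r"
  have "starlike (slit r)"
    unfolding starlike_def
    using segment_in_slit[of "r/2" r] real_in_slit[of "r/2" r] r by force
  then show ?thesis by (rule starlike_imp_connected)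
qed

lemma slit_seq: "0 < r \<Longrightarrow> (\<lambda>k. complex_of_real (r / (real k + 2))) \<longlonglongrightarrow> 0 \<and> (\<forall>k. complex_of_real (r / (real k + 2)) \<in> slit r)"
proof
  assume r: "0 < r"
  have lim: "(\<lambda>k. r / (real k + 2)) \<longlonglongrightarrow> 0" by real_asymp
  show "(\<lambda>k. complex_of_real (r / (real k + 2))) \<longlonglongrightarrow> 0"
    using tendsto_of_real[OF lim] by (simp only: of_real_0)
  show "\<forall>k. complex_of_real (r / (real k + 2)) \<in> slit r"
  proof
    fix k
    have "r / (real k + 2) < r" using r by (simp add: field_simps) (smt (verit) of_nat_0_le_iff mult_nonneg_nonneg r)
    then show "complex_of_real (r / (real k + 2)) \<in> slit r" using r by (intro real_in_slit) auto
  qed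
qed

lemma const_on_slit_at0:
  assumes r: "0 < r" and c: "isCont f 0" and k: "\<And>z. z \<in> slit r \<Longrightarrow> f z = c0"
  shows "f 0 = (c0 :: complex)"
proof -
  define t where "t k = complex_of_real (r / (real k + 2))" for k
  have "t \<longlonglongrightarrow> 0 \<and> (\<forall>k. t k \<in> slit r)" unfolding t_def by (rule slit_seq[OF r])
  then have t: "t \<longlonglongrightarrow> 0" "\<forall>k. t k \<in> slit r" by auto
  have "(\<lambda>k. f (t k)) \<longlonglongrightarrow> f 0" using c t(1) isCont_tendsto_compose by blast
  moreover have "(\<lambda>k. f (t k)) = (\<lambda>k. c0)" using k t(2) by auto
  ultimately show ?thesis using LIMSEQ_unique tendsto_const by metis
qed

section \<open>Uniqueness of normalized solutions\<close>

lemma app_holo: "(\<forall>w. (\<lambda>z. D z w) holomorphic_on S) \<Longrightarrow> (\<lambda>z. app n c (D z)) holomorphic_on S"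
  unfolding app_def by (intro holomorphic_intros) auto

lemma uniq0:
  assumes r: "0 < r"
    and D: "\<forall>w. (\<lambda>z. D z w) holomorphic_on ball 0 r"
    and D0: "ueq (D 0) zer"
    and eq: "\<forall>z\<in>slit r. ueq (sderiv D z) (op T p z (D z))"
  shows "\<forall>z\<in>slit r. ueq (D z) zer"
proof -
  have main: "\<forall>z\<in>slit r. idl (hom n (D z))" for n
  proof (induction n rule: less_induct)
    case (less n)
    show ?case
    proof
      fix z assume z: "z \<in> slit r"
      show "idl (hom n (D z))"
      proof (rule idl_hom_by_ann)
        fix c assume "c \<in> ann n"
        then have c: "annih n c" by (rule ann_annih)
        define f where "f t = app n c (D t)" for t
        have fh: "f holomorphic_on ball 0 r" unfolding f_def by (rule app_holo[OF D])
        have "\<forall>t\<in>slit r - {}. (f has_field_derivative 0) (at t)"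
        proof
          fix t assume t: "t \<in> slit r - {}"
          then have tb: "t \<in> ball 0 r" using slit_ball[of r] by blast
          have "(f has_field_derivative app n c (sderiv D t)) (at t)"
            unfolding f_def by (rule app_sdiff[OF holo_sdiff[OF D open_ball tb]])
          moreover have "app n c (sderiv D t) = app n c (op T p t (D t))"
            using eq t c annih_ueq by auto
          moreover have "app n c (op T p t (D t)) = 0"
            using less t c by (intro op_lower) auto
          ultimately show "(f has_field_derivative 0) (at t)" by simp
        qed
        moreover have "continuous_on (slit r) f"
          using holomorphic_on_imp_continuous_on[OF fh] slit_ball continuous_on_subset by blast
        ultimately obtain c0 where c0: "\<And>t. t \<in> slit r \<Longrightarrow> f t = c0"
          using DERIV_zero_connected_constant[OF slit_connected[OF r] slit_open finite.emptyI] by blast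
        have "isCont f 0"
          using holomorphic_on_imp_continuous_on[OF fh] r
          by (simp add: continuous_on_eq_continuous_at)
        then have "f 0 = c0" by (rule const_on_slit_at0[OF r]) (rule c0)
        moreover have "f 0 = 0" using annih_ueq[OF c D0] by (simp add: f_def)
        ultimately show "app n c (D z) = 0" using c0[OF z] by (simp add: f_def)
      qed
    qed
  qed
  have "ssub (D z) zer = D z" for z by (rule ext) (simp add: sapp)
  then show ?thesis using main by (simp add: ueq_def)
qed

lemma uniq:
  assumes r: "0 < r"
    and X: "\<forall>w. (\<lambda>z. X z w) holomorphic_on ball 0 r"
    and Y: "\<forall>w. (\<lambda>z. Y z w) holomorphic_on ball 0 r"
    and XY0: "ueq (X 0) (Y 0)"
    and eqX: "\<forall>z\<in>slit r. ueq (sderiv X z) (op T p z (X z))"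
    and eqY: "\<forall>z\<in>slit r. ueq (sderiv Y z) (op T p z (Y z))"
  shows "\<forall>z\<in>slit r. ueq (X z) (Y z)"
proof -
  define D where "D z = ssub (X z) (Y z)" for z
  have D: "\<forall>w. (\<lambda>z. D z w) holomorphic_on ball 0 r"
    using X Y by (auto simp: D_def sapp intro!: holomorphic_intros)
  have D0: "ueq (D 0) zer"
  proof -
    have "ueq (D 0) (ssub (Y 0) (Y 0))" unfolding D_def by (rule ueq_ssub[OF XY0 ueq_refl])
    moreover have "ssub (Y 0) (Y 0) = zer" by (rule ext) (simp add: sapp)
    ultimately show ?thesis by simp
  qed
  have eq: "\<forall>z\<in>slit r. ueq (sderiv D z) (op T p z (D z))"
  proof
    fix z assume z: "z \<in> slit r"
    then have zb: "z \<in> ball 0 r" using slit_ball[of r] by blast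
    have "sderiv D z = ssub (sderiv X z) (sderiv Y z)"
      unfolding D_def
      by (rule sdiff_sderiv, rule sdiff_ssub[OF holo_sdiff[OF X open_ball zb] holo_sdiff[OF Y open_ball zb]])
    also have "ueq \<dots> (ssub (op T p z (X z)) (op T p z (Y z)))"
      using eqX eqY z by (intro ueq_ssub) auto
    also have "ssub (op T p z (X z)) (op T p z (Y z)) = op T p z (D z)"
      by (simp add: D_def op_ssub)
    finally show "ueq (sderiv D z) (op T p z (D z))" .
  qed
  have "\<forall>z\<in>slit r. ueq (D z) zer" by (rule uniq0[OF r D D0 eq])
  moreover have "ueq (D z) zer \<Longrightarrow> ueq (X z) (Y z)" for z
  proof -
    assume "ueq (D z) zer"
    then have "ueq (sadd (D z) (Y z)) (sadd zer (Y z))" by (rule ueq_sadd) simp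
    moreover have "sadd (D z) (Y z) = X z" "sadd zer (Y z) = Y z" by (rule ext, simp add: D_def sapp)+
    ultimately show ?thesis by simp
  qed
  ultimately show ?thesis by blast
qed


lemma sum_list_tendsto:
  fixes f :: "'a \<Rightarrow> nat \<Rightarrow> complex"
  shows "(\<And>x. x \<in> set T \<Longrightarrow> (\<lambda>k. f x k) \<longlonglongrightarrow> l x) \<Longrightarrow> (\<lambda>k. \<Sum>x\<leftarrow>T. f x k) \<longlonglongrightarrow> (\<Sum>x\<leftarrow>T. l x)"
  by (induction T) (auto intro!: tendsto_add)

lemma sum_list_bound:
  fixes f :: "'a \<Rightarrow> nat \<Rightarrow> 'b \<Rightarrow> complex"
  shows "(\<And>x. x \<in> set T \<Longrightarrow> \<exists>M. \<forall>k. \<forall>\<xi>\<in>S. norm (f x k \<xi>) \<le> M) \<Longrightarrow> \<exists>M. \<forall>k. \<forall>\<xi>\<in>S. norm (\<Sum>x\<leftarrow>T. f x k \<xi>) \<le> M"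
proof (induction T)
  case Nil then show ?case by auto
next
  case (Cons x T)
  have "\<exists>M. \<forall>k. \<forall>\<xi>\<in>S. norm (f x k \<xi>) \<le> M" using Cons.prems[of x] by simp
  then obtain M1 where M1: "\<forall>k. \<forall>\<xi>\<in>S. norm (f x k \<xi>) \<le> M1" by blast
  have "\<exists>M. \<forall>k. \<forall>\<xi>\<in>S. norm (\<Sum>x\<leftarrow>T. f x k \<xi>) \<le> M" using Cons by simp
  then obtain M2 where M2: "\<forall>k. \<forall>\<xi>\<in>S. norm (\<Sum>x\<leftarrow>T. f x k \<xi>) \<le> M2" by blast
  have "norm (\<Sum>x\<leftarrow>x # T. f x k \<xi>) \<le> M1 + M2" if "\<xi> \<in> S" for k \<xi>
  proof -
    have "norm (\<Sum>x\<leftarrow>x # T. f x k \<xi>) = norm (f x k \<xi> + (\<Sum>x\<leftarrow>T. f x k \<xi>))" by simp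
    also have "\<dots> \<le> norm (f x k \<xi>) + norm (\<Sum>x\<leftarrow>T. f x k \<xi>)" by (rule norm_triangle_ineq)
    also have "\<dots> \<le> M1 + M2" using M1 M2 that by (intro add_mono) auto
    finally show ?thesis .
  qed
  then show ?case by blast
qed

lemma hom0_zer: "x [] = 0 \<Longrightarrow> hom 0 x = zer"
  by (rule ext) (simp add: hom_def sapp)

lemma app0: "app 0 c x = c [] * x []"
  by (simp add: app_def W0)

lemma app_isCont:
  assumes "\<forall>w. (\<lambda>z. F z w) holomorphic_on ball 0 r" "z0 \<in> ball 0 r"
  shows "isCont (\<lambda>z. app n c (F z)) z0"
proof -
  have "(\<lambda>z. app n c (F z)) holomorphic_on ball 0 r" by (rule app_holo[OF assms(1)])
  then show ?thesis using assms(2) holomorphic_on_imp_continuous_on continuous_on_eq_continuous_at open_ball by blast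
qed

locale limsetup =
  fixes r :: real and H :: "complex \<Rightarrow> complex \<Rightarrow> ser" and T :: term_list and A :: "complex \<Rightarrow> ser"
  assumes r: "0 < r"
  and H1: "\<And>w z2. z2 \<in> ball 0 r \<Longrightarrow> (\<lambda>z1. H z1 z2 w) holomorphic_on ball 0 r"
  and H2: "\<And>w z1. z1 \<in> ball 0 r \<Longrightarrow> (\<lambda>z2. H z1 z2 w) holomorphic_on ball 0 r"
  and HNil: "\<And>z1 z2. z1 \<in> ball 0 r \<Longrightarrow> z2 \<in> ball 0 r \<Longrightarrow> H z1 z2 [] = 1"
  and Heq: "\<And>z1 z2. z1 \<in> slit r \<Longrightarrow> z2 \<in> slit r \<Longrightarrow> ueq (sderiv (H z1) z2) (op T z1 z2 (H z1 z2))"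
  and Tc: "\<And>q b g. (q, b, g) \<in> set T \<Longrightarrow> continuous_on (cball 0 (r/2) \<times> (ball 0 r - {0})) (\<lambda>p. q (fst p) (snd p))"
  and A: "\<And>w. (\<lambda>z. A z w) holomorphic_on ball 0 r"
  and ANil: "\<And>z. z \<in> ball 0 r \<Longrightarrow> A z [] = 1"
  and A0: "ueq (A 0) (H 0 0)"
  and Aeq: "\<And>z. z \<in> slit r \<Longrightarrow> ueq (sderiv A z) (op T 0 z (A z))"
begin

definition a :: complex where "a = complex_of_real (r / 2)"
definition t :: "nat \<Rightarrow> complex" where "t k = complex_of_real (r / (real k + 2))"

lemma a_slit: "a \<in> slit r" unfolding a_def using r by (intro real_in_slit) auto

lemma t_slit: "t k \<in> slit r" using slit_seq[OF r] by (simp add: t_def)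
lemma t_lim: "t \<longlonglongrightarrow> 0" using slit_seq[OF r] unfolding t_def by simp
lemma t_ball: "t k \<in> ball 0 r" using t_slit slit_ball by blast
lemma t_cball: "t k \<in> cball 0 (r/2)"
proof -
  have "r / (real k + 2) \<le> r / 2" using r by (intro divide_left_mono) auto
  moreover have "0 \<le> r / (real k + 2)" using r by simp
  moreover have "norm (t k) = \<bar>r / (real k + 2)\<bar>" unfolding t_def by (rule norm_of_real)
  ultimately show ?thesis by (simp only: mem_cball_0)
qed

lemma slit_ball': "z \<in> slit r \<Longrightarrow> z \<in> ball 0 r" using slit_ball by blast

lemma seg_slit: "z \<in> slit r \<Longrightarrow> closed_segment a z \<subseteq> slit r"
  unfolding a_def using r by (intro segment_in_slit) auto

lemma seg_sub: "z \<in> slit r \<Longrightarrow> \<zeta> \<in> closed_segment a z \<Longrightarrow> closed_segment a \<zeta> \<subseteq> closed_segment a z"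
  by (simp add: subset_closed_segment)

lemma seg_slit2: "z \<in> slit r \<Longrightarrow> \<zeta> \<in> closed_segment a z \<Longrightarrow> \<zeta> \<in> slit r"
  using seg_slit by blast

definition Phi :: "nat \<Rightarrow> ser \<Rightarrow> complex \<Rightarrow> complex \<Rightarrow> complex" where
  "Phi m c z1 \<xi> = (\<Sum>(q, b, g)\<leftarrow>T. q z1 \<xi> * app m (cs b g c) (H z1 \<xi>))"

lemma deriv_H:
  assumes c: "annih (Suc m) c" and z1: "z1 \<in> slit r" and \<xi>: "\<xi> \<in> slit r"
  shows "((\<lambda>\<xi>. app (Suc m) c (H z1 \<xi>)) has_field_derivative Phi m c z1 \<xi>) (at \<xi>)"
proof -
  have hol: "\<forall>w. (\<lambda>z2. H z1 z2 w) holomorphic_on ball 0 r" using H2 slit_ball' z1 by blast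
  have "((\<lambda>\<xi>. app (Suc m) c (H z1 \<xi>)) has_field_derivative app (Suc m) c (sderiv (H z1) \<xi>)) (at \<xi>)"
    by (rule app_sdiff[OF holo_sdiff[OF hol open_ball slit_ball'[OF \<xi>]], unfolded eta_contract_eq])
  moreover have "app (Suc m) c (sderiv (H z1) \<xi>) = app (Suc m) c (op T z1 \<xi> (H z1 \<xi>))"
    using annih_ueq[OF c Heq[OF z1 \<xi>]] .
  moreover have "app (Suc m) c (op T z1 \<xi> (H z1 \<xi>)) = Phi m c z1 \<xi>"
    by (simp add: app_op_Suc Phi_def)
  ultimately show ?thesis by simp
qed

lemma integral_H:
  assumes c: "annih (Suc m) c" and z1: "z1 \<in> slit r" and \<zeta>: "\<zeta> \<in> slit r"
  shows "(Phi m c z1 has_contour_integral (app (Suc m) c (H z1 \<zeta>) - app (Suc m) c (H z1 a))) (linepath a \<zeta>)"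
proof -
  have "(Phi m c z1 has_contour_integral
        ((\<lambda>\<xi>. app (Suc m) c (H z1 \<xi>)) (pathfinish (linepath a \<zeta>)) - (\<lambda>\<xi>. app (Suc m) c (H z1 \<xi>)) (pathstart (linepath a \<zeta>)))) (linepath a \<zeta>)"
    by (rule contour_integral_primitive[where S="slit r"])
      (use deriv_H[OF c z1] seg_slit[OF \<zeta>] in \<open>auto intro: has_field_derivative_at_within\<close>)
  then show ?thesis by simp
qed

lemma H1': "\<forall>w. (\<lambda>z1. H z1 z2 w) holomorphic_on ball 0 r" if "z2 \<in> ball 0 r" for z2
  using H1 that by blast

lemma conv_app:
  assumes "\<xi> \<in> ball 0 r"
  shows "(\<lambda>k. app m c (H (t k) \<xi>)) \<longlonglongrightarrow> app m c (H 0 \<xi>)"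
proof -
  have "isCont (\<lambda>z1. app m c (H z1 \<xi>)) 0" using r by (intro app_isCont[OF H1'[OF assms]]) auto
  then show ?thesis using isCont_tendsto_compose t_lim by blast
qed

lemma dom_sub: "z \<in> slit r \<Longrightarrow> cball 0 (r/2) \<times> closed_segment a z \<subseteq> cball 0 (r/2) \<times> (ball 0 r - {0})"
  using seg_slit slit_ball' slit_ne0 by blast

lemma q_bound:
  assumes "(q, b, g) \<in> set T" "z \<in> slit r"
  shows "\<exists>Q. \<forall>p\<in>cball 0 (r/2) \<times> closed_segment a z. norm (q (fst p) (snd p)) \<le> Q"
proof -
  have "continuous_on (cball 0 (r/2) \<times> closed_segment a z) (\<lambda>p. q (fst p) (snd p))"
    using Tc[OF assms(1)] dom_sub[OF assms(2)] continuous_on_subset by blast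
  moreover have "compact (cball (0::complex) (r/2) \<times> closed_segment a z)"
    by (intro compact_Times compact_cball compact_segment)
  ultimately have "compact ((\<lambda>p. q (fst p) (snd p)) ` (cball 0 (r/2) \<times> closed_segment a z))"
    by (rule compact_continuous_image)
  then have "bounded ((\<lambda>p. q (fst p) (snd p)) ` (cball 0 (r/2) \<times> closed_segment a z))"
    by (rule compact_imp_bounded)
  then show ?thesis unfolding bounded_iff by auto
qed

lemma q_conv:
  assumes "(q, b, g) \<in> set T" "\<xi> \<in> slit r"
  shows "(\<lambda>k. q (t k) \<xi>) \<longlonglongrightarrow> q 0 \<xi>"
proof -
  have "((\<lambda>k. (\<lambda>p. q (fst p) (snd p)) (t k, \<xi>)) \<longlongrightarrow> (\<lambda>p. q (fst p) (snd p)) (0, \<xi>)) sequentially"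
  proof (rule continuous_on_tendsto_compose[OF Tc[OF assms(1)]])
    show "((\<lambda>k. (t k, \<xi>)) \<longlongrightarrow> (0, \<xi>)) sequentially" by (intro tendsto_Pair t_lim tendsto_const)
    show "(0, \<xi>) \<in> cball 0 (r/2) \<times> (ball 0 r - {0})" using r assms(2) slit_ball' slit_ne0 by auto
    show "\<forall>\<^sub>F k in sequentially. (t k, \<xi>) \<in> cball 0 (r/2) \<times> (ball 0 r - {0})"
      using t_cball assms(2) slit_ball' slit_ne0 by auto
  qed
  then show ?thesis by simp
qed

lemma Phi_conv:
  assumes "\<xi> \<in> slit r"
  shows "(\<lambda>k. Phi m c (t k) \<xi>) \<longlonglongrightarrow> Phi m c 0 \<xi>"
  unfolding Phi_def
proof (rule sum_list_tendsto)
  fix x assume x: "x \<in> set T"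
  obtain q b g where xq: "x = (q, b, g)" by (cases x) auto
  show "(\<lambda>k. case x of (q, b, g) \<Rightarrow> q (t k) \<xi> * app m (cs b g c) (H (t k) \<xi>))
        \<longlonglongrightarrow> (case x of (q, b, g) \<Rightarrow> q 0 \<xi> * app m (cs b g c) (H 0 \<xi>))"
  proof -
    have 1: "(\<lambda>k. q (t k) \<xi>) \<longlonglongrightarrow> q 0 \<xi>" by (rule q_conv[OF x[unfolded xq] assms])
    have 2: "(\<lambda>k. app m (cs b g c) (H (t k) \<xi>)) \<longlonglongrightarrow> app m (cs b g c) (H 0 \<xi>)"
      by (rule conv_app[OF slit_ball'[OF assms]])
    show ?thesis unfolding xq using tendsto_mult[OF 1 2] by simp
  qed
qed

lemma bound:
  "annih m c \<Longrightarrow> z \<in> slit r \<Longrightarrow> \<exists>B. \<forall>k. \<forall>\<zeta>\<in>closed_segment a z. norm (app m c (H (t k) \<zeta>)) \<le> B"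
proof (induction m arbitrary: c z)
  case 0
  have "app 0 c (H (t k) \<zeta>) = c []" if "\<zeta> \<in> closed_segment a z" for k \<zeta>
    using HNil[OF t_ball slit_ball'[OF seg_slit2[OF 0(2) that]]] by (simp add: app0)
  then show ?case by auto
next
  case (Suc m)
  note c = Suc.prems(1) and z = Suc.prems(2)
  have PhiB: "\<exists>M. \<forall>k. \<forall>\<xi>\<in>closed_segment a z. norm (Phi m c (t k) \<xi>) \<le> M"
    unfolding Phi_def
  proof (rule sum_list_bound)
    fix x assume x: "x \<in> set T"
    obtain q b g where xq: "x = (q, b, g)" by (cases x) auto
    obtain Q where Q: "\<forall>p\<in>cball 0 (r/2) \<times> closed_segment a z. norm (q (fst p) (snd p)) \<le> Q"
      using q_bound x xq z by blast
    obtain B where B: "\<forall>k. \<forall>\<zeta>\<in>closed_segment a z. norm (app m (cs b g c) (H (t k) \<zeta>)) \<le> B"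
      using Suc.IH[OF annih_cs[OF c] z] by blast
    have "norm (q (t k) \<xi> * app m (cs b g c) (H (t k) \<xi>)) \<le> Q * B" if "\<xi> \<in> closed_segment a z" for k \<xi>
    proof -
      have "norm (q (t k) \<xi>) \<le> Q" using Q t_cball that by auto
      moreover have "norm (app m (cs b g c) (H (t k) \<xi>)) \<le> B" using B that by auto
      ultimately show ?thesis by (simp add: norm_mult mult_mono')
    qed
    then show "\<exists>M. \<forall>k. \<forall>\<xi>\<in>closed_segment a z.
        norm (case x of (q, b, g) \<Rightarrow> q (t k) \<xi> * app m (cs b g c) (H (t k) \<xi>)) \<le> M"
      unfolding xq by auto
  qed
  then obtain M0 where M0: "\<forall>k. \<forall>\<xi>\<in>closed_segment a z. norm (Phi m c (t k) \<xi>) \<le> M0" by blast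
  define M where "M = max M0 0"
  have M: "\<forall>k. \<forall>\<xi>\<in>closed_segment a z. norm (Phi m c (t k) \<xi>) \<le> M" "0 \<le> M"
    using M0 by (auto simp: M_def intro: le_max_iff_disj[THEN iffD2])
  have "Bseq (\<lambda>k. app (Suc m) c (H (t k) a))"
    using conv_app[OF slit_ball'[OF a_slit]] convergent_imp_Bseq convergentI by blast
  then obtain Ka where Ka: "\<forall>k. norm (app (Suc m) c (H (t k) a)) \<le> Ka" unfolding Bseq_def by blast
  have "norm (app (Suc m) c (H (t k) \<zeta>)) \<le> Ka + M * norm (z - a)" if \<zeta>: "\<zeta> \<in> closed_segment a z" for k \<zeta>
  proof -
    have I: "(Phi m c (t k) has_contour_integral (app (Suc m) c (H (t k) \<zeta>) - app (Suc m) c (H (t k) a))) (linepath a \<zeta>)"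
      by (rule integral_H[OF c t_slit seg_slit2[OF z \<zeta>]])
    have "norm (app (Suc m) c (H (t k) \<zeta>) - app (Suc m) c (H (t k) a)) \<le> M * norm (\<zeta> - a)"
      by (rule has_contour_integral_bound_linepath[OF I M(2)]) (use M seg_sub[OF z \<zeta>] in blast)
    also have "\<dots> \<le> M * norm (z - a)"
      using dist_in_closed_segment[OF \<zeta>] M(2) by (intro mult_left_mono) (auto simp: dist_norm norm_minus_commute)
    finally have "norm (app (Suc m) c (H (t k) \<zeta>) - app (Suc m) c (H (t k) a)) \<le> M * norm (z - a)" .
    moreover have "norm (app (Suc m) c (H (t k) \<zeta>)) \<le> norm (app (Suc m) c (H (t k) \<zeta>) - app (Suc m) c (H (t k) a)) + norm (app (Suc m) c (H (t k) a))"
      using norm_triangle_ineq[of "app (Suc m) c (H (t k) \<zeta>) - app (Suc m) c (H (t k) a)" "app (Suc m) c (H (t k) a)"] by simp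
    ultimately show ?thesis using Ka by (smt (verit))
  qed
  then show ?case by blast
qed

lemma Phi_bound:
  assumes c: "annih (Suc m) c" and z: "z \<in> slit r"
  shows "\<exists>M. \<forall>k. \<forall>\<xi>\<in>closed_segment a z. norm (Phi m c (t k) \<xi>) \<le> M"
  unfolding Phi_def
proof (rule sum_list_bound)
  fix x assume x: "x \<in> set T"
  obtain q b g where xq: "x = (q, b, g)" by (cases x) auto
  obtain Q where Q: "\<forall>p\<in>cball 0 (r/2) \<times> closed_segment a z. norm (q (fst p) (snd p)) \<le> Q"
    using q_bound x xq z by blast
  obtain B where B: "\<forall>k. \<forall>\<zeta>\<in>closed_segment a z. norm (app m (cs b g c) (H (t k) \<zeta>)) \<le> B"
    using bound[OF annih_cs[OF c] z] by blast
  have "norm (q (t k) \<xi> * app m (cs b g c) (H (t k) \<xi>)) \<le> Q * B" if "\<xi> \<in> closed_segment a z" for k \<xi>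
  proof -
    have "norm (q (t k) \<xi>) \<le> Q" using Q t_cball that by auto
    moreover have "norm (app m (cs b g c) (H (t k) \<xi>)) \<le> B" using B that by auto
    ultimately show ?thesis by (simp add: norm_mult mult_mono')
  qed
  then show "\<exists>M. \<forall>k. \<forall>\<xi>\<in>closed_segment a z.
      norm (case x of (q, b, g) \<Rightarrow> q (t k) \<xi> * app m (cs b g c) (H (t k) \<xi>)) \<le> M"
    unfolding xq by auto
qed

lemma ann_eq_of_idl: "annih m c' \<Longrightarrow> idl (hom m (ssub X Y)) \<Longrightarrow> app m c' X = app m c' Y"
proof -
  assume c': "annih m c'" and i: "idl (hom m (ssub X Y))"
  then have "app m c' (hom m (ssub X Y)) = 0" by (simp add: annih_def)
  then show ?thesis by (simp add: app_hom app_ssub)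
qed

lemma limit_step:
  assumes c: "annih (Suc m) c"
    and IH: "\<forall>z\<in>slit r. idl (hom m (ssub (H 0 z) (A z)))"
    and \<zeta>: "\<zeta> \<in> slit r"
  shows "app (Suc m) c (H 0 \<zeta>) - app (Suc m) c (A \<zeta>) = app (Suc m) c (H 0 a) - app (Suc m) c (A a)"
proof -
  define gA where "gA \<xi> = app (Suc m) c (A \<xi>)" for \<xi>
  have dA: "(gA has_field_derivative Phi m c 0 \<xi>) (at \<xi>)" if \<xi>: "\<xi> \<in> slit r" for \<xi>
  proof -
    have "(gA has_field_derivative app (Suc m) c (sderiv A \<xi>)) (at \<xi>)"
      unfolding gA_def using A by (intro app_sdiff holo_sdiff[OF _ open_ball slit_ball'[OF \<xi>]]) auto
    moreover have "app (Suc m) c (sderiv A \<xi>) = app (Suc m) c (op T 0 \<xi> (A \<xi>))"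
      using annih_ueq[OF c Aeq[OF \<xi>]] .
    moreover have "app (Suc m) c (op T 0 \<xi> (A \<xi>)) = Phi m c 0 \<xi>"
    proof -
      have "app m (cs b g c) (A \<xi>) = app m (cs b g c) (H 0 \<xi>)" for b g
        using ann_eq_of_idl[OF annih_cs[OF c] IH[rule_format, OF \<xi>]] by simp
      then show ?thesis by (simp add: app_op_Suc Phi_def)
    qed
    ultimately show ?thesis by simp
  qed
  have IA: "(Phi m c 0 has_contour_integral (gA \<zeta> - gA a)) (linepath a \<zeta>)"
  proof -
    have "(Phi m c 0 has_contour_integral (gA (pathfinish (linepath a \<zeta>)) - gA (pathstart (linepath a \<zeta>)))) (linepath a \<zeta>)"
      by (rule contour_integral_primitive[where S="slit r"])
        (use dA seg_slit[OF \<zeta>] in \<open>auto intro: has_field_derivative_at_within\<close>)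
    then show ?thesis by simp
  qed
  define Ik where "Ik k = app (Suc m) c (H (t k) \<zeta>) - app (Suc m) c (H (t k) a)" for k
  have Ik: "(Phi m c (t k) has_contour_integral Ik k) (linepath a \<zeta>)" for k
    unfolding Ik_def by (rule integral_H[OF c t_slit \<zeta>])
  define fk where "fk k x = Phi m c (t k) (linepath a \<zeta> x) * (\<zeta> - a)" for k x
  define g0 where "g0 x = Phi m c 0 (linepath a \<zeta> x) * (\<zeta> - a)" for x
  have fkI: "(fk k has_integral Ik k) {0..1}" for k
    using Ik[of k] unfolding has_contour_integral_linepath fk_def .
  have g0I: "(g0 has_integral (gA \<zeta> - gA a)) {0..1}"
    using IA unfolding has_contour_integral_linepath g0_def .
  obtain M where M: "\<forall>k. \<forall>\<xi>\<in>closed_segment a \<zeta>. norm (Phi m c (t k) \<xi>) \<le> M"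
    using Phi_bound[OF c \<zeta>] by blast
  have DC: "(\<lambda>k. integral {0..1} (fk k)) \<longlonglongrightarrow> integral {0..1} g0"
  proof (rule dominated_convergence(2)[where h="\<lambda>x. M * norm (\<zeta> - a)"])
    show "fk k integrable_on {0..1}" for k using fkI by blast
    show "(\<lambda>x::real. M * norm (\<zeta> - a)) integrable_on {0..1}"
      using integrable_const[of "M * norm (\<zeta> - a)" "0::real" 1] by (simp add: cbox_interval)
    show "norm (fk k x) \<le> M * norm (\<zeta> - a)" if "x \<in> {0..1}" for k x
      using M linepath_in_path[OF that, of a \<zeta>] by (simp add: fk_def norm_mult mult_right_mono)
    show "(\<lambda>k. fk k x) \<longlonglongrightarrow> g0 x" if "x \<in> {0..1}" for x
    proof -
      have "linepath a \<zeta> x \<in> slit r" using linepath_in_path[OF that] seg_slit[OF \<zeta>] by blast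
      then show ?thesis unfolding fk_def g0_def by (intro tendsto_mult_right Phi_conv)
    qed
  qed
  have "integral {0..1} (fk k) = Ik k" for k using fkI by (rule integral_unique)
  moreover have "integral {0..1} g0 = gA \<zeta> - gA a" using g0I by (rule integral_unique)
  ultimately have L1: "Ik \<longlonglongrightarrow> gA \<zeta> - gA a" using DC by simp
  have L2: "Ik \<longlonglongrightarrow> app (Suc m) c (H 0 \<zeta>) - app (Suc m) c (H 0 a)"
    unfolding Ik_def by (intro tendsto_diff conv_app slit_ball' \<zeta> a_slit)
  have "gA \<zeta> - gA a = app (Suc m) c (H 0 \<zeta>) - app (Suc m) c (H 0 a)"
    using LIMSEQ_unique[OF L1 L2] .
  then show ?thesis by (simp add: gA_def algebra_simps)
qed

theorem H0_eq_A: "\<forall>z\<in>slit r. ueq (H 0 z) (A z)"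
proof -
  have main: "\<forall>z\<in>slit r. idl (hom n (ssub (H 0 z) (A z)))" for n
  proof (induction n)
    case 0
    show ?case
    proof
      fix z assume z: "z \<in> slit r"
      have "ssub (H 0 z) (A z) [] = 0"
        using HNil[of 0 z] ANil[of z] r slit_ball'[OF z] by (simp add: sapp)
      then show "idl (hom 0 (ssub (H 0 z) (A z)))" by (simp add: hom0_zer idl_zer)
    qed
  next
    case (Suc m)
    show ?case
    proof
      fix z assume z: "z \<in> slit r"
      show "idl (hom (Suc m) (ssub (H 0 z) (A z)))"
      proof (rule idl_hom_by_ann)
        fix c assume "c \<in> ann (Suc m)"
        then have c: "annih (Suc m) c" by (rule ann_annih)
        define f where "f \<xi> = app (Suc m) c (H 0 \<xi>) - app (Suc m) c (A \<xi>)" for \<xi>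
        have fc: "f \<xi> = f a" if "\<xi> \<in> slit r" for \<xi>
          unfolding f_def by (rule limit_step[OF c Suc that])
        have H0h: "\<forall>w. (\<lambda>z2. H 0 z2 w) holomorphic_on ball 0 r" using H2 r by auto
        have Ah: "\<forall>w. (\<lambda>z. A z w) holomorphic_on ball 0 r" using A by auto
        have "isCont f 0"
          unfolding f_def using r
          by (intro continuous_intros app_isCont[OF H0h] app_isCont[OF Ah]) auto
        then have "f 0 = f a" by (rule const_on_slit_at0[OF r]) (rule fc)
        moreover have "f 0 = 0" using annih_ueq[OF c A0] by (simp add: f_def)
        ultimately have "f z = 0" using fc[OF z] by simp
        then show "app (Suc m) c (ssub (H 0 z) (A z)) = 0" by (simp add: f_def app_ssub)
      qed
    qed
  qed
  then show ?thesis by (simp add: ueq_def)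
qed

end


section \<open>From equations for L to equations for the holomorphic part\<close>

lemma sscal_smul_assoc: "X \<odot> sscal k Y = sscal k (X \<odot> Y)" by (rule smul_sscal_right)

lemma hat_core:
  assumes "ueq (sadd (X' \<odot> P) (X \<odot> sscal (1 / z) (lt g \<odot> P))) (Om \<odot> (X \<odot> P))"
    and inv: "P \<odot> P' = one"
  shows "ueq X' (ssub (Om \<odot> X) (sscal (1 / z) (X \<odot> lt g)))"
proof -
  have e1: "sadd (X' \<odot> P) (X \<odot> sscal (1 / z) (lt g \<odot> P)) = sadd X' (sscal (1 / z) (X \<odot> lt g)) \<odot> P"
    by (simp add: smul_sadd_left smul_sscal_left smul_sscal_right smul_assoc)
  have e2: "Om \<odot> (X \<odot> P) = (Om \<odot> X) \<odot> P" by (simp add: smul_assoc)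
  have "ueq (sadd X' (sscal (1 / z) (X \<odot> lt g))) (Om \<odot> X)"
    by (rule ueq_cancel_right[OF inv]) (use assms(1) e1 e2 in simp)
  then have "ueq (ssub (sadd X' (sscal (1 / z) (X \<odot> lt g))) (sscal (1 / z) (X \<odot> lt g)))
                 (ssub (Om \<odot> X) (sscal (1 / z) (X \<odot> lt g)))"
    by (rule ueq_ssub) simp
  moreover have "ssub (sadd X' (sscal (1 / z) (X \<odot> lt g))) (sscal (1 / z) (X \<odot> lt g)) = X'"
    by (rule ext) (simp add: sapp)
  ultimately show ?thesis by simp
qed

lemma hat_eq:
  assumes X: "sdiff X z X'" and z: "z \<notin> \<real>\<^sub>\<le>\<^sub>0"
    and eq: "ueq (sderiv (\<lambda>t. X t \<odot> zpow g t) z) (Om \<odot> (X z \<odot> zpow g z))"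
  shows "ueq X' (ssub (Om \<odot> X z) (sscal (1 / z) (X z \<odot> lt g)))"
proof -
  have "sderiv (\<lambda>t. X t \<odot> zpow g t) z = sadd (X' \<odot> zpow g z) (X z \<odot> sscal (1 / z) (lt g \<odot> zpow g z))"
    by (rule sdiff_sderiv[OF sdiff_smul[OF X zpow_sdiff[OF z]]])
  then show ?thesis using eq by (intro hat_core[OF _ zpow_inv(1)]) simp
qed

lemma ueq_sderiv:
  assumes S: "open S" "z \<in> S" and F: "sdiff F z F'" and G: "sdiff G z G'"
    and FG: "\<forall>t\<in>S. ueq (F t) (G t)"
  shows "ueq F' G'"
proof (rule ueq_by_ann)
  fix n c assume "c \<in> ann n"
  then have c: "annih n c" by (rule ann_annih)
  have dF: "((\<lambda>t. app n c (F t)) has_field_derivative app n c F') (at z)" by (rule app_sdiff[OF F])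
  have dG: "((\<lambda>t. app n c (G t)) has_field_derivative app n c G') (at z)" by (rule app_sdiff[OF G])
  have "((\<lambda>t. app n c (G t)) has_field_derivative app n c F') (at z)"
    by (rule has_field_derivative_transform_within_open[OF dF S]) (use FG annih_ueq[OF c] in auto)
  then show "app n c F' = app n c G'" using dG DERIV_unique by blast
qed

lemma sadd_zer_left[simp]: "sadd zer x = x" by (rule ext) (simp add: sapp)
lemma sadd_zer_right[simp]: "sadd x zer = x" by (rule ext) (simp add: sapp)

lemma sdiff_smul_const_right: "sdiff F z F' \<Longrightarrow> sdiff (\<lambda>t. F t \<odot> C) z (F' \<odot> C)"
proof -
  assume F: "sdiff F z F'"
  have "sdiff (\<lambda>t. F t \<odot> C) z (sadd (F' \<odot> C) (F z \<odot> zer))" by (rule sdiff_smul[OF F sdiff_const])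
  then show ?thesis by simp
qed
lemma sdiff_smul_const_left: "sdiff F z F' \<Longrightarrow> sdiff (\<lambda>t. C \<odot> F t) z (C \<odot> F')"
proof -
  assume F: "sdiff F z F'"
  have "sdiff (\<lambda>t. C \<odot> F t) z (sadd (zer \<odot> F z) (C \<odot> F'))" by (rule sdiff_smul[OF sdiff_const F])
  then show ?thesis by simp
qed

lemma eq_from_product:
  assumes S: "open S" "z \<in> S" and z: "z \<notin> \<real>\<^sub>\<le>\<^sub>0"
    and X: "\<forall>w. (\<lambda>t. X t w) holomorphic_on S"
    and Ld: "sdiff L z L'" and Leq: "ueq L' (Om \<odot> L z)"
    and LQ: "\<forall>t\<in>S. ueq (L t) (X t \<odot> zpow g t \<odot> Q)" and Q0: "Q [] \<noteq> 0"
  shows "ueq (sderiv X z) (ssub (Om \<odot> X z) (sscal (1 / z) (X z \<odot> lt g)))"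
proof -
  have Xd: "sdiff X z (sderiv X z)" by (rule holo_sdiff[OF X S])
  define Y' where "Y' = sadd (sderiv X z \<odot> zpow g z) (X z \<odot> sscal (1 / z) (lt g \<odot> zpow g z))"
  have Yd: "sdiff (\<lambda>t. X t \<odot> zpow g t) z Y'"
    unfolding Y'_def by (rule sdiff_smul[OF Xd zpow_sdiff[OF z]])
  have YQd: "sdiff (\<lambda>t. X t \<odot> zpow g t \<odot> Q) z (Y' \<odot> Q)"
    by (rule sdiff_smul_const_right[OF Yd])
  have "ueq L' (Y' \<odot> Q)" by (rule ueq_sderiv[OF S Ld YQd LQ])
  then have "ueq (Y' \<odot> Q) (Om \<odot> L z)" using Leq by (meson ueq_sym ueq_trans)
  also have "ueq (Om \<odot> L z) (Om \<odot> (X z \<odot> zpow g z \<odot> Q))" using LQ S by (intro ueq_smul_right) auto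
  also have "Om \<odot> (X z \<odot> zpow g z \<odot> Q) = (Om \<odot> (X z \<odot> zpow g z)) \<odot> Q" by (simp add: smul_assoc)
  finally have "ueq (Y' \<odot> Q) ((Om \<odot> (X z \<odot> zpow g z)) \<odot> Q)" .
  then have "ueq Y' (Om \<odot> (X z \<odot> zpow g z))" by (rule ueq_cancel_right[OF sinv_right[of Q, OF Q0]])
  then show ?thesis unfolding Y'_def by (rule hat_core[OF _ zpow_inv(1)])
qed

lemma holo_smul:
  assumes "\<forall>w. (\<lambda>t. F t w) holomorphic_on S" "\<forall>w. (\<lambda>t. G t w) holomorphic_on S"
  shows "\<forall>w. (\<lambda>t. (F t \<odot> G t) w) holomorphic_on S"
  using assms unfolding smul_def by (auto intro!: holomorphic_intros)

definition T1 :: term_list where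
  "T1 = [(\<lambda>p z. 1 / z, True, Z1), (\<lambda>p z. 1 / (1 - z), True, Z11), (\<lambda>p z. p / (1 - z * p), True, Z12),
         (\<lambda>p z. - (1 / z), False, Z1)]"

definition T2 :: term_list where
  "T2 = [(\<lambda>p z. 1 / z, True, Z2), (\<lambda>p z. 1 / (1 - z), True, Z22), (\<lambda>p z. p / (1 - p * z), True, Z12),
         (\<lambda>p z. - (1 / z), False, Z2)]"

lemma op_T1: "ssub (Om1 z1 z2 \<odot> X) (sscal (1 / z1) (X \<odot> lt Z1)) = op T1 z2 z1 X"
  by (rule ext) (simp add: T1_def op_def lmul_def Om1_def smul_sadd_left smul_sscal_left sapp algebra_simps)

lemma op_T2: "ssub (Om2 z1 z2 \<odot> X) (sscal (1 / z2) (X \<odot> lt Z2)) = op T2 z1 z2 X"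
  by (rule ext) (simp add: T2_def op_def lmul_def Om2_def smul_sadd_left smul_sscal_left sapp algebra_simps)

lemma op_T1s: "ssub (Om1s z \<odot> X) (sscal (1 / z) (X \<odot> lt Z1)) = op T1 0 z X"
  by (rule ext) (simp add: T1_def op_def lmul_def Om1s_def smul_sadd_left smul_sscal_left sapp algebra_simps)

lemma op_T2s: "ssub (Om2s z \<odot> X) (sscal (1 / z) (X \<odot> lt Z2)) = op T2 0 z X"
  by (rule ext) (simp add: T2_def op_def lmul_def Om2s_def smul_sadd_left smul_sscal_left sapp algebra_simps)

lemma sscal0: "sscal 0 x = zer" by (rule ext) (simp add: sapp)

lemma op_comm_left:
  assumes "\<forall>(q, b, g)\<in>set T. q p z = 0 \<or> commutes (lt h) (lt g)"
  shows "ueq (lt h \<odot> op T p z X) (op T p z (lt h \<odot> X))"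
  using assms
proof (induction T)
  case Nil then show ?case by (simp add: op_Nil)
next
  case (Cons x T)
  obtain q b g where x: "x = (q, b, g)" by (cases x) auto
  have IH: "ueq (lt h \<odot> op T p z X) (op T p z (lt h \<odot> X))" using Cons by auto
  have c: "q p z = 0 \<or> commutes (lt h) (lt g)" using Cons.prems x by auto
  have t: "ueq (sscal (q p z) (lt h \<odot> lmul b g X)) (sscal (q p z) (lmul b g (lt h \<odot> X)))"
  proof (cases "q p z = 0")
    case True then show ?thesis by (simp add: sscal0)
  next
    case False
    then have cm: "commutes (lt h) (lt g)" using c by simp
    show ?thesis
    proof (cases b)
      case True
      have "ueq (lt h \<odot> lt g \<odot> X) (lt g \<odot> lt h \<odot> X)" using cm by (simp add: commutes_def ueq_smul_left)
      then show ?thesis using True by (simp add: lmul_def smul_assoc ueq_sscal)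
    next
      case False then show ?thesis by (simp add: lmul_def smul_assoc)
    qed
  qed
  show ?case unfolding x op_Cons smul_sadd_right smul_sscal_right by (rule ueq_sadd[OF t IH])
qed

lemma op_smul_right:
  assumes "\<forall>(q, b, g)\<in>set T. b \<or> commutes (lt g) C"
  shows "ueq (op T p z X \<odot> C) (op T p z (X \<odot> C))"
  using assms
proof (induction T)
  case Nil then show ?case by (simp add: op_Nil)
next
  case (Cons x T)
  obtain q b g where x: "x = (q, b, g)" by (cases x) auto
  have IH: "ueq (op T p z X \<odot> C) (op T p z (X \<odot> C))" using Cons by auto
  have c: "b \<or> commutes (lt g) C" using Cons.prems x by auto
  have t: "ueq (lmul b g X \<odot> C) (lmul b g (X \<odot> C))"
  proof (cases b)
    case True then show ?thesis by (simp add: lmul_def smul_assoc)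
  next
    case False
    then have cm: "commutes (lt g) C" using c by simp
    have "ueq (X \<odot> (lt g \<odot> C)) (X \<odot> (C \<odot> lt g))"
      using cm by (intro ueq_smul_right) (simp add: commutes_def)
    then show ?thesis using False by (simp add: lmul_def smul_assoc)
  qed
  show ?case unfolding x op_Cons smul_sadd_left smul_sscal_left by (rule ueq_sadd[OF ueq_sscal[OF t] IH])
qed



lemma dom_facts:
  fixes x :: "complex \<times> complex"
  assumes "0 < \<rho>" "\<rho> \<le> 1" "x \<in> cball 0 (\<rho>/2) \<times> (ball 0 \<rho> - {0})"
  shows "snd x \<noteq> 0" "1 - snd x \<noteq> 0" "1 - fst x * snd x \<noteq> 0" "1 - snd x * fst x \<noteq> 0"
proof -
  have n1: "norm (snd x) < 1" using assms by auto
  have n2: "norm (fst x) < 1" using assms by auto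
  show "snd x \<noteq> 0" using assms by auto
  show "1 - snd x \<noteq> 0" using n1 by auto
  have "norm (fst x * snd x) < 1"
    using n1 n2 by (simp add: norm_mult) (metis mult_strict_mono' norm_ge_zero mult_1_right)
  then show "1 - fst x * snd x \<noteq> 0" by auto
  then show "1 - snd x * fst x \<noteq> 0" by (simp add: mult.commute)
qed

lemma T2_cont:
  assumes "0 < \<rho>" "\<rho> \<le> 1" "(q, b, g) \<in> set T2"
  shows "continuous_on (cball 0 (\<rho>/2) \<times> (ball 0 \<rho> - {0})) (\<lambda>p. q (fst p) (snd p))"
proof -
  note D = dom_facts[OF assms(1,2)]
  from assms(3) consider "q = (\<lambda>p z. 1 / z)" | "q = (\<lambda>p z. 1 / (1 - z))" | "q = (\<lambda>p z. p / (1 - z * p))"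
     | "q = (\<lambda>p z. p / (1 - p * z))" | "q = (\<lambda>p z. - (1 / z))"
    unfolding T2_def by auto
  then show ?thesis
  proof cases
    case 1 then show ?thesis by (simp only: 1) (intro continuous_intros; use D in blast)
  next
    case 2 then show ?thesis by (simp only: 2) (intro continuous_intros; use D in blast)
  next
    case 3 then show ?thesis by (simp only: 3) (intro continuous_intros; use D in blast)
  next
    case 4 then show ?thesis by (simp only: 4) (intro continuous_intros; use D in blast)
  next
    case 5 then show ?thesis by (simp only: 5) (intro continuous_intros; use D in blast)
  qed
qed

lemma T1_cont:
  assumes "0 < \<rho>" "\<rho> \<le> 1" "(q, b, g) \<in> set T1"
  shows "continuous_on (cball 0 (\<rho>/2) \<times> (ball 0 \<rho> - {0})) (\<lambda>p. q (fst p) (snd p))"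
proof -
  note D = dom_facts[OF assms(1,2)]
  from assms(3) consider "q = (\<lambda>p z. 1 / z)" | "q = (\<lambda>p z. 1 / (1 - z))" | "q = (\<lambda>p z. p / (1 - z * p))"
     | "q = (\<lambda>p z. p / (1 - p * z))" | "q = (\<lambda>p z. - (1 / z))"
    unfolding T1_def by auto
  then show ?thesis
  proof cases
    case 1 then show ?thesis by (simp only: 1) (intro continuous_intros; use D in blast)
  next
    case 2 then show ?thesis by (simp only: 2) (intro continuous_intros; use D in blast)
  next
    case 3 then show ?thesis by (simp only: 3) (intro continuous_intros; use D in blast)
  next
    case 4 then show ?thesis by (simp only: 4) (intro continuous_intros; use D in blast)
  next
    case 5 then show ?thesis by (simp only: 5) (intro continuous_intros; use D in blast)
  qed
qed

lemma sdiff_self: "sdiff F z F' \<Longrightarrow> sdiff F z (sderiv F z)"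
  using sdiff_sderiv by metis

lemma cZ2P1: "commutes (lt Z2) (zpow Z1 z)"
  by (rule commutes_zpow[OF commutes_sym[OF comm_Z1_Z2]])

locale setting =
  fixes H :: "complex \<Rightarrow> complex \<Rightarrow> ser"
    and A1 :: "complex \<Rightarrow> complex \<Rightarrow> ser" and A2 :: "complex \<Rightarrow> ser"
    and B2 :: "complex \<Rightarrow> complex \<Rightarrow> ser" and B1 :: "complex \<Rightarrow> ser"
    and \<rho> :: real
  assumes rho: "0 < \<rho>" "\<rho> \<le> 1"
  and H1: "\<And>w z2. z2 \<in> ball 0 \<rho> \<Longrightarrow> (\<lambda>z1. H z1 z2 w) holomorphic_on ball 0 \<rho>"
  and H2: "\<And>w z1. z1 \<in> ball 0 \<rho> \<Longrightarrow> (\<lambda>z2. H z1 z2 w) holomorphic_on ball 0 \<rho>"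
  and HNil: "\<And>z1 z2. z1 \<in> ball 0 \<rho> \<Longrightarrow> z2 \<in> ball 0 \<rho> \<Longrightarrow> H z1 z2 [] = 1"
  and H00: "ueq (H 0 0) one"
  and L1: "\<And>z1 z2. z1 \<in> slit \<rho> \<Longrightarrow> z2 \<in> slit \<rho> \<Longrightarrow>
             ueq (sderiv (\<lambda>t. Lof H t z2) z1) (Om1 z1 z2 \<odot> Lof H z1 z2)"
  and L2: "\<And>z1 z2. z1 \<in> slit \<rho> \<Longrightarrow> z2 \<in> slit \<rho> \<Longrightarrow>
             ueq (sderiv (\<lambda>t. Lof H z1 t) z2) (Om2 z1 z2 \<odot> Lof H z1 z2)"
  and A1h: "\<And>w p. p \<in> ball 0 \<rho> \<Longrightarrow> (\<lambda>z. A1 z p w) holomorphic_on ball 0 \<rho>"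
  and A1Nil: "\<And>z p. p \<in> ball 0 \<rho> \<Longrightarrow> z \<in> ball 0 \<rho> \<Longrightarrow> A1 z p [] = 1"
  and A10: "\<And>p. p \<in> ball 0 \<rho> \<Longrightarrow> ueq (A1 0 p) one"
  and A1e: "\<And>z p. p \<in> ball 0 \<rho> \<Longrightarrow> z \<in> slit \<rho> \<Longrightarrow>
             ueq (sderiv (\<lambda>t. A1 t p \<odot> zpow Z1 t) z) (Om1 z p \<odot> (A1 z p \<odot> zpow Z1 z))"
  and A2h: "\<And>w. (\<lambda>z. A2 z w) holomorphic_on ball 0 \<rho>"
  and A2Nil: "\<And>z. z \<in> ball 0 \<rho> \<Longrightarrow> A2 z [] = 1"
  and A20: "ueq (A2 0) one"
  and A2e: "\<And>z. z \<in> slit \<rho> \<Longrightarrow>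
             ueq (sderiv (\<lambda>t. A2 t \<odot> zpow Z2 t) z) (Om2s z \<odot> (A2 z \<odot> zpow Z2 z))"
  and B2h: "\<And>w p. p \<in> ball 0 \<rho> \<Longrightarrow> (\<lambda>z. B2 p z w) holomorphic_on ball 0 \<rho>"
  and B2Nil: "\<And>z p. p \<in> ball 0 \<rho> \<Longrightarrow> z \<in> ball 0 \<rho> \<Longrightarrow> B2 p z [] = 1"
  and B20: "\<And>p. p \<in> ball 0 \<rho> \<Longrightarrow> ueq (B2 p 0) one"
  and B2e: "\<And>z p. p \<in> ball 0 \<rho> \<Longrightarrow> z \<in> slit \<rho> \<Longrightarrow>
             ueq (sderiv (\<lambda>t. B2 p t \<odot> zpow Z2 t) z) (Om2 p z \<odot> (B2 p z \<odot> zpow Z2 z))"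
  and B1h: "\<And>w. (\<lambda>z. B1 z w) holomorphic_on ball 0 \<rho>"
  and B1Nil: "\<And>z. z \<in> ball 0 \<rho> \<Longrightarrow> B1 z [] = 1"
  and B10: "ueq (B1 0) one"
  and B1e: "\<And>z. z \<in> slit \<rho> \<Longrightarrow>
             ueq (sderiv (\<lambda>t. B1 t \<odot> zpow Z1 t) z) (Om1s z \<odot> (B1 z \<odot> zpow Z1 z))"
begin

lemma sb: "z \<in> slit \<rho> \<Longrightarrow> z \<in> ball 0 \<rho>" using slit_ball by blast
lemma zb: "0 \<in> ball (0::complex) \<rho>" using rho by simp

lemma H1s: "z2 \<in> ball 0 \<rho> \<Longrightarrow> \<forall>w. (\<lambda>z1. H z1 z2 w) holomorphic_on slit \<rho>"
  using H1 slit_ball holomorphic_on_subset by blast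
lemma H2s: "z1 \<in> ball 0 \<rho> \<Longrightarrow> \<forall>w. (\<lambda>z2. H z1 z2 w) holomorphic_on slit \<rho>"
  using H2 slit_ball holomorphic_on_subset by blast

lemma HeqZ1:
  assumes z1: "z1 \<in> slit \<rho>" and z2: "z2 \<in> slit \<rho>"
  shows "ueq (sderiv (\<lambda>t. H t z2) z1) (op T1 z2 z1 (H z1 z2))"
proof -
  have Ld: "sdiff (\<lambda>t. Lof H t z2) z1 (sderiv (\<lambda>t. Lof H t z2) z1)"
    unfolding Lof_def
    by (rule sdiff_self, rule sdiff_smul_const_right, rule sdiff_smul[OF holo_sdiff[OF H1s[OF sb[OF z2]] slit_open z1] zpow_sdiff[OF slit_nonpos[OF z1]]])
  have "ueq (sderiv (\<lambda>t. H t z2) z1) (ssub (Om1 z1 z2 \<odot> H z1 z2) (sscal (1 / z1) (H z1 z2 \<odot> lt Z1)))"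
    by (rule eq_from_product[OF slit_open z1 slit_nonpos[OF z1] H1s[OF sb[OF z2]] Ld L1[OF z1 z2], where Q="zpow Z2 z2"])
       (simp_all add: Lof_def zpow_Nil)
  then show ?thesis by (simp add: op_T1)
qed

lemma HeqZ2:
  assumes z1: "z1 \<in> slit \<rho>" and z2: "z2 \<in> slit \<rho>"
  shows "ueq (sderiv (H z1) z2) (op T2 z1 z2 (H z1 z2))"
proof -
  define P1 where "P1 = zpow Z1 z1"
  have Xh: "\<forall>w. (\<lambda>t. (H z1 t \<odot> P1) w) holomorphic_on slit \<rho>"
    by (rule holo_smul[OF H2s[OF sb[OF z1]]]) simp
  have Xd: "sdiff (\<lambda>t. H z1 t \<odot> P1) z2 (sderiv (H z1) z2 \<odot> P1)"
    by (rule sdiff_smul_const_right[OF holo_sdiff[OF H2s[OF sb[OF z1]] slit_open z2, unfolded eta_contract_eq]])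
  have Ld: "sdiff (\<lambda>t. Lof H z1 t) z2 (sderiv (\<lambda>t. Lof H z1 t) z2)"
    unfolding Lof_def P1_def[symmetric]
    by (rule sdiff_self, rule sdiff_smul[OF Xd zpow_sdiff[OF slit_nonpos[OF z2]]])
  have e1: "ueq (sderiv (\<lambda>t. H z1 t \<odot> P1) z2) (ssub (Om2 z1 z2 \<odot> (H z1 z2 \<odot> P1)) (sscal (1 / z2) ((H z1 z2 \<odot> P1) \<odot> lt Z2)))"
    by (rule eq_from_product[OF slit_open z2 slit_nonpos[OF z2] Xh Ld L2[OF z1 z2], where Q=one])
       (simp_all add: Lof_def P1_def one_def[symmetric], simp add: one_def)
  have e2: "sderiv (\<lambda>t. H z1 t \<odot> P1) z2 = sderiv (H z1) z2 \<odot> P1" by (rule sdiff_sderiv[OF Xd])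
  have e3: "ueq (ssub (Om2 z1 z2 \<odot> (H z1 z2 \<odot> P1)) (sscal (1 / z2) ((H z1 z2 \<odot> P1) \<odot> lt Z2)))
                     (ssub (Om2 z1 z2 \<odot> H z1 z2) (sscal (1 / z2) (H z1 z2 \<odot> lt Z2)) \<odot> P1)"
  proof -
    have "ueq (H z1 z2 \<odot> (P1 \<odot> lt Z2)) (H z1 z2 \<odot> (lt Z2 \<odot> P1))"
      using cZ2P1[of z1] by (intro ueq_smul_right) (simp add: commutes_def P1_def ueq_sym)
    then show ?thesis
      by (simp add: smul_ssub_left smul_sscal_left smul_assoc ueq_ssub ueq_sscal)
  qed
  have "ueq (sderiv (H z1) z2 \<odot> P1) (ssub (Om2 z1 z2 \<odot> H z1 z2) (sscal (1 / z2) (H z1 z2 \<odot> lt Z2)) \<odot> P1)"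
    using ueq_trans[OF e1 e3] e2 by simp
  then have "ueq (sderiv (H z1) z2) (ssub (Om2 z1 z2 \<odot> H z1 z2) (sscal (1 / z2) (H z1 z2 \<odot> lt Z2)))"
    unfolding P1_def by (rule ueq_cancel_right[OF zpow_inv(1)])
  then show ?thesis by (simp add: op_T2)
qed

lemma A1eq:
  assumes p: "p \<in> ball 0 \<rho>" and z: "z \<in> slit \<rho>"
  shows "ueq (sderiv (\<lambda>t. A1 t p) z) (op T1 p z (A1 z p))"
proof -
  have "ueq (sderiv (\<lambda>t. A1 t p) z) (ssub (Om1 z p \<odot> A1 z p) (sscal (1 / z) (A1 z p \<odot> lt Z1)))"
    using A1h[OF p] by (intro hat_eq[OF holo_sdiff[OF _ open_ball sb[OF z]] slit_nonpos[OF z] A1e[OF p z]]) auto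
  then show ?thesis by (simp add: op_T1)
qed

lemma A2eq:
  assumes z: "z \<in> slit \<rho>"
  shows "ueq (sderiv A2 z) (op T2 0 z (A2 z))"
proof -
  have "ueq (sderiv (\<lambda>t. A2 t) z) (ssub (Om2s z \<odot> A2 z) (sscal (1 / z) (A2 z \<odot> lt Z2)))"
    using A2h by (intro hat_eq[OF holo_sdiff[OF _ open_ball sb[OF z]] slit_nonpos[OF z] A2e[OF z]]) auto
  then show ?thesis by (simp add: op_T2s)
qed

lemma B2eq:
  assumes p: "p \<in> ball 0 \<rho>" and z: "z \<in> slit \<rho>"
  shows "ueq (sderiv (B2 p) z) (op T2 p z (B2 p z))"
proof -
  have "ueq (sderiv (\<lambda>t. B2 p t) z) (ssub (Om2 p z \<odot> B2 p z) (sscal (1 / z) (B2 p z \<odot> lt Z2)))"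
    using B2h[OF p] by (intro hat_eq[OF holo_sdiff[OF _ open_ball sb[OF z]] slit_nonpos[OF z] B2e[OF p z]]) auto
  then show ?thesis by (simp add: op_T2)
qed

lemma B1eq:
  assumes z: "z \<in> slit \<rho>"
  shows "ueq (sderiv B1 z) (op T1 0 z (B1 z))"
proof -
  have "ueq (sderiv (\<lambda>t. B1 t) z) (ssub (Om1s z \<odot> B1 z) (sscal (1 / z) (B1 z \<odot> lt Z1)))"
    using B1h by (intro hat_eq[OF holo_sdiff[OF _ open_ball sb[OF z]] slit_nonpos[OF z] B1e[OF z]]) auto
  then show ?thesis by (simp add: op_T1s)
qed

end


context setting
begin

lemma cA2:
  assumes z: "z \<in> slit \<rho>"
  shows "commutes (lt Z1) (A2 z)"
proof -
  have A2h': "\<forall>w. (\<lambda>z. A2 z w) holomorphic_on ball 0 \<rho>" using A2h by blast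
  have condL: "\<forall>(q, b, g)\<in>set T2. q 0 z = 0 \<or> commutes (lt Z1) (lt g)"
    by (auto simp: T2_def comm_Z1_Z2 comm_Z1_Z22)
  have condR: "\<forall>(q, b, g)\<in>set T2. b \<or> commutes (lt g) (lt Z1)"
    by (auto simp: T2_def commutes_sym[OF comm_Z1_Z2])
  have "\<forall>z\<in>slit \<rho>. ueq (lt Z1 \<odot> A2 z) (A2 z \<odot> lt Z1)"
  proof (rule uniq[OF rho(1), where p=0 and T=T2])
    show "\<forall>w. (\<lambda>z. (lt Z1 \<odot> A2 z) w) holomorphic_on ball 0 \<rho>" by (rule holo_smul[OF _ A2h']) simp
    show "\<forall>w. (\<lambda>z. (A2 z \<odot> lt Z1) w) holomorphic_on ball 0 \<rho>" by (rule holo_smul[OF A2h']) simp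
    show "ueq (lt Z1 \<odot> A2 0) (A2 0 \<odot> lt Z1)"
    proof -
      have "ueq (lt Z1 \<odot> A2 0) (lt Z1 \<odot> one)" by (rule ueq_smul_right[OF A20])
      moreover have "ueq (one \<odot> lt Z1) (A2 0 \<odot> lt Z1)" by (rule ueq_smul_left[OF ueq_sym[OF A20]])
      ultimately show ?thesis by (metis one_smul smul_one ueq_trans)
    qed
    show "\<forall>z\<in>slit \<rho>. ueq (sderiv (\<lambda>z. lt Z1 \<odot> A2 z) z) (op T2 0 z (lt Z1 \<odot> A2 z))"
    proof
      fix z assume z: "z \<in> slit \<rho>"
      have "sderiv (\<lambda>z. lt Z1 \<odot> A2 z) z = lt Z1 \<odot> sderiv A2 z"
        by (rule sdiff_sderiv[OF sdiff_smul_const_left[OF holo_sdiff[OF A2h' open_ball sb[OF z], unfolded eta_contract_eq]]])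
      also have "ueq \<dots> (lt Z1 \<odot> op T2 0 z (A2 z))" by (rule ueq_smul_right[OF A2eq[OF z]])
      also have "ueq \<dots> (op T2 0 z (lt Z1 \<odot> A2 z))"
        by (rule op_comm_left) (auto simp: T2_def comm_Z1_Z2 comm_Z1_Z22)
      finally show "ueq (sderiv (\<lambda>z. lt Z1 \<odot> A2 z) z) (op T2 0 z (lt Z1 \<odot> A2 z))" .
    qed
    show "\<forall>z\<in>slit \<rho>. ueq (sderiv (\<lambda>z. A2 z \<odot> lt Z1) z) (op T2 0 z (A2 z \<odot> lt Z1))"
    proof
      fix z assume z: "z \<in> slit \<rho>"
      have "sderiv (\<lambda>z. A2 z \<odot> lt Z1) z = sderiv A2 z \<odot> lt Z1"
        by (rule sdiff_sderiv[OF sdiff_smul_const_right[OF holo_sdiff[OF A2h' open_ball sb[OF z], unfolded eta_contract_eq]]])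
      also have "ueq \<dots> (op T2 0 z (A2 z) \<odot> lt Z1)" by (rule ueq_smul_left[OF A2eq[OF z]])
      also have "ueq \<dots> (op T2 0 z (A2 z \<odot> lt Z1))" by (rule op_smul_right[OF condR])
      finally show "ueq (sderiv (\<lambda>z. A2 z \<odot> lt Z1) z) (op T2 0 z (A2 z \<odot> lt Z1))" .
    qed
  qed
  then show ?thesis using z by (simp add: commutes_def)
qed

lemma cB1:
  assumes z: "z \<in> slit \<rho>"
  shows "commutes (lt Z2) (B1 z)"
proof -
  have B1h': "\<forall>w. (\<lambda>z. B1 z w) holomorphic_on ball 0 \<rho>" using B1h by blast
  have condR: "\<forall>(q, b, g)\<in>set T1. b \<or> commutes (lt g) (lt Z2)"
    by (auto simp: T1_def comm_Z1_Z2)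
  have "\<forall>z\<in>slit \<rho>. ueq (lt Z2 \<odot> B1 z) (B1 z \<odot> lt Z2)"
  proof (rule uniq[OF rho(1), where p=0 and T=T1])
    show "\<forall>w. (\<lambda>z. (lt Z2 \<odot> B1 z) w) holomorphic_on ball 0 \<rho>" by (rule holo_smul[OF _ B1h']) simp
    show "\<forall>w. (\<lambda>z. (B1 z \<odot> lt Z2) w) holomorphic_on ball 0 \<rho>" by (rule holo_smul[OF B1h']) simp
    show "ueq (lt Z2 \<odot> B1 0) (B1 0 \<odot> lt Z2)"
    proof -
      have "ueq (lt Z2 \<odot> B1 0) (lt Z2 \<odot> one)" by (rule ueq_smul_right[OF B10])
      moreover have "ueq (one \<odot> lt Z2) (B1 0 \<odot> lt Z2)" by (rule ueq_smul_left[OF ueq_sym[OF B10]])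
      ultimately show ?thesis by (metis one_smul smul_one ueq_trans)
    qed
    show "\<forall>z\<in>slit \<rho>. ueq (sderiv (\<lambda>z. lt Z2 \<odot> B1 z) z) (op T1 0 z (lt Z2 \<odot> B1 z))"
    proof
      fix z assume z: "z \<in> slit \<rho>"
      have "sderiv (\<lambda>z. lt Z2 \<odot> B1 z) z = lt Z2 \<odot> sderiv B1 z"
        by (rule sdiff_sderiv[OF sdiff_smul_const_left[OF holo_sdiff[OF B1h' open_ball sb[OF z], unfolded eta_contract_eq]]])
      also have "ueq \<dots> (lt Z2 \<odot> op T1 0 z (B1 z))" by (rule ueq_smul_right[OF B1eq[OF z]])
      also have "ueq \<dots> (op T1 0 z (lt Z2 \<odot> B1 z))"
        by (rule op_comm_left) (auto simp: T1_def commutes_sym[OF comm_Z1_Z2] commutes_sym[OF comm_Z11_Z2])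
      finally show "ueq (sderiv (\<lambda>z. lt Z2 \<odot> B1 z) z) (op T1 0 z (lt Z2 \<odot> B1 z))" .
    qed
    show "\<forall>z\<in>slit \<rho>. ueq (sderiv (\<lambda>z. B1 z \<odot> lt Z2) z) (op T1 0 z (B1 z \<odot> lt Z2))"
    proof
      fix z assume z: "z \<in> slit \<rho>"
      have "sderiv (\<lambda>z. B1 z \<odot> lt Z2) z = sderiv B1 z \<odot> lt Z2"
        by (rule sdiff_sderiv[OF sdiff_smul_const_right[OF holo_sdiff[OF B1h' open_ball sb[OF z], unfolded eta_contract_eq]]])
      also have "ueq \<dots> (op T1 0 z (B1 z) \<odot> lt Z2)" by (rule ueq_smul_left[OF B1eq[OF z]])
      also have "ueq \<dots> (op T1 0 z (B1 z \<odot> lt Z2))" by (rule op_smul_right[OF condR])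
      finally show "ueq (sderiv (\<lambda>z. B1 z \<odot> lt Z2) z) (op T1 0 z (B1 z \<odot> lt Z2))" .
    qed
  qed
  then show ?thesis using z by (simp add: commutes_def)
qed

end


context setting
begin

lemma H0A2: "\<forall>z\<in>slit \<rho>. ueq (H 0 z) (A2 z)"
proof -
  interpret L: limsetup \<rho> H T2 A2
  proof
    show "0 < \<rho>" by (rule rho(1))
    show "\<And>w z2. z2 \<in> ball 0 \<rho> \<Longrightarrow> (\<lambda>z1. H z1 z2 w) holomorphic_on ball 0 \<rho>" by (rule H1)
    show "\<And>w z1. z1 \<in> ball 0 \<rho> \<Longrightarrow> (\<lambda>z2. H z1 z2 w) holomorphic_on ball 0 \<rho>" by (rule H2)
    show "\<And>z1 z2. z1 \<in> ball 0 \<rho> \<Longrightarrow> z2 \<in> ball 0 \<rho> \<Longrightarrow> H z1 z2 [] = 1" by (rule HNil)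
    show "\<And>z1 z2. z1 \<in> slit \<rho> \<Longrightarrow> z2 \<in> slit \<rho> \<Longrightarrow> ueq (sderiv (H z1) z2) (op T2 z1 z2 (H z1 z2))"
      by (rule HeqZ2)
    show "\<And>q b g. (q, b, g) \<in> set T2 \<Longrightarrow> continuous_on (cball 0 (\<rho>/2) \<times> (ball 0 \<rho> - {0})) (\<lambda>p. q (fst p) (snd p))"
      by (rule T2_cont[OF rho])
    show "\<And>w. (\<lambda>z. A2 z w) holomorphic_on ball 0 \<rho>" by (rule A2h)
    show "\<And>z. z \<in> ball 0 \<rho> \<Longrightarrow> A2 z [] = 1" by (rule A2Nil)
    show "ueq (A2 0) (H 0 0)" by (rule ueq_trans[OF A20 ueq_sym[OF H00]])
    show "\<And>z. z \<in> slit \<rho> \<Longrightarrow> ueq (sderiv A2 z) (op T2 0 z (A2 z))" by (rule A2eq)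
  qed
  show ?thesis by (rule L.H0_eq_A)
qed

lemma H0B1: "\<forall>z\<in>slit \<rho>. ueq (H z 0) (B1 z)"
proof -
  interpret L: limsetup \<rho> "\<lambda>x y. H y x" T1 B1
  proof
    show "0 < \<rho>" by (rule rho(1))
    show "\<And>w z2. z2 \<in> ball 0 \<rho> \<Longrightarrow> (\<lambda>z1. H z2 z1 w) holomorphic_on ball 0 \<rho>" by (rule H2)
    show "\<And>w z1. z1 \<in> ball 0 \<rho> \<Longrightarrow> (\<lambda>z2. H z2 z1 w) holomorphic_on ball 0 \<rho>" by (rule H1)
    show "\<And>z1 z2. z1 \<in> ball 0 \<rho> \<Longrightarrow> z2 \<in> ball 0 \<rho> \<Longrightarrow> H z2 z1 [] = 1" by (rule HNil)
    show "\<And>z1 z2. z1 \<in> slit \<rho> \<Longrightarrow> z2 \<in> slit \<rho> \<Longrightarrow> ueq (sderiv (\<lambda>y. H y z1) z2) (op T1 z1 z2 (H z2 z1))"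
      by (rule HeqZ1)
    show "\<And>q b g. (q, b, g) \<in> set T1 \<Longrightarrow> continuous_on (cball 0 (\<rho>/2) \<times> (ball 0 \<rho> - {0})) (\<lambda>p. q (fst p) (snd p))"
      by (rule T1_cont[OF rho])
    show "\<And>w. (\<lambda>z. B1 z w) holomorphic_on ball 0 \<rho>" by (rule B1h)
    show "\<And>z. z \<in> ball 0 \<rho> \<Longrightarrow> B1 z [] = 1" by (rule B1Nil)
    show "ueq (B1 0) (H 0 0)" by (rule ueq_trans[OF B10 ueq_sym[OF H00]])
    show "\<And>z. z \<in> slit \<rho> \<Longrightarrow> ueq (sderiv B1 z) (op T1 0 z (B1 z))" by (rule B1eq)
  qed
  show ?thesis using L.H0_eq_A by simp
qed

lemma HA:
  assumes z1: "z1 \<in> slit \<rho>" and z2: "z2 \<in> slit \<rho>"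
  shows "ueq (H z1 z2) (A1 z1 z2 \<odot> A2 z2)"
proof -
  have z2b: "z2 \<in> ball 0 \<rho>" by (rule sb[OF z2])
  have A1h': "\<forall>w. (\<lambda>z. A1 z z2 w) holomorphic_on ball 0 \<rho>" using A1h[OF z2b] by blast
  have condR: "\<forall>(q, b, g)\<in>set T1. b \<or> commutes (lt g) (A2 z2)"
    using cA2[OF z2] by (auto simp: T1_def)
  have "\<forall>z\<in>slit \<rho>. ueq (H z z2) (A1 z z2 \<odot> A2 z2)"
  proof (rule uniq[OF rho(1), where p=z2 and T=T1])
    show "\<forall>w. (\<lambda>z. H z z2 w) holomorphic_on ball 0 \<rho>" using H1[OF z2b] by blast
    show "\<forall>w. (\<lambda>z. (A1 z z2 \<odot> A2 z2) w) holomorphic_on ball 0 \<rho>" by (rule holo_smul[OF A1h']) simp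
    show "ueq (H 0 z2) (A1 0 z2 \<odot> A2 z2)"
    proof -
      have "ueq (A1 0 z2 \<odot> A2 z2) (one \<odot> A2 z2)" by (rule ueq_smul_left[OF A10[OF z2b]])
      then show ?thesis using H0A2 z2 by (metis one_smul ueq_sym ueq_trans)
    qed
    show "\<forall>z\<in>slit \<rho>. ueq (sderiv (\<lambda>z. H z z2) z) (op T1 z2 z (H z z2))"
      using HeqZ1 z2 by blast
    show "\<forall>z\<in>slit \<rho>. ueq (sderiv (\<lambda>z. A1 z z2 \<odot> A2 z2) z) (op T1 z2 z (A1 z z2 \<odot> A2 z2))"
    proof
      fix z assume z: "z \<in> slit \<rho>"
      have "sderiv (\<lambda>z. A1 z z2 \<odot> A2 z2) z = sderiv (\<lambda>t. A1 t z2) z \<odot> A2 z2"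
        by (rule sdiff_sderiv[OF sdiff_smul_const_right[OF holo_sdiff[OF A1h' open_ball sb[OF z]]]])
      also have "ueq \<dots> (op T1 z2 z (A1 z z2) \<odot> A2 z2)" by (rule ueq_smul_left[OF A1eq[OF z2b z]])
      also have "ueq \<dots> (op T1 z2 z (A1 z z2 \<odot> A2 z2))" by (rule op_smul_right[OF condR])
      finally show "ueq (sderiv (\<lambda>z. A1 z z2 \<odot> A2 z2) z) (op T1 z2 z (A1 z z2 \<odot> A2 z2))" .
    qed
  qed
  then show ?thesis using z1 by blast
qed

lemma HB:
  assumes z1: "z1 \<in> slit \<rho>" and z2: "z2 \<in> slit \<rho>"
  shows "ueq (H z1 z2) (B2 z1 z2 \<odot> B1 z1)"
proof -
  have z1b: "z1 \<in> ball 0 \<rho>" by (rule sb[OF z1])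
  have B2h': "\<forall>w. (\<lambda>z. B2 z1 z w) holomorphic_on ball 0 \<rho>" using B2h[OF z1b] by blast
  have condR: "\<forall>(q, b, g)\<in>set T2. b \<or> commutes (lt g) (B1 z1)"
    using cB1[OF z1] by (auto simp: T2_def)
  have "\<forall>z\<in>slit \<rho>. ueq (H z1 z) (B2 z1 z \<odot> B1 z1)"
  proof (rule uniq[OF rho(1), where p=z1 and T=T2])
    show "\<forall>w. (\<lambda>z. H z1 z w) holomorphic_on ball 0 \<rho>" using H2[OF z1b] by blast
    show "\<forall>w. (\<lambda>z. (B2 z1 z \<odot> B1 z1) w) holomorphic_on ball 0 \<rho>" by (rule holo_smul[OF B2h']) simp
    show "ueq (H z1 0) (B2 z1 0 \<odot> B1 z1)"
    proof -
      have "ueq (B2 z1 0 \<odot> B1 z1) (one \<odot> B1 z1)" by (rule ueq_smul_left[OF B20[OF z1b]])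
      then show ?thesis using H0B1 z1 by (metis one_smul ueq_sym ueq_trans)
    qed
    show "\<forall>z\<in>slit \<rho>. ueq (sderiv (\<lambda>z. H z1 z) z) (op T2 z1 z (H z1 z))"
      using HeqZ2 z1 by simp
    show "\<forall>z\<in>slit \<rho>. ueq (sderiv (\<lambda>z. B2 z1 z \<odot> B1 z1) z) (op T2 z1 z (B2 z1 z \<odot> B1 z1))"
    proof
      fix z assume z: "z \<in> slit \<rho>"
      have "sderiv (\<lambda>z. B2 z1 z \<odot> B1 z1) z = sderiv (B2 z1) z \<odot> B1 z1"
        by (rule sdiff_sderiv[OF sdiff_smul_const_right[OF holo_sdiff[OF B2h' open_ball sb[OF z], unfolded eta_contract_eq]]])
      also have "ueq \<dots> (op T2 z1 z (B2 z1 z) \<odot> B1 z1)" by (rule ueq_smul_left[OF B2eq[OF z1b z]])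
      also have "ueq \<dots> (op T2 z1 z (B2 z1 z \<odot> B1 z1))" by (rule op_smul_right[OF condR])
      finally show "ueq (sderiv (\<lambda>z. B2 z1 z \<odot> B1 z1) z) (op T2 z1 z (B2 z1 z \<odot> B1 z1))" .
    qed
  qed
  then show ?thesis using z2 by blast
qed

lemma partI:
  assumes z1: "z1 \<in> slit \<rho>" and z2: "z2 \<in> slit \<rho>"
  shows "ueq (Lof H z1 z2) (A1 z1 z2 \<odot> A2 z2 \<odot> zpow Z1 z1 \<odot> zpow Z2 z2) \<and>
       ueq (Lof H z1 z2) ((A1 z1 z2 \<odot> zpow Z1 z1) \<odot> (A2 z2 \<odot> zpow Z2 z2)) \<and>
       ueq (Lof H z1 z2) (B2 z1 z2 \<odot> B1 z1 \<odot> zpow Z1 z1 \<odot> zpow Z2 z2) \<and>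
       ueq (Lof H z1 z2) ((B2 z1 z2 \<odot> zpow Z2 z2) \<odot> (B1 z1 \<odot> zpow Z1 z1))"
proof -
  define P1 where "P1 = zpow Z1 z1"
  define P2 where "P2 = zpow Z2 z2"
  have e1: "ueq (Lof H z1 z2) (A1 z1 z2 \<odot> A2 z2 \<odot> P1 \<odot> P2)"
    unfolding Lof_def P1_def P2_def by (intro ueq_smul_left HA[OF z1 z2])
  have cAP: "ueq (A2 z2 \<odot> P1) (P1 \<odot> A2 z2)"
    using commutes_zpow[OF commutes_sym[OF cA2[OF z2]]] by (simp add: commutes_def P1_def)
  have e2: "ueq (A1 z1 z2 \<odot> A2 z2 \<odot> P1 \<odot> P2) ((A1 z1 z2 \<odot> P1) \<odot> (A2 z2 \<odot> P2))"
  proof -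
    have "ueq (A1 z1 z2 \<odot> (A2 z2 \<odot> P1) \<odot> P2) (A1 z1 z2 \<odot> (P1 \<odot> A2 z2) \<odot> P2)"
      by (intro ueq_smul_left ueq_smul_right cAP)
    then show ?thesis by (simp add: smul_assoc)
  qed
  have e3: "ueq (Lof H z1 z2) (B2 z1 z2 \<odot> B1 z1 \<odot> P1 \<odot> P2)"
    unfolding Lof_def P1_def P2_def by (intro ueq_smul_left HB[OF z1 z2])
  have cBP: "ueq (B1 z1 \<odot> P2) (P2 \<odot> B1 z1)"
    using commutes_zpow[OF commutes_sym[OF cB1[OF z1]]] by (simp add: commutes_def P2_def)
  have cPP: "ueq (P1 \<odot> P2) (P2 \<odot> P1)"
    using commutes_zpow[OF commutes_sym[OF cZ2P1[of z1]]] by (simp add: commutes_def P1_def P2_def)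
  have e4: "ueq (B2 z1 z2 \<odot> B1 z1 \<odot> P1 \<odot> P2) ((B2 z1 z2 \<odot> P2) \<odot> (B1 z1 \<odot> P1))"
  proof -
    have "ueq (B2 z1 z2 \<odot> B1 z1 \<odot> (P1 \<odot> P2)) (B2 z1 z2 \<odot> B1 z1 \<odot> (P2 \<odot> P1))"
      by (intro ueq_smul_right cPP)
    moreover have "ueq (B2 z1 z2 \<odot> (B1 z1 \<odot> P2) \<odot> P1) (B2 z1 z2 \<odot> (P2 \<odot> B1 z1) \<odot> P1)"
      by (intro ueq_smul_left ueq_smul_right cBP)
    ultimately show ?thesis by (simp add: smul_assoc) (metis ueq_trans)
  qed
  show ?thesis unfolding P1_def[symmetric] P2_def[symmetric]
    using e1 e2 e3 e4 ueq_trans by blast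
qed

end


lemma slit_min: "z \<in> slit (min a b) \<Longrightarrow> z \<in> slit a \<and> z \<in> slit b"
  using slit_mono[of "min a b" a] slit_mono[of "min a b" b] by auto

lemma ball_min: "z \<in> ball 0 (min a b) \<Longrightarrow> z \<in> ball 0 a \<and> z \<in> ball 0 b"
  by auto

lemma left_inv_AP:
  assumes "A [] \<noteq> 0"
  shows "(zp g (- Ln z) \<odot> sinv A) \<odot> (A \<odot> zpow g z) = one"
proof -
  have "(zp g (- Ln z) \<odot> sinv A) \<odot> (A \<odot> zpow g z) = zp g (- Ln z) \<odot> ((sinv A \<odot> A) \<odot> zpow g z)"
    by (simp add: smul_assoc)
  also have "\<dots> = one" using sinv_left[of A, OF assms] zpow_inv(2) by simp
  finally show ?thesis .
qed

context setting
begin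

lemma Ld1:
  assumes z1: "z1 \<in> slit \<rho>" and z2: "z2 \<in> ball 0 \<rho>"
  shows "sdiff (\<lambda>t. Lof H t z2) z1 (sderiv (\<lambda>t. Lof H t z2) z1)"
  unfolding Lof_def
  by (rule sdiff_self, rule sdiff_smul_const_right, rule sdiff_smul[OF holo_sdiff[OF H1s[OF z2] slit_open z1] zpow_sdiff[OF slit_nonpos[OF z1]]])

lemma Ld2:
  assumes z1: "z1 \<in> ball 0 \<rho>" and z2: "z2 \<in> slit \<rho>"
  shows "sdiff (\<lambda>t. Lof H z1 t) z2 (sderiv (\<lambda>t. Lof H z1 t) z2)"
  unfolding Lof_def
  by (rule sdiff_self, rule sdiff_smul[OF sdiff_smul_const_right[OF holo_sdiff[OF H2s[OF z1] slit_open z2]] zpow_sdiff[OF slit_nonpos[OF z2]]])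

lemma Lof_Nil: "z1 \<in> ball 0 \<rho> \<Longrightarrow> z2 \<in> ball 0 \<rho> \<Longrightarrow> Lof H z1 z2 [] = 1"
  by (simp add: Lof_def zpow_Nil HNil)

lemma partIIa:
  fixes G1 :: "complex \<Rightarrow> complex \<Rightarrow> ser" and G2 :: "complex \<Rightarrow> ser"
  assumes hG1: "\<exists>r>0. (\<forall>w. \<forall>z2\<in>ball 0 r. (\<lambda>z1. G1 z1 z2 w) holomorphic_on ball 0 r) \<and>
              (\<forall>w. \<forall>z1\<in>ball 0 r. (\<lambda>z2. G1 z1 z2 w) holomorphic_on ball 0 r) \<and>
              (\<forall>z2\<in>ball 0 r. ueq (G1 0 z2) one) \<and>
              (\<forall>z1\<in>slit r. \<forall>z2\<in>ball 0 r. in_sub {Z1, Z11, Z12} (G1 z1 z2 \<odot> zpow Z1 z1))"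
    and hG2: "\<exists>r>0. (\<forall>w. (\<lambda>z2. G2 z2 w) holomorphic_on ball 0 r) \<and>
              ueq (G2 0) one \<and>
              (\<forall>z2\<in>slit r. in_sub {Z2, Z22} (G2 z2 \<odot> zpow Z2 z2))"
    and hLG: "\<exists>r>0. \<forall>z1\<in>slit r. \<forall>z2\<in>slit r.
              ueq (Lof H z1 z2) ((G1 z1 z2 \<odot> zpow Z1 z1) \<odot> (G2 z2 \<odot> zpow Z2 z2))"
  shows "\<exists>r>0. \<forall>z1\<in>slit r. \<forall>z2\<in>slit r.
              ueq (G1 z1 z2 \<odot> zpow Z1 z1) (A1 z1 z2 \<odot> zpow Z1 z1) \<and>
              ueq (G2 z2 \<odot> zpow Z2 z2) (A2 z2 \<odot> zpow Z2 z2)"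
proof -
  obtain r1 where r1: "r1 > 0" "\<forall>w. \<forall>z2\<in>ball 0 r1. (\<lambda>z1. G1 z1 z2 w) holomorphic_on ball 0 r1"
      "\<forall>z2\<in>ball 0 r1. ueq (G1 0 z2) one" using hG1 by blast
  obtain r3 where r3: "r3 > 0" "\<forall>z1\<in>slit r3. \<forall>z2\<in>slit r3.
              ueq (Lof H z1 z2) ((G1 z1 z2 \<odot> zpow Z1 z1) \<odot> (G2 z2 \<odot> zpow Z2 z2))" using hLG by blast
  define \<sigma> where "\<sigma> = min \<rho> (min r1 r3)"
  have \<sigma>: "\<sigma> > 0" using rho r1 r3 by (simp add: \<sigma>_def)
  have s\<rho>: "z \<in> slit \<sigma> \<Longrightarrow> z \<in> slit \<rho>" for z unfolding \<sigma>_def using slit_min by blast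
  have s1: "z \<in> slit \<sigma> \<Longrightarrow> z \<in> slit r1" for z unfolding \<sigma>_def using slit_min by blast
  have s3: "z \<in> slit \<sigma> \<Longrightarrow> z \<in> slit r3" for z unfolding \<sigma>_def using slit_min by blast
  have b\<rho>: "z \<in> ball 0 \<sigma> \<Longrightarrow> z \<in> ball 0 \<rho>" for z unfolding \<sigma>_def by auto
  have b1: "z \<in> ball 0 \<sigma> \<Longrightarrow> z \<in> ball 0 r1" for z unfolding \<sigma>_def by auto
  have bsub\<rho>: "ball 0 \<sigma> \<subseteq> ball 0 \<rho>" and bsub1: "ball 0 \<sigma> \<subseteq> ball 0 r1" unfolding \<sigma>_def by auto
  have main: "ueq (G1 z1 z2 \<odot> zpow Z1 z1) (A1 z1 z2 \<odot> zpow Z1 z1) \<and>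
              ueq (G2 z2 \<odot> zpow Z2 z2) (A2 z2 \<odot> zpow Z2 z2)"
    if z1: "z1 \<in> slit \<sigma>" and z2: "z2 \<in> slit \<sigma>" for z1 z2
  proof -
    have z2b: "z2 \<in> ball 0 \<sigma>" using z2 slit_ball by blast
    define Q where "Q = G2 z2 \<odot> zpow Z2 z2"
    have Q0: "Q [] \<noteq> 0"
    proof -
      have E: "ueq (Lof H z1 z2) ((G1 z1 z2 \<odot> zpow Z1 z1) \<odot> Q)"
        unfolding Q_def using r3(2) s3[OF z1] s3[OF z2] by blast
      have "Lof H z1 z2 [] = ((G1 z1 z2 \<odot> zpow Z1 z1) \<odot> Q) []" by (rule ueq_Nil[OF E])
      moreover have "Lof H z1 z2 [] = 1" using Lof_Nil sb s\<rho> z1 z2 by blast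
      ultimately show ?thesis by (auto simp: zpow_Nil)
    qed
    have G1h: "\<forall>w. (\<lambda>z. G1 z z2 w) holomorphic_on ball 0 \<sigma>"
      using r1(2) b1[OF z2b] holomorphic_on_subset[OF _ bsub1] by blast
    have A1h': "\<forall>w. (\<lambda>z. A1 z z2 w) holomorphic_on ball 0 \<sigma>"
      using A1h[OF b\<rho>[OF z2b]] holomorphic_on_subset[OF _ bsub\<rho>] by blast
    have G1A1: "\<forall>z\<in>slit \<sigma>. ueq (G1 z z2) (A1 z z2)"
    proof (rule uniq[OF \<sigma> G1h A1h', where p=z2 and T=T1])
      show "ueq (G1 0 z2) (A1 0 z2)"
        using r1(3) b1[OF z2b] A10[OF b\<rho>[OF z2b]] by (meson ueq_sym ueq_trans)
      show "\<forall>z\<in>slit \<sigma>. ueq (sderiv (\<lambda>z. A1 z z2) z) (op T1 z2 z (A1 z z2))"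
        using A1eq b\<rho>[OF z2b] s\<rho> by blast
      show "\<forall>z\<in>slit \<sigma>. ueq (sderiv (\<lambda>z. G1 z z2) z) (op T1 z2 z (G1 z z2))"
      proof
        fix z assume z: "z \<in> slit \<sigma>"
        have G1hs: "\<forall>w. (\<lambda>t. G1 t z2 w) holomorphic_on slit \<sigma>"
          using G1h slit_ball holomorphic_on_subset by blast
        have "ueq (sderiv (\<lambda>t. G1 t z2) z) (ssub (Om1 z z2 \<odot> G1 z z2) (sscal (1 / z) (G1 z z2 \<odot> lt Z1)))"
        proof (rule eq_from_product[OF slit_open z slit_nonpos[OF z] G1hs Ld1[OF s\<rho>[OF z] sb[OF s\<rho>[OF z2]]] L1[OF s\<rho>[OF z] s\<rho>[OF z2]], where Q=Q])
          show "\<forall>t\<in>slit \<sigma>. ueq (Lof H t z2) (G1 t z2 \<odot> zpow Z1 t \<odot> Q)"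
            using r3(2) s3 z2 by (auto simp: Q_def)
          show "Q [] \<noteq> 0" by (rule Q0)
        qed
        then show "ueq (sderiv (\<lambda>z. G1 z z2) z) (op T1 z2 z (G1 z z2))" by (simp add: op_T1)
      qed
    qed
    have e1: "ueq (G1 z1 z2 \<odot> zpow Z1 z1) (A1 z1 z2 \<odot> zpow Z1 z1)"
      using G1A1 z1 by (intro ueq_smul_left) auto
    have "ueq ((A1 z1 z2 \<odot> zpow Z1 z1) \<odot> Q) ((A1 z1 z2 \<odot> zpow Z1 z1) \<odot> (A2 z2 \<odot> zpow Z2 z2))"
    proof -
      have "ueq (Lof H z1 z2) ((G1 z1 z2 \<odot> zpow Z1 z1) \<odot> Q)" using r3(2) s3 z1 z2 by (auto simp: Q_def)
      moreover have "ueq ((G1 z1 z2 \<odot> zpow Z1 z1) \<odot> Q) ((A1 z1 z2 \<odot> zpow Z1 z1) \<odot> Q)"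
        by (rule ueq_smul_left[OF e1])
      moreover have "ueq (Lof H z1 z2) ((A1 z1 z2 \<odot> zpow Z1 z1) \<odot> (A2 z2 \<odot> zpow Z2 z2))"
        using partI[OF s\<rho>[OF z1] s\<rho>[OF z2]] by blast
      ultimately show ?thesis by (meson ueq_sym ueq_trans)
    qed
    note X = this
    have li: "(zp Z1 (- Ln z1) \<odot> sinv (A1 z1 z2)) \<odot> (A1 z1 z2 \<odot> zpow Z1 z1) = one"
      by (rule left_inv_AP) (use A1Nil[OF sb[OF s\<rho>[OF z2]] sb[OF s\<rho>[OF z1]]] in simp)
    have "ueq Q (A2 z2 \<odot> zpow Z2 z2)"
      by (rule ueq_cancel_left[OF li X])
    then show ?thesis using e1 by (simp add: Q_def)
  qed
  show ?thesis using \<sigma> main by blast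
qed

lemma partIIb:
  fixes G2 :: "complex \<Rightarrow> complex \<Rightarrow> ser" and G1 :: "complex \<Rightarrow> ser"
  assumes hG2: "\<exists>r>0. (\<forall>w. \<forall>z1\<in>ball 0 r. (\<lambda>z2. G2 z1 z2 w) holomorphic_on ball 0 r) \<and>
              (\<forall>w. \<forall>z2\<in>ball 0 r. (\<lambda>z1. G2 z1 z2 w) holomorphic_on ball 0 r) \<and>
              (\<forall>z1\<in>ball 0 r. ueq (G2 z1 0) one) \<and>
              (\<forall>z1\<in>ball 0 r. \<forall>z2\<in>slit r. in_sub {Z2, Z22, Z12} (G2 z1 z2 \<odot> zpow Z2 z2))"
    and hG1: "\<exists>r>0. (\<forall>w. (\<lambda>z1. G1 z1 w) holomorphic_on ball 0 r) \<and>
              ueq (G1 0) one \<and>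
              (\<forall>z1\<in>slit r. in_sub {Z1, Z11} (G1 z1 \<odot> zpow Z1 z1))"
    and hLG: "\<exists>r>0. \<forall>z1\<in>slit r. \<forall>z2\<in>slit r.
              ueq (Lof H z1 z2) ((G2 z1 z2 \<odot> zpow Z2 z2) \<odot> (G1 z1 \<odot> zpow Z1 z1))"
  shows "\<exists>r>0. \<forall>z1\<in>slit r. \<forall>z2\<in>slit r.
              ueq (G2 z1 z2 \<odot> zpow Z2 z2) (B2 z1 z2 \<odot> zpow Z2 z2) \<and>
              ueq (G1 z1 \<odot> zpow Z1 z1) (B1 z1 \<odot> zpow Z1 z1)"
proof -
  obtain r1 where r1: "r1 > 0" "\<forall>w. \<forall>z1\<in>ball 0 r1. (\<lambda>z2. G2 z1 z2 w) holomorphic_on ball 0 r1"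
      "\<forall>z1\<in>ball 0 r1. ueq (G2 z1 0) one" using hG2 by blast
  obtain r3 where r3: "r3 > 0" "\<forall>z1\<in>slit r3. \<forall>z2\<in>slit r3.
              ueq (Lof H z1 z2) ((G2 z1 z2 \<odot> zpow Z2 z2) \<odot> (G1 z1 \<odot> zpow Z1 z1))" using hLG by blast
  define \<sigma> where "\<sigma> = min \<rho> (min r1 r3)"
  have \<sigma>: "\<sigma> > 0" using rho r1 r3 by (simp add: \<sigma>_def)
  have s\<rho>: "z \<in> slit \<sigma> \<Longrightarrow> z \<in> slit \<rho>" for z unfolding \<sigma>_def using slit_min by blast
  have s3: "z \<in> slit \<sigma> \<Longrightarrow> z \<in> slit r3" for z unfolding \<sigma>_def using slit_min by blast
  have b\<rho>: "z \<in> ball 0 \<sigma> \<Longrightarrow> z \<in> ball 0 \<rho>" for z unfolding \<sigma>_def by auto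
  have b1: "z \<in> ball 0 \<sigma> \<Longrightarrow> z \<in> ball 0 r1" for z unfolding \<sigma>_def by auto
  have bsub\<rho>: "ball 0 \<sigma> \<subseteq> ball 0 \<rho>" and bsub1: "ball 0 \<sigma> \<subseteq> ball 0 r1" unfolding \<sigma>_def by auto
  have main: "ueq (G2 z1 z2 \<odot> zpow Z2 z2) (B2 z1 z2 \<odot> zpow Z2 z2) \<and>
              ueq (G1 z1 \<odot> zpow Z1 z1) (B1 z1 \<odot> zpow Z1 z1)"
    if z1: "z1 \<in> slit \<sigma>" and z2: "z2 \<in> slit \<sigma>" for z1 z2
  proof -
    have z1b: "z1 \<in> ball 0 \<sigma>" using z1 slit_ball by blast
    define Q where "Q = G1 z1 \<odot> zpow Z1 z1"
    have Q0: "Q [] \<noteq> 0"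
    proof -
      have E: "ueq (Lof H z1 z2) ((G2 z1 z2 \<odot> zpow Z2 z2) \<odot> Q)"
        unfolding Q_def using r3(2) s3[OF z1] s3[OF z2] by blast
      have "Lof H z1 z2 [] = ((G2 z1 z2 \<odot> zpow Z2 z2) \<odot> Q) []" by (rule ueq_Nil[OF E])
      moreover have "Lof H z1 z2 [] = 1" using Lof_Nil sb s\<rho> z1 z2 by blast
      ultimately show ?thesis by (auto simp: zpow_Nil)
    qed
    have G2h: "\<forall>w. (\<lambda>z. G2 z1 z w) holomorphic_on ball 0 \<sigma>"
      using r1(2) b1[OF z1b] holomorphic_on_subset[OF _ bsub1] by blast
    have B2h': "\<forall>w. (\<lambda>z. B2 z1 z w) holomorphic_on ball 0 \<sigma>"
      using B2h[OF b\<rho>[OF z1b]] holomorphic_on_subset[OF _ bsub\<rho>] by blast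
    have G2B2: "\<forall>z\<in>slit \<sigma>. ueq (G2 z1 z) (B2 z1 z)"
    proof (rule uniq[OF \<sigma> G2h B2h', where p=z1 and T=T2])
      show "ueq (G2 z1 0) (B2 z1 0)"
        using r1(3) b1[OF z1b] B20[OF b\<rho>[OF z1b]] by (meson ueq_sym ueq_trans)
      show "\<forall>z\<in>slit \<sigma>. ueq (sderiv (\<lambda>z. B2 z1 z) z) (op T2 z1 z (B2 z1 z))"
        using B2eq b\<rho>[OF z1b] s\<rho> by simp
      show "\<forall>z\<in>slit \<sigma>. ueq (sderiv (\<lambda>z. G2 z1 z) z) (op T2 z1 z (G2 z1 z))"
      proof
        fix z assume z: "z \<in> slit \<sigma>"
        have G2hs: "\<forall>w. (\<lambda>t. G2 z1 t w) holomorphic_on slit \<sigma>"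
          using G2h slit_ball holomorphic_on_subset by blast
        have "ueq (sderiv (\<lambda>t. G2 z1 t) z) (ssub (Om2 z1 z \<odot> G2 z1 z) (sscal (1 / z) (G2 z1 z \<odot> lt Z2)))"
        proof (rule eq_from_product[OF slit_open z slit_nonpos[OF z] G2hs Ld2[OF sb[OF s\<rho>[OF z1]] s\<rho>[OF z]] L2[OF s\<rho>[OF z1] s\<rho>[OF z]], where Q=Q])
          show "\<forall>t\<in>slit \<sigma>. ueq (Lof H z1 t) (G2 z1 t \<odot> zpow Z2 t \<odot> Q)"
            using r3(2) s3 z1 by (auto simp: Q_def)
          show "Q [] \<noteq> 0" by (rule Q0)
        qed
        then show "ueq (sderiv (\<lambda>z. G2 z1 z) z) (op T2 z1 z (G2 z1 z))" by (simp add: op_T2)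
      qed
    qed
    have e1: "ueq (G2 z1 z2 \<odot> zpow Z2 z2) (B2 z1 z2 \<odot> zpow Z2 z2)"
      using G2B2 z2 by (intro ueq_smul_left) auto
    have "ueq ((B2 z1 z2 \<odot> zpow Z2 z2) \<odot> Q) ((B2 z1 z2 \<odot> zpow Z2 z2) \<odot> (B1 z1 \<odot> zpow Z1 z1))"
    proof -
      have "ueq (Lof H z1 z2) ((G2 z1 z2 \<odot> zpow Z2 z2) \<odot> Q)" using r3(2) s3 z1 z2 by (auto simp: Q_def)
      moreover have "ueq ((G2 z1 z2 \<odot> zpow Z2 z2) \<odot> Q) ((B2 z1 z2 \<odot> zpow Z2 z2) \<odot> Q)"
        by (rule ueq_smul_left[OF e1])
      moreover have "ueq (Lof H z1 z2) ((B2 z1 z2 \<odot> zpow Z2 z2) \<odot> (B1 z1 \<odot> zpow Z1 z1))"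
        using partI[OF s\<rho>[OF z1] s\<rho>[OF z2]] by blast
      ultimately show ?thesis by (meson ueq_sym ueq_trans)
    qed
    note X = this
    have li: "(zp Z2 (- Ln z2) \<odot> sinv (B2 z1 z2)) \<odot> (B2 z1 z2 \<odot> zpow Z2 z2) = one"
      by (rule left_inv_AP) (use B2Nil[OF sb[OF s\<rho>[OF z1]] sb[OF s\<rho>[OF z2]]] in simp)
    have "ueq Q (B1 z1 \<odot> zpow Z1 z1)"
      by (rule ueq_cancel_left[OF li X])
    then show ?thesis using e1 by (simp add: Q_def)
  qed
  show ?thesis using \<sigma> main by blast
qed

end


theorem proposition6p3:
  fixes H :: "complex \<Rightarrow> complex \<Rightarrow> ser"
    and A1 :: "complex \<Rightarrow> complex \<Rightarrow> ser" and A2 :: "complex \<Rightarrow> ser"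
    and B2 :: "complex \<Rightarrow> complex \<Rightarrow> ser" and B1 :: "complex \<Rightarrow> ser"
  assumes hL: "fsol2KZ H"
    and hA1: "fsol1 Z1 Om1 A1"
    and hA2: "fsol1 Z2 (\<lambda>z2 _. Om2s z2) (\<lambda>z2 _. A2 z2)"
    and hB2: "fsol1 Z2 (\<lambda>z2 z1. Om2 z1 z2) (\<lambda>z2 z1. B2 z1 z2)"
    and hB1: "fsol1 Z1 (\<lambda>z1 _. Om1s z1) (\<lambda>z1 _. B1 z1)"
  shows
   "(\<exists>r>0. \<forall>z1\<in>slit r. \<forall>z2\<in>slit r.
       ueq (Lof H z1 z2) (A1 z1 z2 \<odot> A2 z2 \<odot> zpow Z1 z1 \<odot> zpow Z2 z2) \<and>
       ueq (Lof H z1 z2) ((A1 z1 z2 \<odot> zpow Z1 z1) \<odot> (A2 z2 \<odot> zpow Z2 z2)) \<and>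
       ueq (Lof H z1 z2) (B2 z1 z2 \<odot> B1 z1 \<odot> zpow Z1 z1 \<odot> zpow Z2 z2) \<and>
       ueq (Lof H z1 z2) ((B2 z1 z2 \<odot> zpow Z2 z2) \<odot> (B1 z1 \<odot> zpow Z1 z1)))
    \<and>
    (\<forall>(G1 :: complex \<Rightarrow> complex \<Rightarrow> ser) (G2 :: complex \<Rightarrow> ser).
       (\<exists>r>0. (\<forall>w. \<forall>z2\<in>ball 0 r. (\<lambda>z1. G1 z1 z2 w) holomorphic_on ball 0 r) \<and>
              (\<forall>w. \<forall>z1\<in>ball 0 r. (\<lambda>z2. G1 z1 z2 w) holomorphic_on ball 0 r) \<and>
              (\<forall>z2\<in>ball 0 r. ueq (G1 0 z2) one) \<and>
              (\<forall>z1\<in>slit r. \<forall>z2\<in>ball 0 r. in_sub {Z1, Z11, Z12} (G1 z1 z2 \<odot> zpow Z1 z1))) \<and>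
       (\<exists>r>0. (\<forall>w. (\<lambda>z2. G2 z2 w) holomorphic_on ball 0 r) \<and>
              ueq (G2 0) one \<and>
              (\<forall>z2\<in>slit r. in_sub {Z2, Z22} (G2 z2 \<odot> zpow Z2 z2))) \<and>
       (\<exists>r>0. \<forall>z1\<in>slit r. \<forall>z2\<in>slit r.
              ueq (Lof H z1 z2) ((G1 z1 z2 \<odot> zpow Z1 z1) \<odot> (G2 z2 \<odot> zpow Z2 z2)))
       \<longrightarrow> (\<exists>r>0. \<forall>z1\<in>slit r. \<forall>z2\<in>slit r.
              ueq (G1 z1 z2 \<odot> zpow Z1 z1) (A1 z1 z2 \<odot> zpow Z1 z1) \<and>
              ueq (G2 z2 \<odot> zpow Z2 z2) (A2 z2 \<odot> zpow Z2 z2)))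
    \<and>
    (\<forall>(G2 :: complex \<Rightarrow> complex \<Rightarrow> ser) (G1 :: complex \<Rightarrow> ser).
       (\<exists>r>0. (\<forall>w. \<forall>z1\<in>ball 0 r. (\<lambda>z2. G2 z1 z2 w) holomorphic_on ball 0 r) \<and>
              (\<forall>w. \<forall>z2\<in>ball 0 r. (\<lambda>z1. G2 z1 z2 w) holomorphic_on ball 0 r) \<and>
              (\<forall>z1\<in>ball 0 r. ueq (G2 z1 0) one) \<and>
              (\<forall>z1\<in>ball 0 r. \<forall>z2\<in>slit r. in_sub {Z2, Z22, Z12} (G2 z1 z2 \<odot> zpow Z2 z2))) \<and>
       (\<exists>r>0. (\<forall>w. (\<lambda>z1. G1 z1 w) holomorphic_on ball 0 r) \<and>
              ueq (G1 0) one \<and>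
              (\<forall>z1\<in>slit r. in_sub {Z1, Z11} (G1 z1 \<odot> zpow Z1 z1))) \<and>
       (\<exists>r>0. \<forall>z1\<in>slit r. \<forall>z2\<in>slit r.
              ueq (Lof H z1 z2) ((G2 z1 z2 \<odot> zpow Z2 z2) \<odot> (G1 z1 \<odot> zpow Z1 z1)))
       \<longrightarrow> (\<exists>r>0. \<forall>z1\<in>slit r. \<forall>z2\<in>slit r.
              ueq (G2 z1 z2 \<odot> zpow Z2 z2) (B2 z1 z2 \<odot> zpow Z2 z2) \<and>
              ueq (G1 z1 \<odot> zpow Z1 z1) (B1 z1 \<odot> zpow Z1 z1)))"
proof -
  obtain rL where rL: "rL > 0"
    "\<forall>w. \<forall>z2\<in>ball 0 rL. (\<lambda>z1. H z1 z2 w) holomorphic_on ball 0 rL"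
    "\<forall>w. \<forall>z1\<in>ball 0 rL. (\<lambda>z2. H z1 z2 w) holomorphic_on ball 0 rL"
    "\<forall>z1\<in>ball 0 rL. \<forall>z2\<in>ball 0 rL. H z1 z2 [] = 1"
    "ueq (H 0 0) one"
    "\<forall>z1\<in>slit rL. \<forall>z2\<in>slit rL.
        ueq (sderiv (\<lambda>t. Lof H t z2) z1) (Om1 z1 z2 \<odot> Lof H z1 z2) \<and>
        ueq (sderiv (\<lambda>t. Lof H z1 t) z2) (Om2 z1 z2 \<odot> Lof H z1 z2)"
    using hL by (simp only: fsol2KZ_def) blast
  have erA1: "\<exists>r>0. \<forall>p\<in>ball 0 r.
     (\<forall>w. (\<lambda>z. A1 z p w) holomorphic_on ball 0 r) \<and>
     (\<forall>z\<in>ball 0 r. A1 z p [] = 1) \<and>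
     ueq (A1 0 p) one \<and>
     (\<forall>z\<in>slit r. ueq (sderiv (\<lambda>t. A1 t p \<odot> zpow Z1 t) z) (Om1 z p \<odot> (A1 z p \<odot> zpow Z1 z)))"
    using hA1 by (simp only: fsol1_def)
  then obtain rA1 where rA1: "rA1 > 0" "\<forall>p\<in>ball 0 rA1.
     (\<forall>w. (\<lambda>z. A1 z p w) holomorphic_on ball 0 rA1) \<and>
     (\<forall>z\<in>ball 0 rA1. A1 z p [] = 1) \<and>
     ueq (A1 0 p) one \<and>
     (\<forall>z\<in>slit rA1. ueq (sderiv (\<lambda>t. A1 t p \<odot> zpow Z1 t) z) (Om1 z p \<odot> (A1 z p \<odot> zpow Z1 z)))"
    by blast
  have erA2: "\<exists>r>0. \<forall>p\<in>ball (0::complex) r.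
     (\<forall>w. (\<lambda>z. A2 z w) holomorphic_on ball 0 r) \<and>
     (\<forall>z\<in>ball 0 r. A2 z [] = 1) \<and>
     ueq (A2 0) one \<and>
     (\<forall>z\<in>slit r. ueq (sderiv (\<lambda>t. A2 t \<odot> zpow Z2 t) z) (Om2s z \<odot> (A2 z \<odot> zpow Z2 z)))"
    using hA2 by (simp only: fsol1_def)
  then obtain rA2 where rA2: "rA2 > 0" "\<forall>p\<in>ball (0::complex) rA2.
     (\<forall>w. (\<lambda>z. A2 z w) holomorphic_on ball 0 rA2) \<and>
     (\<forall>z\<in>ball 0 rA2. A2 z [] = 1) \<and>
     ueq (A2 0) one \<and>
     (\<forall>z\<in>slit rA2. ueq (sderiv (\<lambda>t. A2 t \<odot> zpow Z2 t) z) (Om2s z \<odot> (A2 z \<odot> zpow Z2 z)))"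
    by blast
  have erB2: "\<exists>r>0. \<forall>p\<in>ball 0 r.
     (\<forall>w. (\<lambda>z. B2 p z w) holomorphic_on ball 0 r) \<and>
     (\<forall>z\<in>ball 0 r. B2 p z [] = 1) \<and>
     ueq (B2 p 0) one \<and>
     (\<forall>z\<in>slit r. ueq (sderiv (\<lambda>t. B2 p t \<odot> zpow Z2 t) z) (Om2 p z \<odot> (B2 p z \<odot> zpow Z2 z)))"
    using hB2 by (simp only: fsol1_def)
  then obtain rB2 where rB2: "rB2 > 0" "\<forall>p\<in>ball 0 rB2.
     (\<forall>w. (\<lambda>z. B2 p z w) holomorphic_on ball 0 rB2) \<and>
     (\<forall>z\<in>ball 0 rB2. B2 p z [] = 1) \<and>
     ueq (B2 p 0) one \<and>
     (\<forall>z\<in>slit rB2. ueq (sderiv (\<lambda>t. B2 p t \<odot> zpow Z2 t) z) (Om2 p z \<odot> (B2 p z \<odot> zpow Z2 z)))"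
    by blast
  have erB1: "\<exists>r>0. \<forall>p\<in>ball (0::complex) r.
     (\<forall>w. (\<lambda>z. B1 z w) holomorphic_on ball 0 r) \<and>
     (\<forall>z\<in>ball 0 r. B1 z [] = 1) \<and>
     ueq (B1 0) one \<and>
     (\<forall>z\<in>slit r. ueq (sderiv (\<lambda>t. B1 t \<odot> zpow Z1 t) z) (Om1s z \<odot> (B1 z \<odot> zpow Z1 z)))"
    using hB1 by (simp only: fsol1_def)
  then obtain rB1 where rB1: "rB1 > 0" "\<forall>p\<in>ball (0::complex) rB1.
     (\<forall>w. (\<lambda>z. B1 z w) holomorphic_on ball 0 rB1) \<and>
     (\<forall>z\<in>ball 0 rB1. B1 z [] = 1) \<and>
     ueq (B1 0) one \<and>
     (\<forall>z\<in>slit rB1. ueq (sderiv (\<lambda>t. B1 t \<odot> zpow Z1 t) z) (Om1s z \<odot> (B1 z \<odot> zpow Z1 z)))"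
    by blast
  define \<rho> where "\<rho> = min 1 (min rL (min rA1 (min rA2 (min rB2 rB1))))"
  have \<rho>: "0 < \<rho>" "\<rho> \<le> 1" using rL rA1 rA2 rB2 rB1 by (auto simp: \<rho>_def)
  have le: "\<rho> \<le> rL" "\<rho> \<le> rA1" "\<rho> \<le> rA2" "\<rho> \<le> rB2" "\<rho> \<le> rB1" by (auto simp: \<rho>_def)
  have bL: "ball 0 \<rho> \<subseteq> ball 0 rL" and bA1: "ball 0 \<rho> \<subseteq> ball 0 rA1" and bA2: "ball 0 \<rho> \<subseteq> ball 0 rA2"
    and bB2: "ball 0 \<rho> \<subseteq> ball 0 rB2" and bB1: "ball 0 \<rho> \<subseteq> ball 0 rB1"
    using le by (auto intro: subset_ball)
  have sL: "slit \<rho> \<subseteq> slit rL" and sA1: "slit \<rho> \<subseteq> slit rA1" and sA2: "slit \<rho> \<subseteq> slit rA2"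
    and sB2: "slit \<rho> \<subseteq> slit rB2" and sB1: "slit \<rho> \<subseteq> slit rB1"
    using slit_mono[OF le(1)] slit_mono[OF le(2)] slit_mono[OF le(3)] slit_mono[OF le(4)] slit_mono[OF le(5)] by auto
  have z0A2: "0 \<in> ball (0::complex) rA2" and z0B1: "0 \<in> ball (0::complex) rB1" using rA2 rB1 by auto
  interpret S: setting H A1 A2 B2 B1 \<rho>
  proof
    show "0 < \<rho>" "\<rho> \<le> 1" by (fact \<rho>)+
    show "\<And>w z2. z2 \<in> ball 0 \<rho> \<Longrightarrow> (\<lambda>z1. H z1 z2 w) holomorphic_on ball 0 \<rho>"
      using rL(2) bL holomorphic_on_subset by blast
    show "\<And>w z1. z1 \<in> ball 0 \<rho> \<Longrightarrow> (\<lambda>z2. H z1 z2 w) holomorphic_on ball 0 \<rho>"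
      using rL(3) bL holomorphic_on_subset by blast
    show "\<And>z1 z2. z1 \<in> ball 0 \<rho> \<Longrightarrow> z2 \<in> ball 0 \<rho> \<Longrightarrow> H z1 z2 [] = 1"
      using rL(4) bL by blast
    show "ueq (H 0 0) one" by (rule rL(5))
    show "\<And>z1 z2. z1 \<in> slit \<rho> \<Longrightarrow> z2 \<in> slit \<rho> \<Longrightarrow>
             ueq (sderiv (\<lambda>t. Lof H t z2) z1) (Om1 z1 z2 \<odot> Lof H z1 z2)"
      using rL(6) sL by blast
    show "\<And>z1 z2. z1 \<in> slit \<rho> \<Longrightarrow> z2 \<in> slit \<rho> \<Longrightarrow>
             ueq (sderiv (\<lambda>t. Lof H z1 t) z2) (Om2 z1 z2 \<odot> Lof H z1 z2)"
      using rL(6) sL by blast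
    show "\<And>w p. p \<in> ball 0 \<rho> \<Longrightarrow> (\<lambda>z. A1 z p w) holomorphic_on ball 0 \<rho>"
      using rA1(2) bA1 holomorphic_on_subset by blast
    show "\<And>z p. p \<in> ball 0 \<rho> \<Longrightarrow> z \<in> ball 0 \<rho> \<Longrightarrow> A1 z p [] = 1"
      using rA1(2) bA1 by blast
    show "\<And>p. p \<in> ball 0 \<rho> \<Longrightarrow> ueq (A1 0 p) one"
      using rA1(2) bA1 by blast
    show "\<And>z p. p \<in> ball 0 \<rho> \<Longrightarrow> z \<in> slit \<rho> \<Longrightarrow>
             ueq (sderiv (\<lambda>t. A1 t p \<odot> zpow Z1 t) z) (Om1 z p \<odot> (A1 z p \<odot> zpow Z1 z))"
      using rA1(2) bA1 sA1 by blast
    have A2all: "(\<forall>w. (\<lambda>z. A2 z w) holomorphic_on ball 0 rA2) \<and>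
     (\<forall>z\<in>ball 0 rA2. A2 z [] = 1) \<and>
     ueq (A2 0) one \<and>
     (\<forall>z\<in>slit rA2. ueq (sderiv (\<lambda>t. A2 t \<odot> zpow Z2 t) z) (Om2s z \<odot> (A2 z \<odot> zpow Z2 z)))"
      using rA2(2) z0A2 by blast
    show "\<And>w. (\<lambda>z. A2 z w) holomorphic_on ball 0 \<rho>"
      using A2all bA2 holomorphic_on_subset by blast
    show "\<And>z. z \<in> ball 0 \<rho> \<Longrightarrow> A2 z [] = 1" using A2all bA2 by blast
    show "ueq (A2 0) one" using A2all by blast
    show "\<And>z. z \<in> slit \<rho> \<Longrightarrow>
             ueq (sderiv (\<lambda>t. A2 t \<odot> zpow Z2 t) z) (Om2s z \<odot> (A2 z \<odot> zpow Z2 z))"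
      using A2all sA2 by blast
    show "\<And>w p. p \<in> ball 0 \<rho> \<Longrightarrow> (\<lambda>z. B2 p z w) holomorphic_on ball 0 \<rho>"
      using rB2(2) bB2 holomorphic_on_subset by blast
    show "\<And>z p. p \<in> ball 0 \<rho> \<Longrightarrow> z \<in> ball 0 \<rho> \<Longrightarrow> B2 p z [] = 1"
      using rB2(2) bB2 by blast
    show "\<And>p. p \<in> ball 0 \<rho> \<Longrightarrow> ueq (B2 p 0) one"
      using rB2(2) bB2 by blast
    show "\<And>z p. p \<in> ball 0 \<rho> \<Longrightarrow> z \<in> slit \<rho> \<Longrightarrow>
             ueq (sderiv (\<lambda>t. B2 p t \<odot> zpow Z2 t) z) (Om2 p z \<odot> (B2 p z \<odot> zpow Z2 z))"
      using rB2(2) bB2 sB2 by blast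
    have B1all: "(\<forall>w. (\<lambda>z. B1 z w) holomorphic_on ball 0 rB1) \<and>
     (\<forall>z\<in>ball 0 rB1. B1 z [] = 1) \<and>
     ueq (B1 0) one \<and>
     (\<forall>z\<in>slit rB1. ueq (sderiv (\<lambda>t. B1 t \<odot> zpow Z1 t) z) (Om1s z \<odot> (B1 z \<odot> zpow Z1 z)))"
      using rB1(2) z0B1 by blast
    show "\<And>w. (\<lambda>z. B1 z w) holomorphic_on ball 0 \<rho>"
      using B1all bB1 holomorphic_on_subset by blast
    show "\<And>z. z \<in> ball 0 \<rho> \<Longrightarrow> B1 z [] = 1" using B1all bB1 by blast
    show "ueq (B1 0) one" using B1all by blast
    show "\<And>z. z \<in> slit \<rho> \<Longrightarrow>
             ueq (sderiv (\<lambda>t. B1 t \<odot> zpow Z1 t) z) (Om1s z \<odot> (B1 z \<odot> zpow Z1 z))"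
      using B1all sB1 by blast
  qed
  show ?thesis
  proof (intro conjI allI impI)
    show "\<exists>r>0. \<forall>z1\<in>slit r. \<forall>z2\<in>slit r.
       ueq (Lof H z1 z2) (A1 z1 z2 \<odot> A2 z2 \<odot> zpow Z1 z1 \<odot> zpow Z2 z2) \<and>
       ueq (Lof H z1 z2) ((A1 z1 z2 \<odot> zpow Z1 z1) \<odot> (A2 z2 \<odot> zpow Z2 z2)) \<and>
       ueq (Lof H z1 z2) (B2 z1 z2 \<odot> B1 z1 \<odot> zpow Z1 z1 \<odot> zpow Z2 z2) \<and>
       ueq (Lof H z1 z2) ((B2 z1 z2 \<odot> zpow Z2 z2) \<odot> (B1 z1 \<odot> zpow Z1 z1))"
      using \<rho>(1) S.partI by blast
  next
    fix G1 :: "complex \<Rightarrow> complex \<Rightarrow> ser" and G2 :: "complex \<Rightarrow> ser"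
    assume "(\<exists>r>0. (\<forall>w. \<forall>z2\<in>ball 0 r. (\<lambda>z1. G1 z1 z2 w) holomorphic_on ball 0 r) \<and>
              (\<forall>w. \<forall>z1\<in>ball 0 r. (\<lambda>z2. G1 z1 z2 w) holomorphic_on ball 0 r) \<and>
              (\<forall>z2\<in>ball 0 r. ueq (G1 0 z2) one) \<and>
              (\<forall>z1\<in>slit r. \<forall>z2\<in>ball 0 r. in_sub {Z1, Z11, Z12} (G1 z1 z2 \<odot> zpow Z1 z1))) \<and>
       (\<exists>r>0. (\<forall>w. (\<lambda>z2. G2 z2 w) holomorphic_on ball 0 r) \<and>
              ueq (G2 0) one \<and>
              (\<forall>z2\<in>slit r. in_sub {Z2, Z22} (G2 z2 \<odot> zpow Z2 z2))) \<and>
       (\<exists>r>0. \<forall>z1\<in>slit r. \<forall>z2\<in>slit r.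
              ueq (Lof H z1 z2) ((G1 z1 z2 \<odot> zpow Z1 z1) \<odot> (G2 z2 \<odot> zpow Z2 z2)))"
    then show "\<exists>r>0. \<forall>z1\<in>slit r. \<forall>z2\<in>slit r.
              ueq (G1 z1 z2 \<odot> zpow Z1 z1) (A1 z1 z2 \<odot> zpow Z1 z1) \<and>
              ueq (G2 z2 \<odot> zpow Z2 z2) (A2 z2 \<odot> zpow Z2 z2)"
      by (elim conjE) (rule S.partIIa)
  next
    fix G2 :: "complex \<Rightarrow> complex \<Rightarrow> ser" and G1 :: "complex \<Rightarrow> ser"
    assume "(\<exists>r>0. (\<forall>w. \<forall>z1\<in>ball 0 r. (\<lambda>z2. G2 z1 z2 w) holomorphic_on ball 0 r) \<and>
              (\<forall>w. \<forall>z2\<in>ball 0 r. (\<lambda>z1. G2 z1 z2 w) holomorphic_on ball 0 r) \<and>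
              (\<forall>z1\<in>ball 0 r. ueq (G2 z1 0) one) \<and>
              (\<forall>z1\<in>ball 0 r. \<forall>z2\<in>slit r. in_sub {Z2, Z22, Z12} (G2 z1 z2 \<odot> zpow Z2 z2))) \<and>
       (\<exists>r>0. (\<forall>w. (\<lambda>z1. G1 z1 w) holomorphic_on ball 0 r) \<and>
              ueq (G1 0) one \<and>
              (\<forall>z1\<in>slit r. in_sub {Z1, Z11} (G1 z1 \<odot> zpow Z1 z1))) \<and>
       (\<exists>r>0. \<forall>z1\<in>slit r. \<forall>z2\<in>slit r.
              ueq (Lof H z1 z2) ((G2 z1 z2 \<odot> zpow Z2 z2) \<odot> (G1 z1 \<odot> zpow Z1 z1)))"
    then show "\<exists>r>0. \<forall>z1\<in>slit r. \<forall>z2\<in>slit r.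
              ueq (G2 z1 z2 \<odot> zpow Z2 z2) (B2 z1 z2 \<odot> zpow Z2 z2) \<and>
              ueq (G1 z1 \<odot> zpow Z1 z1) (B1 z1 \<odot> zpow Z1 z1)"
      by (elim conjE) (rule S.partIIb)
  qed
qed


end
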